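(* For every Gray-category $\mathcal G$, the strict Gray-functor $\overrightarrow{e_{\mathcal G}}:\overrightarrow{Q^1\mathcal G}\to\overrightarrow{\mathcal G}$ is Cartesian with respect to $(-)_1$.
   Context: Conventions: $\#_0,\#_1,\#_2$ are compositions along 0-, 1-, 2-cells in a Gray-category, in applicative order. $(-)_1$ sends a Gray-category to its underlying category of 0- and 1-cells. A strict Gray-functor $F:\mathcal A\to\mathcal B$ is Cartesian with respect to $(-)_1$ if for every strict $K:\mathcal K\to\mathcal B$ and functor $u:\mathcal K_1\to\mathcal A_1$ with $F_1u=K_1$ there is a unique strict $\hat u:\mathcal K\to\mathcal A$ with $\hat u_1=u$ and $F\hat u=K$ (equivalently: bijective on 2-cells between parallel 1-cells and on 3-cells between parallel 2-cells). $Q^1\mathcal G$: same 0-cells as $\mathcal G$; 1-cells nonempty lists $[f_1,\dots,f_n]$ of composable 1-cells modulo insertion/deletion of identities, composed by concatenation; with $\epsilon[f_1,\dots,f_n]=f_1\#_0\cdots\#_0f_n$, 2-cells $(\alpha;u,v)$ with $\alpha:\epsilon u\Rightarrow\epsilon v$ in $\mathcal G$, 3-cells $(\Gamma;\alpha,\beta;u,v)$, operations computed in $\mathcal G$. $e_{\mathcal G}:Q^1\mathcal G\to\mathcal G$ is the identity on 0-cells, $\epsilon$ on 1-cells, projection to the first component on 2-, 3-cells. Path space $\overrightarrow{\mathcal H}$: 0-cells are 1-cells $f:x\to y$; 1-cells $f\to f'$ are $(g_2;g_0,g_1)$ with $g_0:x\to x'$, $g_1:y\to y'$, $g_2:g_1\#_0f\Rightarrow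 f'\#_0g_0$; 2-cells are $(\alpha_3;\alpha_1,\alpha_2)$ with $\alpha_1:g_0\Rightarrow h_0$, $\alpha_2:g_1\Rightarrow h_1$, $\alpha_3:(f'\#_0\alpha_1)\#_1g_2\Rrightarrow h_2\#_1(\alpha_2\#_0f)$; 3-cells pairs $(\Gamma_1,\Gamma_2)$, $\Gamma_i:\alpha_i\Rrightarrow\beta_i$, with $\beta_3\#_2((f'\#_0\Gamma_1)\#_1g_2)=(h_2\#_1(\Gamma_2\#_0f))\#_2\alpha_3$; operations by pasting in $\mathcal H$. For strict $F$, $\overrightarrow F$ applies $F$ to all components. *)

theory Defs
  imports Main
begin

section \<open>Gray-categories (explicit, non-strict-interchange presentation)\<close>

text \<open>
  All compositions are in applicative order.
  c0 g f = g #0 f (1-cells), c1 b a = b #1 a (2-cells in a hom 2-category),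
  c2 D C = D #2 C (3-cells, vertical), c13 D C = D #1 C (3-cells, horizontal within a
  hom 2-category), wl2 g a = g #0 a, wr2 a f = a #0 f (whiskering of 2-cells by 1-cells),
  wl3, wr3 likewise for 3-cells, and ic b a is the interchange 3-cell
  Sigma(b,a) : (b' #0 a) #1 (b #0 f) => (b #0 f') #1 (g #0 a)
  for a : f => f' in G(x,y) and b : g => g' in G(y,z).
  Operations are total HOL functions, meaningful only on composable cells of the carriers.
\<close>

record ('o,'a,'b,'c) gray_data =
  Ob :: "'o set"
  Ar :: "'a set"
  Tw :: "'b set"
  Th :: "'c set"
  s1 :: "'a \<Rightarrow> 'o"
  t1 :: "'a \<Rightarrow> 'o"
  s2 :: "'b \<Rightarrow> 'a"
  t2 :: "'b \<Rightarrow> 'a"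
  s3 :: "'c \<Rightarrow> 'b"
  t3 :: "'c \<Rightarrow> 'b"
  i1 :: "'o \<Rightarrow> 'a"
  i2 :: "'a \<Rightarrow> 'b"
  i3 :: "'b \<Rightarrow> 'c"
  c0 :: "'a \<Rightarrow> 'a \<Rightarrow> 'a"
  c1 :: "'b \<Rightarrow> 'b \<Rightarrow> 'b"
  c2 :: "'c \<Rightarrow> 'c \<Rightarrow> 'c"
  c13 :: "'c \<Rightarrow> 'c \<Rightarrow> 'c"
  wl2 :: "'a \<Rightarrow> 'b \<Rightarrow> 'b"
  wr2 :: "'b \<Rightarrow> 'a \<Rightarrow> 'b"
  wl3 :: "'a \<Rightarrow> 'c \<Rightarrow> 'c"
  wr3 :: "'c \<Rightarrow> 'a \<Rightarrow> 'c"
  ic :: "'b \<Rightarrow> 'b \<Rightarrow> 'c"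

locale gray_category =
  fixes G :: "('o,'a,'b,'c) gray_data"
  assumes
    ar_typ: "f \<in> Ar G \<Longrightarrow> s1 G f \<in> Ob G \<and> t1 G f \<in> Ob G"
  and tw_typ: "a \<in> Tw G \<Longrightarrow> s2 G a \<in> Ar G \<and> t2 G a \<in> Ar G
        \<and> s1 G (s2 G a) = s1 G (t2 G a) \<and> t1 G (s2 G a) = t1 G (t2 G a)"
  and th_typ: "C \<in> Th G \<Longrightarrow> s3 G C \<in> Tw G \<and> t3 G C \<in> Tw G
        \<and> s2 G (s3 G C) = s2 G (t3 G C) \<and> t2 G (s3 G C) = t2 G (t3 G C)"
  and i1_typ: "x \<in> Ob G \<Longrightarrow> i1 G x \<in> Ar G \<and> s1 G (i1 G x) = x \<and> t1 G (i1 G x) = x"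
  and i2_typ: "f \<in> Ar G \<Longrightarrow> i2 G f \<in> Tw G \<and> s2 G (i2 G f) = f \<and> t2 G (i2 G f) = f"
  and i3_typ: "a \<in> Tw G \<Longrightarrow> i3 G a \<in> Th G \<and> s3 G (i3 G a) = a \<and> t3 G (i3 G a) = a"
  and c0_typ: "\<lbrakk>f \<in> Ar G; g \<in> Ar G; t1 G f = s1 G g\<rbrakk> \<Longrightarrow>
        c0 G g f \<in> Ar G \<and> s1 G (c0 G g f) = s1 G f \<and> t1 G (c0 G g f) = t1 G g"
  and c0_assoc: "\<lbrakk>f \<in> Ar G; g \<in> Ar G; h \<in> Ar G; t1 G f = s1 G g; t1 G g = s1 G h\<rbrakk> \<Longrightarrow>
        c0 G h (c0 G g f) = c0 G (c0 G h g) f"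
  and c0_unit: "f \<in> Ar G \<Longrightarrow> c0 G (i1 G (t1 G f)) f = f \<and> c0 G f (i1 G (s1 G f)) = f"
  and c1_typ: "\<lbrakk>a \<in> Tw G; b \<in> Tw G; t2 G a = s2 G b\<rbrakk> \<Longrightarrow>
        c1 G b a \<in> Tw G \<and> s2 G (c1 G b a) = s2 G a \<and> t2 G (c1 G b a) = t2 G b"
  and c1_assoc: "\<lbrakk>a \<in> Tw G; b \<in> Tw G; c \<in> Tw G; t2 G a = s2 G b; t2 G b = s2 G c\<rbrakk> \<Longrightarrow>
        c1 G c (c1 G b a) = c1 G (c1 G c b) a"
  and c1_unit: "a \<in> Tw G \<Longrightarrow> c1 G (i2 G (t2 G a)) a = a \<and> c1 G a (i2 G (s2 G a)) = a"
  and c2_typ: "\<lbrakk>C \<in> Th G; D \<in> Th G; t3 G C = s3 G D\<rbrakk> \<Longrightarrow>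
        c2 G D C \<in> Th G \<and> s3 G (c2 G D C) = s3 G C \<and> t3 G (c2 G D C) = t3 G D"
  and c2_assoc: "\<lbrakk>C \<in> Th G; D \<in> Th G; E \<in> Th G; t3 G C = s3 G D; t3 G D = s3 G E\<rbrakk> \<Longrightarrow>
        c2 G E (c2 G D C) = c2 G (c2 G E D) C"
  and c2_unit: "C \<in> Th G \<Longrightarrow> c2 G (i3 G (t3 G C)) C = C \<and> c2 G C (i3 G (s3 G C)) = C"
  and c13_typ: "\<lbrakk>C \<in> Th G; D \<in> Th G; t2 G (s3 G C) = s2 G (s3 G D)\<rbrakk> \<Longrightarrow>
        c13 G D C \<in> Th G \<and> s3 G (c13 G D C) = c1 G (s3 G D) (s3 G C)
        \<and> t3 G (c13 G D C) = c1 G (t3 G D) (t3 G C)"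
  and c13_assoc: "\<lbrakk>C \<in> Th G; D \<in> Th G; E \<in> Th G;
        t2 G (s3 G C) = s2 G (s3 G D); t2 G (s3 G D) = s2 G (s3 G E)\<rbrakk> \<Longrightarrow>
        c13 G E (c13 G D C) = c13 G (c13 G E D) C"
  and c13_unit: "C \<in> Th G \<Longrightarrow> c13 G (i3 G (i2 G (t2 G (s3 G C)))) C = C
        \<and> c13 G C (i3 G (i2 G (s2 G (s3 G C)))) = C"
  and c13_id: "\<lbrakk>a \<in> Tw G; b \<in> Tw G; t2 G a = s2 G b\<rbrakk> \<Longrightarrow>
        c13 G (i3 G b) (i3 G a) = i3 G (c1 G b a)"
  and c13_c2: "\<lbrakk>C \<in> Th G; C' \<in> Th G; D \<in> Th G; D' \<in> Th G;
        t3 G C = s3 G C'; t3 G D = s3 G D'; t2 G (s3 G C) = s2 G (s3 G D)\<rbrakk> \<Longrightarrow>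
        c13 G (c2 G D' D) (c2 G C' C) = c2 G (c13 G D' C') (c13 G D C)"
  and wl2_typ: "\<lbrakk>g \<in> Ar G; a \<in> Tw G; t1 G (s2 G a) = s1 G g\<rbrakk> \<Longrightarrow>
        wl2 G g a \<in> Tw G \<and> s2 G (wl2 G g a) = c0 G g (s2 G a) \<and> t2 G (wl2 G g a) = c0 G g (t2 G a)"
  and wr2_typ: "\<lbrakk>f \<in> Ar G; a \<in> Tw G; s1 G (s2 G a) = t1 G f\<rbrakk> \<Longrightarrow>
        wr2 G a f \<in> Tw G \<and> s2 G (wr2 G a f) = c0 G (s2 G a) f \<and> t2 G (wr2 G a f) = c0 G (t2 G a) f"
  and wl3_typ: "\<lbrakk>g \<in> Ar G; C \<in> Th G; t1 G (s2 G (s3 G C)) = s1 G g\<rbrakk> \<Longrightarrow>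
        wl3 G g C \<in> Th G \<and> s3 G (wl3 G g C) = wl2 G g (s3 G C) \<and> t3 G (wl3 G g C) = wl2 G g (t3 G C)"
  and wr3_typ: "\<lbrakk>f \<in> Ar G; C \<in> Th G; s1 G (s2 G (s3 G C)) = t1 G f\<rbrakk> \<Longrightarrow>
        wr3 G C f \<in> Th G \<and> s3 G (wr3 G C f) = wr2 G (s3 G C) f \<and> t3 G (wr3 G C f) = wr2 G (t3 G C) f"
  and wl2_i2: "\<lbrakk>g \<in> Ar G; h \<in> Ar G; t1 G h = s1 G g\<rbrakk> \<Longrightarrow> wl2 G g (i2 G h) = i2 G (c0 G g h)"
  and wl2_c1: "\<lbrakk>g \<in> Ar G; a \<in> Tw G; b \<in> Tw G; t2 G a = s2 G b; t1 G (s2 G a) = s1 G g\<rbrakk> \<Longrightarrow>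
        wl2 G g (c1 G b a) = c1 G (wl2 G g b) (wl2 G g a)"
  and wl3_i3: "\<lbrakk>g \<in> Ar G; a \<in> Tw G; t1 G (s2 G a) = s1 G g\<rbrakk> \<Longrightarrow> wl3 G g (i3 G a) = i3 G (wl2 G g a)"
  and wl3_c2: "\<lbrakk>g \<in> Ar G; C \<in> Th G; D \<in> Th G; t3 G C = s3 G D; t1 G (s2 G (s3 G C)) = s1 G g\<rbrakk> \<Longrightarrow>
        wl3 G g (c2 G D C) = c2 G (wl3 G g D) (wl3 G g C)"
  and wl3_c13: "\<lbrakk>g \<in> Ar G; C \<in> Th G; D \<in> Th G; t2 G (s3 G C) = s2 G (s3 G D);
        t1 G (s2 G (s3 G C)) = s1 G g\<rbrakk> \<Longrightarrow>
        wl3 G g (c13 G D C) = c13 G (wl3 G g D) (wl3 G g C)"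
  and wr2_i2: "\<lbrakk>f \<in> Ar G; h \<in> Ar G; s1 G h = t1 G f\<rbrakk> \<Longrightarrow> wr2 G (i2 G h) f = i2 G (c0 G h f)"
  and wr2_c1: "\<lbrakk>f \<in> Ar G; a \<in> Tw G; b \<in> Tw G; t2 G a = s2 G b; s1 G (s2 G a) = t1 G f\<rbrakk> \<Longrightarrow>
        wr2 G (c1 G b a) f = c1 G (wr2 G b f) (wr2 G a f)"
  and wr3_i3: "\<lbrakk>f \<in> Ar G; a \<in> Tw G; s1 G (s2 G a) = t1 G f\<rbrakk> \<Longrightarrow> wr3 G (i3 G a) f = i3 G (wr2 G a f)"
  and wr3_c2: "\<lbrakk>f \<in> Ar G; C \<in> Th G; D \<in> Th G; t3 G C = s3 G D; s1 G (s2 G (s3 G C)) = t1 G f\<rbrakk> \<Longrightarrow>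
        wr3 G (c2 G D C) f = c2 G (wr3 G D f) (wr3 G C f)"
  and wr3_c13: "\<lbrakk>f \<in> Ar G; C \<in> Th G; D \<in> Th G; t2 G (s3 G C) = s2 G (s3 G D);
        s1 G (s2 G (s3 G C)) = t1 G f\<rbrakk> \<Longrightarrow>
        wr3 G (c13 G D C) f = c13 G (wr3 G D f) (wr3 G C f)"
  and wl2_i1: "a \<in> Tw G \<Longrightarrow> wl2 G (i1 G (t1 G (s2 G a))) a = a"
  and wr2_i1: "a \<in> Tw G \<Longrightarrow> wr2 G a (i1 G (s1 G (s2 G a))) = a"
  and wl3_i1: "C \<in> Th G \<Longrightarrow> wl3 G (i1 G (t1 G (s2 G (s3 G C)))) C = C"
  and wr3_i1: "C \<in> Th G \<Longrightarrow> wr3 G C (i1 G (s1 G (s2 G (s3 G C)))) = C"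
  and wl2_c0: "\<lbrakk>g \<in> Ar G; h \<in> Ar G; a \<in> Tw G; t1 G (s2 G a) = s1 G g; t1 G g = s1 G h\<rbrakk> \<Longrightarrow>
        wl2 G h (wl2 G g a) = wl2 G (c0 G h g) a"
  and wr2_c0: "\<lbrakk>e \<in> Ar G; f \<in> Ar G; a \<in> Tw G; s1 G (s2 G a) = t1 G f; s1 G f = t1 G e\<rbrakk> \<Longrightarrow>
        wr2 G (wr2 G a f) e = wr2 G a (c0 G f e)"
  and wlr2: "\<lbrakk>f \<in> Ar G; g \<in> Ar G; a \<in> Tw G; s1 G (s2 G a) = t1 G f; t1 G (s2 G a) = s1 G g\<rbrakk> \<Longrightarrow>
        wr2 G (wl2 G g a) f = wl2 G g (wr2 G a f)"
  and wl3_c0: "\<lbrakk>g \<in> Ar G; h \<in> Ar G; C \<in> Th G; t1 G (s2 G (s3 G C)) = s1 G g; t1 G g = s1 G h\<rbrakk> \<Longrightarrow>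
        wl3 G h (wl3 G g C) = wl3 G (c0 G h g) C"
  and wr3_c0: "\<lbrakk>e \<in> Ar G; f \<in> Ar G; C \<in> Th G; s1 G (s2 G (s3 G C)) = t1 G f; s1 G f = t1 G e\<rbrakk> \<Longrightarrow>
        wr3 G (wr3 G C f) e = wr3 G C (c0 G f e)"
  and wlr3: "\<lbrakk>f \<in> Ar G; g \<in> Ar G; C \<in> Th G; s1 G (s2 G (s3 G C)) = t1 G f;
        t1 G (s2 G (s3 G C)) = s1 G g\<rbrakk> \<Longrightarrow>
        wr3 G (wl3 G g C) f = wl3 G g (wr3 G C f)"
  and ic_typ: "\<lbrakk>a \<in> Tw G; b \<in> Tw G; s1 G (s2 G b) = t1 G (s2 G a)\<rbrakk> \<Longrightarrow>
        ic G b a \<in> Th G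
        \<and> s3 G (ic G b a) = c1 G (wl2 G (t2 G b) a) (wr2 G b (s2 G a))
        \<and> t3 G (ic G b a) = c1 G (wr2 G b (t2 G a)) (wl2 G (s2 G b) a)"
  and ic_inv: "\<lbrakk>a \<in> Tw G; b \<in> Tw G; s1 G (s2 G b) = t1 G (s2 G a)\<rbrakk> \<Longrightarrow>
        \<exists>D \<in> Th G. s3 G D = t3 G (ic G b a) \<and> t3 G D = s3 G (ic G b a)
          \<and> c2 G D (ic G b a) = i3 G (s3 G (ic G b a))
          \<and> c2 G (ic G b a) D = i3 G (t3 G (ic G b a))"
  and ic_i2_left: "\<lbrakk>a \<in> Tw G; g \<in> Ar G; s1 G g = t1 G (s2 G a)\<rbrakk> \<Longrightarrow>
        ic G (i2 G g) a = i3 G (wl2 G g a)"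
  and ic_i2_right: "\<lbrakk>b \<in> Tw G; f \<in> Ar G; s1 G (s2 G b) = t1 G f\<rbrakk> \<Longrightarrow>
        ic G b (i2 G f) = i3 G (wr2 G b f)"
  and ic_c1_left: "\<lbrakk>a \<in> Tw G; b \<in> Tw G; b' \<in> Tw G; t2 G b = s2 G b'; s1 G (s2 G b) = t1 G (s2 G a)\<rbrakk> \<Longrightarrow>
        ic G (c1 G b' b) a
        = c2 G (c13 G (i3 G (wr2 G b' (t2 G a))) (ic G b a))
               (c13 G (ic G b' a) (i3 G (wr2 G b (s2 G a))))"
  and ic_c1_right: "\<lbrakk>a \<in> Tw G; a' \<in> Tw G; b \<in> Tw G; t2 G a = s2 G a'; s1 G (s2 G b) = t1 G (s2 G a)\<rbrakk> \<Longrightarrow>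
        ic G b (c1 G a' a)
        = c2 G (c13 G (ic G b a') (i3 G (wl2 G (s2 G b) a)))
               (c13 G (i3 G (wl2 G (t2 G b) a')) (ic G b a))"
  and ic_nat: "\<lbrakk>C \<in> Th G; D \<in> Th G; s1 G (s2 G (s3 G D)) = t1 G (s2 G (s3 G C))\<rbrakk> \<Longrightarrow>
        c2 G (ic G (t3 G D) (t3 G C)) (c13 G (wl3 G (t2 G (s3 G D)) C) (wr3 G D (s2 G (s3 G C))))
        = c2 G (c13 G (wr3 G D (t2 G (s3 G C))) (wl3 G (s2 G (s3 G D)) C)) (ic G (s3 G D) (s3 G C))"
  and ic_wr: "\<lbrakk>a \<in> Tw G; b \<in> Tw G; e \<in> Ar G; s1 G (s2 G b) = t1 G (s2 G a); t1 G e = s1 G (s2 G a)\<rbrakk> \<Longrightarrow>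
        ic G b (wr2 G a e) = wr3 G (ic G b a) e"
  and ic_wl: "\<lbrakk>a \<in> Tw G; b \<in> Tw G; h \<in> Ar G; s1 G (s2 G b) = t1 G (s2 G a); s1 G h = t1 G (s2 G b)\<rbrakk> \<Longrightarrow>
        ic G (wl2 G h b) a = wl3 G h (ic G b a)"
  and ic_mid: "\<lbrakk>a \<in> Tw G; b \<in> Tw G; k \<in> Ar G; s1 G k = t1 G (s2 G a); t1 G k = s1 G (s2 G b)\<rbrakk> \<Longrightarrow>
        ic G (wr2 G b k) a = ic G b (wl2 G k a)"

definition ic_inv :: "('o,'a,'b,'c,'z) gray_data_scheme \<Rightarrow> 'b \<Rightarrow> 'b \<Rightarrow> 'c" where
  "ic_inv G b a = (THE D. D \<in> Th G \<and> s3 G D = t3 G (ic G b a) \<and> t3 G D = s3 G (ic G b a)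
      \<and> c2 G D (ic G b a) = i3 G (s3 G (ic G b a)) \<and> c2 G (ic G b a) D = i3 G (t3 G (ic G b a)))"

section \<open>Strict Gray-functors and functors of underlying categories\<close>

record ('o,'a,'b,'c,'o2,'a2,'b2,'c2) gray_fun =
  fOb :: "'o \<Rightarrow> 'o2"
  fAr :: "'a \<Rightarrow> 'a2"
  fTw :: "'b \<Rightarrow> 'b2"
  fTh :: "'c \<Rightarrow> 'c2"

definition strict_gray_functor ::
  "('o,'a,'b,'c) gray_data \<Rightarrow> ('o2,'a2,'b2,'c2) gray_data \<Rightarrow>
   ('o,'a,'b,'c,'o2,'a2,'b2,'c2) gray_fun \<Rightarrow> bool" where
  "strict_gray_functor A B F \<longleftrightarrow>
     (\<forall>x \<in> Ob A. fOb F x \<in> Ob B) \<and> (\<forall>f \<in> Ar A. fAr F f \<in> Ar B)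
   \<and> (\<forall>a \<in> Tw A. fTw F a \<in> Tw B) \<and> (\<forall>C \<in> Th A. fTh F C \<in> Th B)
   \<and> (\<forall>f \<in> Ar A. fOb F (s1 A f) = s1 B (fAr F f) \<and> fOb F (t1 A f) = t1 B (fAr F f))
   \<and> (\<forall>a \<in> Tw A. fAr F (s2 A a) = s2 B (fTw F a) \<and> fAr F (t2 A a) = t2 B (fTw F a))
   \<and> (\<forall>C \<in> Th A. fTw F (s3 A C) = s3 B (fTh F C) \<and> fTw F (t3 A C) = t3 B (fTh F C))
   \<and> (\<forall>x \<in> Ob A. fAr F (i1 A x) = i1 B (fOb F x))
   \<and> (\<forall>f \<in> Ar A. fTw F (i2 A f) = i2 B (fAr F f))
   \<and> (\<forall>a \<in> Tw A. fTh F (i3 A a) = i3 B (fTw F a))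
   \<and> (\<forall>f \<in> Ar A. \<forall>g \<in> Ar A. t1 A f = s1 A g \<longrightarrow> fAr F (c0 A g f) = c0 B (fAr F g) (fAr F f))
   \<and> (\<forall>a \<in> Tw A. \<forall>b \<in> Tw A. t2 A a = s2 A b \<longrightarrow> fTw F (c1 A b a) = c1 B (fTw F b) (fTw F a))
   \<and> (\<forall>C \<in> Th A. \<forall>D \<in> Th A. t3 A C = s3 A D \<longrightarrow> fTh F (c2 A D C) = c2 B (fTh F D) (fTh F C))
   \<and> (\<forall>C \<in> Th A. \<forall>D \<in> Th A. t2 A (s3 A C) = s2 A (s3 A D) \<longrightarrow>
        fTh F (c13 A D C) = c13 B (fTh F D) (fTh F C))
   \<and> (\<forall>g \<in> Ar A. \<forall>a \<in> Tw A. t1 A (s2 A a) = s1 A g \<longrightarrow> fTw F (wl2 A g a) = wl2 B (fAr F g) (fTw F a))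
   \<and> (\<forall>f \<in> Ar A. \<forall>a \<in> Tw A. s1 A (s2 A a) = t1 A f \<longrightarrow> fTw F (wr2 A a f) = wr2 B (fTw F a) (fAr F f))
   \<and> (\<forall>g \<in> Ar A. \<forall>C \<in> Th A. t1 A (s2 A (s3 A C)) = s1 A g \<longrightarrow>
        fTh F (wl3 A g C) = wl3 B (fAr F g) (fTh F C))
   \<and> (\<forall>f \<in> Ar A. \<forall>C \<in> Th A. s1 A (s2 A (s3 A C)) = t1 A f \<longrightarrow>
        fTh F (wr3 A C f) = wr3 B (fTh F C) (fAr F f))
   \<and> (\<forall>a \<in> Tw A. \<forall>b \<in> Tw A. s1 A (s2 A b) = t1 A (s2 A a) \<longrightarrow>
        fTh F (ic A b a) = ic B (fTw F b) (fTw F a))"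

text \<open>A functor between the underlying categories of 0- and 1-cells, (-)_1.\<close>
definition functor1 ::
  "('o,'a,'b,'c) gray_data \<Rightarrow> ('o2,'a2,'b2,'c2) gray_data \<Rightarrow> ('o \<Rightarrow> 'o2) \<times> ('a \<Rightarrow> 'a2) \<Rightarrow> bool" where
  "functor1 A B u \<longleftrightarrow>
     (\<forall>x \<in> Ob A. fst u x \<in> Ob B) \<and> (\<forall>f \<in> Ar A. snd u f \<in> Ar B)
   \<and> (\<forall>f \<in> Ar A. fst u (s1 A f) = s1 B (snd u f) \<and> fst u (t1 A f) = t1 B (snd u f))
   \<and> (\<forall>x \<in> Ob A. snd u (i1 A x) = i1 B (fst u x))
   \<and> (\<forall>f \<in> Ar A. \<forall>g \<in> Ar A. t1 A f = s1 A g \<longrightarrow> snd u (c0 A g f) = c0 B (snd u g) (snd u f))"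

definition gcomp :: "('o2,'a2,'b2,'c2,'o3,'a3,'b3,'c3) gray_fun \<Rightarrow> ('o,'a,'b,'c,'o2,'a2,'b2,'c2) gray_fun
    \<Rightarrow> ('o,'a,'b,'c,'o3,'a3,'b3,'c3) gray_fun" where
  "gcomp F H = \<lparr>fOb = fOb F \<circ> fOb H, fAr = fAr F \<circ> fAr H, fTw = fTw F \<circ> fTw H, fTh = fTh F \<circ> fTh H\<rparr>"

definition gfun_eq_on :: "('o,'a,'b,'c) gray_data \<Rightarrow> ('o,'a,'b,'c,'o2,'a2,'b2,'c2) gray_fun
    \<Rightarrow> ('o,'a,'b,'c,'o2,'a2,'b2,'c2) gray_fun \<Rightarrow> bool" where
  "gfun_eq_on K F H \<longleftrightarrow> (\<forall>x \<in> Ob K. fOb F x = fOb H x) \<and> (\<forall>f \<in> Ar K. fAr F f = fAr H f)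
     \<and> (\<forall>a \<in> Tw K. fTw F a = fTw H a) \<and> (\<forall>C \<in> Th K. fTh F C = fTh H C)"

definition fun1_eq_on :: "('o,'a,'b,'c) gray_data \<Rightarrow> ('o \<Rightarrow> 'o2) \<times> ('a \<Rightarrow> 'a2)
    \<Rightarrow> ('o \<Rightarrow> 'o2) \<times> ('a \<Rightarrow> 'a2) \<Rightarrow> bool" where
  "fun1_eq_on K u v \<longleftrightarrow> (\<forall>x \<in> Ob K. fst u x = fst v x) \<and> (\<forall>f \<in> Ar K. snd u f = snd v f)"

definition under1 :: "('o,'a,'b,'c,'o2,'a2,'b2,'c2) gray_fun \<Rightarrow> ('o \<Rightarrow> 'o2) \<times> ('a \<Rightarrow> 'a2)" where
  "under1 F = (fOb F, fAr F)"

text \<open>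
  Cartesianness of F : A -> B with respect to (-)_1, tested against Gray-categories KK
  of one fixed (arbitrary) type; a theorem quantifying over the type variables of KK
  expresses the condition for all Gray-categories KK.
\<close>
definition cartesian1_wrt ::
  "('p,'d,'e,'f) gray_data \<Rightarrow> ('o,'a,'b,'c) gray_data \<Rightarrow> ('o2,'a2,'b2,'c2) gray_data \<Rightarrow>
   ('o,'a,'b,'c,'o2,'a2,'b2,'c2) gray_fun \<Rightarrow> bool" where
  "cartesian1_wrt KK A B F \<longleftrightarrow>
     (\<forall>K u. strict_gray_functor KK B K \<longrightarrow> functor1 KK A u
        \<longrightarrow> (\<forall>x \<in> Ob KK. fOb F (fst u x) = fOb K x) \<and> (\<forall>f \<in> Ar KK. fAr F (snd u f) = fAr K f)
        \<longrightarrow> (\<exists>uh. strict_gray_functor KK A uh \<and> fun1_eq_on KK (under1 uh) u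
                 \<and> gfun_eq_on KK (gcomp F uh) K
                 \<and> (\<forall>uh'. strict_gray_functor KK A uh' \<and> fun1_eq_on KK (under1 uh') u
                          \<and> gfun_eq_on KK (gcomp F uh') K \<longrightarrow> gfun_eq_on KK uh' uh)))"

section \<open>The Gray-category Q^1 G\<close>

text \<open>
  A 1-cell of Q^1 G is an equivalence class of nonempty composable lists of 1-cells of G
  modulo insertion/deletion of identities.  We represent each class by its unique normal
  form (x, y, fs): the source x, the target y and the list fs of non-identity 1-cells
  obtained by deleting all identities (fs = [] represents the class of [1_x]).
  A list [f_1,...,f_n] has f_1 as its last (outermost) factor: eps = f_1 #0 ... #0 f_n.
\<close>

fun qchain :: "('o,'a,'b,'c) gray_data \<Rightarrow> 'o \<Rightarrow> 'o \<Rightarrow> 'a list \<Rightarrow> bool" where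
  "qchain G x y [] \<longleftrightarrow> x = y \<and> x \<in> Ob G"
| "qchain G x y (f # fs) \<longleftrightarrow> f \<in> Ar G \<and> f \<noteq> i1 G (s1 G f) \<and> t1 G f = y \<and> qchain G x (s1 G f) fs"

definition qeps :: "('o,'a,'b,'c) gray_data \<Rightarrow> 'o \<times> 'o \<times> 'a list \<Rightarrow> 'a" where
  "qeps G u = (case u of (x, y, fs) \<Rightarrow> foldr (c0 G) fs (i1 G x))"

definition qc0 :: "'o \<times> 'o \<times> 'a list \<Rightarrow> 'o \<times> 'o \<times> 'a list \<Rightarrow> 'o \<times> 'o \<times> 'a list" where
  "qc0 v u = (fst u, fst (snd v), snd (snd v) @ snd (snd u))"

definition Q1 :: "('o,'a,'b,'c) gray_data \<Rightarrow>
   ('o, 'o \<times> 'o \<times> 'a list, 'b \<times> ('o \<times> 'o \<times> 'a list) \<times> ('o \<times> 'o \<times> 'a list),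
    'c \<times> 'b \<times> 'b \<times> ('o \<times> 'o \<times> 'a list) \<times> ('o \<times> 'o \<times> 'a list)) gray_data" where
  "Q1 G = (let
      QAr = {(x, y, fs). qchain G x y fs};
      QTw = {(a, u, v). u \<in> QAr \<and> v \<in> QAr \<and> fst u = fst v \<and> fst (snd u) = fst (snd v)
                   \<and> a \<in> Tw G \<and> s2 G a = qeps G u \<and> t2 G a = qeps G v}
    in \<lparr> Ob = Ob G,
      Ar = QAr,
      Tw = QTw,
      Th = {(C, a, b, u, v). (a, u, v) \<in> QTw \<and> (b, u, v) \<in> QTw \<and> C \<in> Th G \<and> s3 G C = a \<and> t3 G C = b},
      s1 = (\<lambda>u. fst u),
      t1 = (\<lambda>u. fst (snd u)),
      s2 = (\<lambda>(a, u, v). u),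
      t2 = (\<lambda>(a, u, v). v),
      s3 = (\<lambda>(C, a, b, u, v). (a, u, v)),
      t3 = (\<lambda>(C, a, b, u, v). (b, u, v)),
      i1 = (\<lambda>x. (x, x, [])),
      i2 = (\<lambda>u. (i2 G (qeps G u), u, u)),
      i3 = (\<lambda>(a, u, v). (i3 G a, a, a, u, v)),
      c0 = qc0,
      c1 = (\<lambda>(b, v, w) (a, u, v'). (c1 G b a, u, w)),
      c2 = (\<lambda>(D, b', c, _, _) (C, a, b, u, v). (c2 G D C, a, c, u, v)),
      c13 = (\<lambda>(D, a', b', v, w) (C, a, b, u, v'). (c13 G D C, c1 G a' a, c1 G b' b, u, w)),
      wl2 = (\<lambda>g (a, u, v). (wl2 G (qeps G g) a, qc0 g u, qc0 g v)),
      wr2 = (\<lambda>(a, u, v) f. (wr2 G a (qeps G f), qc0 u f, qc0 v f)),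
      wl3 = (\<lambda>g (C, a, b, u, v). (wl3 G (qeps G g) C, wl2 G (qeps G g) a, wl2 G (qeps G g) b,
                                 qc0 g u, qc0 g v)),
      wr3 = (\<lambda>(C, a, b, u, v) f. (wr3 G C (qeps G f), wr2 G a (qeps G f), wr2 G b (qeps G f),
                                 qc0 u f, qc0 v f)),
      ic = (\<lambda>(b, g, g') (a, f, f').
              (ic G b a,
               c1 G (wl2 G (qeps G g') a) (wr2 G b (qeps G f)),
               c1 G (wr2 G b (qeps G f')) (wl2 G (qeps G g) a),
               qc0 g f, qc0 g' f')) \<rparr>)"

definition eQ :: "('o,'a,'b,'c) gray_data \<Rightarrow>
   ('o, 'o \<times> 'o \<times> 'a list, 'b \<times> ('o \<times> 'o \<times> 'a list) \<times> ('o \<times> 'o \<times> 'a list),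
    'c \<times> 'b \<times> 'b \<times> ('o \<times> 'o \<times> 'a list) \<times> ('o \<times> 'o \<times> 'a list), 'o, 'a, 'b, 'c) gray_fun" where
  "eQ G = \<lparr>fOb = (\<lambda>x. x), fAr = qeps G, fTw = fst, fTh = fst\<rparr>"

section \<open>The path space of a Gray-category\<close>

text \<open>
  0-cells: 1-cells f of H.  1-cells f -> f': tuples (f, f', g0, g1, g2) (source and target
  recorded explicitly) with g2 : g1 #0 f => f' #0 g0.  2-cells g => h: tuples
  (g, h, a1, a2, a3) with a3 : (f' #0 a1) #1 g2 => h2 #1 (a2 #0 f).  3-cells a => b:
  tuples (a, b, C1, C2) subject to the equation of the paper.
\<close>

definition pc0 :: "('o,'a,'b,'c) gray_data \<Rightarrow> 'a \<times> 'a \<times> 'a \<times> 'a \<times> 'b \<Rightarrow> 'a \<times> 'a \<times> 'a \<times> 'a \<times> 'b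
    \<Rightarrow> 'a \<times> 'a \<times> 'a \<times> 'a \<times> 'b" where
  "pc0 H k g = (case k of (f', f'', h0, h1, h2) \<Rightarrow> case g of (f, _, g0, g1, g2) \<Rightarrow>
      (f, f'', c0 H h0 g0, c0 H h1 g1, c1 H (wr2 H h2 g0) (wl2 H h1 g2)))"

definition pc1 :: "('o,'a,'b,'c) gray_data \<Rightarrow>
    ('a \<times> 'a \<times> 'a \<times> 'a \<times> 'b) \<times> ('a \<times> 'a \<times> 'a \<times> 'a \<times> 'b) \<times> 'b \<times> 'b \<times> 'c \<Rightarrow>
    ('a \<times> 'a \<times> 'a \<times> 'a \<times> 'b) \<times> ('a \<times> 'a \<times> 'a \<times> 'a \<times> 'b) \<times> 'b \<times> 'b \<times> 'c \<Rightarrow>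
    ('a \<times> 'a \<times> 'a \<times> 'a \<times> 'b) \<times> ('a \<times> 'a \<times> 'a \<times> 'a \<times> 'b) \<times> 'b \<times> 'b \<times> 'c" where
  "pc1 H be al = (case be of (_, k, b1, b2, b3) \<Rightarrow> case al of (g, _, a1, a2, a3) \<Rightarrow>
      case g of (f, f', _, _, _) \<Rightarrow>
      (g, k, c1 H b1 a1, c1 H b2 a2,
       c2 H (c13 H b3 (i3 H (wr2 H a2 f))) (c13 H (i3 H (wl2 H f' b1)) a3)))"

definition pwl2 :: "('o,'a,'b,'c) gray_data \<Rightarrow> 'a \<times> 'a \<times> 'a \<times> 'a \<times> 'b \<Rightarrow>
    ('a \<times> 'a \<times> 'a \<times> 'a \<times> 'b) \<times> ('a \<times> 'a \<times> 'a \<times> 'a \<times> 'b) \<times> 'b \<times> 'b \<times> 'c \<Rightarrow>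
    ('a \<times> 'a \<times> 'a \<times> 'a \<times> 'b) \<times> ('a \<times> 'a \<times> 'a \<times> 'a \<times> 'b) \<times> 'b \<times> 'b \<times> 'c" where
  "pwl2 H k al = (case k of (_, _, h0, h1, h2) \<Rightarrow> case al of (g, g', a1, a2, a3) \<Rightarrow>
      case g of (_, _, g0, _, g2) \<Rightarrow> case g' of (_, _, g0', _, _) \<Rightarrow>
      (pc0 H k g, pc0 H k g', wl2 H h0 a1, wl2 H h1 a2,
       c2 H (c13 H (i3 H (wr2 H h2 g0')) (wl3 H h1 a3))
            (c13 H (ic H h2 a1) (i3 H (wl2 H h1 g2)))))"

definition pwr2 :: "('o,'a,'b,'c) gray_data \<Rightarrow>
    ('a \<times> 'a \<times> 'a \<times> 'a \<times> 'b) \<times> ('a \<times> 'a \<times> 'a \<times> 'a \<times> 'b) \<times> 'b \<times> 'b \<times> 'c \<Rightarrow>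
    'a \<times> 'a \<times> 'a \<times> 'a \<times> 'b \<Rightarrow>
    ('a \<times> 'a \<times> 'a \<times> 'a \<times> 'b) \<times> ('a \<times> 'a \<times> 'a \<times> 'a \<times> 'b) \<times> 'b \<times> 'b \<times> 'c" where
  "pwr2 H al k = (case k of (_, _, k0, k1, k2) \<Rightarrow> case al of (g, g', a1, a2, a3) \<Rightarrow>
      case g of (_, _, _, g1, _) \<Rightarrow> case g' of (_, _, _, _, g2') \<Rightarrow>
      (pc0 H g k, pc0 H g' k, wr2 H a1 k0, wr2 H a2 k1,
       c2 H (c13 H (i3 H (wr2 H g2' k0)) (ic_inv H a2 k2))
            (c13 H (wr3 H a3 k0) (i3 H (wl2 H g1 k2)))))"

definition path :: "('o,'a,'b,'c) gray_data \<Rightarrow>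
   ('a, 'a \<times> 'a \<times> 'a \<times> 'a \<times> 'b,
    ('a \<times> 'a \<times> 'a \<times> 'a \<times> 'b) \<times> ('a \<times> 'a \<times> 'a \<times> 'a \<times> 'b) \<times> 'b \<times> 'b \<times> 'c,
    (('a \<times> 'a \<times> 'a \<times> 'a \<times> 'b) \<times> ('a \<times> 'a \<times> 'a \<times> 'a \<times> 'b) \<times> 'b \<times> 'b \<times> 'c) \<times>
    (('a \<times> 'a \<times> 'a \<times> 'a \<times> 'b) \<times> ('a \<times> 'a \<times> 'a \<times> 'a \<times> 'b) \<times> 'b \<times> 'b \<times> 'c) \<times> 'c \<times> 'c) gray_data" where
  "path H = (let
      PAr = {(f, f', g0, g1, g2). f \<in> Ar H \<and> f' \<in> Ar H \<and> g0 \<in> Ar H \<and> g1 \<in> Ar H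
              \<and> s1 H g0 = s1 H f \<and> t1 H g0 = s1 H f' \<and> s1 H g1 = t1 H f \<and> t1 H g1 = t1 H f'
              \<and> g2 \<in> Tw H \<and> s2 H g2 = c0 H g1 f \<and> t2 H g2 = c0 H f' g0};
      PTw = {(g, h, a1, a2, a3). g \<in> PAr \<and> h \<in> PAr
              \<and> fst g = fst h \<and> fst (snd g) = fst (snd h)
              \<and> (case g of (f, f', g0, g1, g2) \<Rightarrow> case h of (_, _, h0, h1, h2) \<Rightarrow>
                   a1 \<in> Tw H \<and> s2 H a1 = g0 \<and> t2 H a1 = h0
                 \<and> a2 \<in> Tw H \<and> s2 H a2 = g1 \<and> t2 H a2 = h1
                 \<and> a3 \<in> Th H \<and> s3 H a3 = c1 H (wl2 H f' a1) g2 \<and> t3 H a3 = c1 H h2 (wr2 H a2 f))}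
    in \<lparr> Ob = Ar H,
      Ar = PAr,
      Tw = PTw,
      Th = {(al, be, C1, C2). al \<in> PTw \<and> be \<in> PTw
              \<and> fst al = fst be \<and> fst (snd al) = fst (snd be)
              \<and> (case al of (g, h, a1, a2, a3) \<Rightarrow> case be of (_, _, b1, b2, b3) \<Rightarrow>
                  case g of (f, f', _, _, g2) \<Rightarrow> case h of (_, _, _, _, h2) \<Rightarrow>
                   C1 \<in> Th H \<and> s3 H C1 = a1 \<and> t3 H C1 = b1
                 \<and> C2 \<in> Th H \<and> s3 H C2 = a2 \<and> t3 H C2 = b2
                 \<and> c2 H b3 (c13 H (wl3 H f' C1) (i3 H g2)) = c2 H (c13 H (i3 H h2) (wr3 H C2 f)) a3)},
      s1 = (\<lambda>g. fst g),
      t1 = (\<lambda>g. fst (snd g)),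
      s2 = (\<lambda>al. fst al),
      t2 = (\<lambda>al. fst (snd al)),
      s3 = (\<lambda>C. fst C),
      t3 = (\<lambda>C. fst (snd C)),
      i1 = (\<lambda>f. (f, f, i1 H (s1 H f), i1 H (t1 H f), i2 H f)),
      i2 = (\<lambda>g. case g of (_, _, g0, g1, g2) \<Rightarrow> (g, g, i2 H g0, i2 H g1, i3 H g2)),
      i3 = (\<lambda>al. case al of (_, _, a1, a2, _) \<Rightarrow> (al, al, i3 H a1, i3 H a2)),
      c0 = pc0 H,
      c1 = pc1 H,
      c2 = (\<lambda>(_, ga, D1, D2) (al, _, C1, C2). (al, ga, c2 H D1 C1, c2 H D2 C2)),
      c13 = (\<lambda>(al', be', D1, D2) (al, be, C1, C2).
                (pc1 H al' al, pc1 H be' be, c13 H D1 C1, c13 H D2 C2)),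
      wl2 = pwl2 H,
      wr2 = pwr2 H,
      wl3 = (\<lambda>k (al, be, C1, C2). case k of (_, _, h0, h1, _) \<Rightarrow>
                (pwl2 H k al, pwl2 H k be, wl3 H h0 C1, wl3 H h1 C2)),
      wr3 = (\<lambda>(al, be, C1, C2) k. case k of (_, _, k0, k1, _) \<Rightarrow>
                (pwr2 H al k, pwr2 H be k, wr3 H C1 k0, wr3 H C2 k1)),
      ic = (\<lambda>be al. case be of (k, k', b1, b2, _) \<Rightarrow> case al of (g, g', a1, a2, _) \<Rightarrow>
                (pc1 H (pwl2 H k' al) (pwr2 H be g), pc1 H (pwr2 H be g') (pwl2 H k al),
                 ic H b1 a1, ic H b2 a2)) \<rparr>)"

definition pfun_ar :: "('o,'a,'b,'c,'o2,'a2,'b2,'c2) gray_fun \<Rightarrow>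
    'a \<times> 'a \<times> 'a \<times> 'a \<times> 'b \<Rightarrow> 'a2 \<times> 'a2 \<times> 'a2 \<times> 'a2 \<times> 'b2" where
  "pfun_ar F g = (case g of (f, f', g0, g1, g2) \<Rightarrow> (fAr F f, fAr F f', fAr F g0, fAr F g1, fTw F g2))"

definition pfun_tw :: "('o,'a,'b,'c,'o2,'a2,'b2,'c2) gray_fun \<Rightarrow>
    ('a \<times> 'a \<times> 'a \<times> 'a \<times> 'b) \<times> ('a \<times> 'a \<times> 'a \<times> 'a \<times> 'b) \<times> 'b \<times> 'b \<times> 'c \<Rightarrow>
    ('a2 \<times> 'a2 \<times> 'a2 \<times> 'a2 \<times> 'b2) \<times> ('a2 \<times> 'a2 \<times> 'a2 \<times> 'a2 \<times> 'b2) \<times> 'b2 \<times> 'b2 \<times> 'c2" where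
  "pfun_tw F al = (case al of (g, h, a1, a2, a3) \<Rightarrow>
      (pfun_ar F g, pfun_ar F h, fTw F a1, fTw F a2, fTh F a3))"

definition pfun :: "('o,'a,'b,'c,'o2,'a2,'b2,'c2) gray_fun \<Rightarrow>
   ('a, 'a \<times> 'a \<times> 'a \<times> 'a \<times> 'b,
    ('a \<times> 'a \<times> 'a \<times> 'a \<times> 'b) \<times> ('a \<times> 'a \<times> 'a \<times> 'a \<times> 'b) \<times> 'b \<times> 'b \<times> 'c,
    (('a \<times> 'a \<times> 'a \<times> 'a \<times> 'b) \<times> ('a \<times> 'a \<times> 'a \<times> 'a \<times> 'b) \<times> 'b \<times> 'b \<times> 'c) \<times>
    (('a \<times> 'a \<times> 'a \<times> 'a \<times> 'b) \<times> ('a \<times> 'a \<times> 'a \<times> 'a \<times> 'b) \<times> 'b \<times> 'b \<times> 'c) \<times> 'c \<times> 'c,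
    'a2, 'a2 \<times> 'a2 \<times> 'a2 \<times> 'a2 \<times> 'b2,
    ('a2 \<times> 'a2 \<times> 'a2 \<times> 'a2 \<times> 'b2) \<times> ('a2 \<times> 'a2 \<times> 'a2 \<times> 'a2 \<times> 'b2) \<times> 'b2 \<times> 'b2 \<times> 'c2,
    (('a2 \<times> 'a2 \<times> 'a2 \<times> 'a2 \<times> 'b2) \<times> ('a2 \<times> 'a2 \<times> 'a2 \<times> 'a2 \<times> 'b2) \<times> 'b2 \<times> 'b2 \<times> 'c2) \<times>
    (('a2 \<times> 'a2 \<times> 'a2 \<times> 'a2 \<times> 'b2) \<times> ('a2 \<times> 'a2 \<times> 'a2 \<times> 'a2 \<times> 'b2) \<times> 'b2 \<times> 'b2 \<times> 'c2) \<times> 'c2 \<times> 'c2)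
   gray_fun" where
  "pfun F = \<lparr>fOb = fAr F, fAr = pfun_ar F, fTw = pfun_tw F,
     fTh = (\<lambda>(al, be, C1, C2). (pfun_tw F al, pfun_tw F be, fTh F C1, fTh F C2))\<rparr>"

end

theory Submission
  imports Defs
begin

lemma Q1_f_0:
  "Ob (Q1 G) = Ob G"
  by (simp_all add: Q1_def Let_def)

lemma Q1_f_1:
  "s1 (Q1 G) u = fst u" "t1 (Q1 G) u = fst (snd u)"
  by (simp_all add: Q1_def Let_def)

lemma Q1_f_2:
  "s2 (Q1 G) (a, u, v) = u" "t2 (Q1 G) (a, u, v) = v"
  by (simp_all add: Q1_def Let_def)

lemma Q1_f_3:
  "s3 (Q1 G) (C, a, b, u, v) = (a, u, v)" "t3 (Q1 G) (C, a, b, u, v) = (b, u, v)"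
  by (simp_all add: Q1_def Let_def)

lemma Q1_f_4:
  "i1 (Q1 G) x = (x, x, [])"
  by (simp_all add: Q1_def Let_def)

lemma Q1_f_5:
  "i2 (Q1 G) u = (i2 G (qeps G u), u, u)"
  by (simp_all add: Q1_def Let_def)

lemma Q1_f_6:
  "i3 (Q1 G) (a, u, v) = (i3 G a, a, a, u, v)"
  by (simp_all add: Q1_def Let_def)

lemma Q1_f_7:
  "c0 (Q1 G) = qc0"
  by (simp_all add: Q1_def Let_def)

lemma Q1_f_8:
  "c1 (Q1 G) (b, v, w) (a, u, v') = (c1 G b a, u, w)"
  by (simp_all add: Q1_def Let_def)

lemma Q1_f_9:
  "c2 (Q1 G) (D, b', c, x, y) (C, a, b, u, v) = (c2 G D C, a, c, u, v)"
  by (simp_all add: Q1_def Let_def)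

lemma Q1_f_10:
  "c13 (Q1 G) (D, a', b', v, w) (C, a, b, u, v') = (c13 G D C, c1 G a' a, c1 G b' b, u, w)"
  by (simp_all add: Q1_def Let_def)

lemma Q1_f_11:
  "wl2 (Q1 G) g (a, u, v) = (wl2 G (qeps G g) a, qc0 g u, qc0 g v)"
  by (simp_all add: Q1_def Let_def)

lemma Q1_f_12:
  "wr2 (Q1 G) (a, u, v) f = (wr2 G a (qeps G f), qc0 u f, qc0 v f)"
  by (simp_all add: Q1_def Let_def)

lemma Q1_f_13:
  "wl3 (Q1 G) g (C, a, b, u, v) = (wl3 G (qeps G g) C, wl2 G (qeps G g) a, wl2 G (qeps G g) b, qc0 g u, qc0 g v)"
  by (simp_all add: Q1_def Let_def)

lemma Q1_f_14:
  "wr3 (Q1 G) (C, a, b, u, v) f = (wr3 G C (qeps G f), wr2 G a (qeps G f), wr2 G b (qeps G f), qc0 u f, qc0 v f)"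
  by (simp_all add: Q1_def Let_def)

lemma Q1_f_15:
  "ic (Q1 G) (b, g, g') (a, f, f') = (ic G b a,
               c1 G (wl2 G (qeps G g') a) (wr2 G b (qeps G f)),
               c1 G (wr2 G b (qeps G f')) (wl2 G (qeps G g) a),
               qc0 g f, qc0 g' f')"
  by (simp_all add: Q1_def Let_def)


lemma Q1_Ar: "u \<in> Ar (Q1 G) \<longleftrightarrow> qchain G (fst u) (fst (snd u)) (snd (snd u))"
  by (cases u) (simp add: Q1_def Let_def)

lemma Q1_Tw: "(a, u, v) \<in> Tw (Q1 G) \<longleftrightarrow> u \<in> Ar (Q1 G) \<and> v \<in> Ar (Q1 G) \<and> fst u = fst v
   \<and> fst (snd u) = fst (snd v) \<and> a \<in> Tw G \<and> s2 G a = qeps G u \<and> t2 G a = qeps G v"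
  by (simp_all add: Q1_def Let_def)

lemma Q1_Th: "(C, a, b, u, v) \<in> Th (Q1 G) \<longleftrightarrow> (a, u, v) \<in> Tw (Q1 G) \<and> (b, u, v) \<in> Tw (Q1 G)
   \<and> C \<in> Th G \<and> s3 G C = a \<and> t3 G C = b"
  by (simp_all add: Q1_def Let_def)

lemma path_f_0:
  "Ob (path H) = Ar H"
  by (simp_all add: path_def Let_def)

lemma path_f_1:
  "s1 (path H) g = fst g" "t1 (path H) g = fst (snd g)"
  by (simp_all add: path_def Let_def)

lemma path_f_2:
  "s2 (path H) al = fst al" "t2 (path H) al = fst (snd al)"
  by (simp_all add: path_def Let_def)

lemma path_f_3:
  "s3 (path H) C = fst C" "t3 (path H) C = fst (snd C)"
  by (simp_all add: path_def Let_def)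

lemma path_f_4:
  "i1 (path H) f = (f, f, i1 H (s1 H f), i1 H (t1 H f), i2 H f)"
  by (simp_all add: path_def Let_def)

lemma path_f_5:
  "i2 (path H) (f, f', g0, g1, g2) = ((f, f', g0, g1, g2), (f, f', g0, g1, g2), i2 H g0, i2 H g1, i3 H g2)"
  by (simp_all add: path_def Let_def)

lemma path_f_6:
  "i3 (path H) (g, h, a1, a2, a3) = ((g, h, a1, a2, a3), (g, h, a1, a2, a3), i3 H a1, i3 H a2)"
  by (simp_all add: path_def Let_def)

lemma path_f_7:
  "c0 (path H) = pc0 H" "c1 (path H) = pc1 H"
  by (simp_all add: path_def Let_def)

lemma path_f_8:
  "c2 (path H) (x, ga, D1, D2) (al, y, C1, C2) = (al, ga, c2 H D1 C1, c2 H D2 C2)"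
  by (simp_all add: path_def Let_def)

lemma path_f_9:
  "c13 (path H) (al', be', D1, D2) (al, be, C1, C2) = (pc1 H al' al, pc1 H be' be, c13 H D1 C1, c13 H D2 C2)"
  by (simp_all add: path_def Let_def)

lemma path_f_10:
  "wl2 (path H) = pwl2 H" "wr2 (path H) = pwr2 H"
  by (simp_all add: path_def Let_def)

lemma path_f_11:
  "wl3 (path H) (k0', k1', h0, h1, k2') (al, be, C1, C2) = (pwl2 H (k0', k1', h0, h1, k2') al, pwl2 H (k0', k1', h0, h1, k2') be, wl3 H h0 C1, wl3 H h1 C2)"
  by (simp_all add: path_def Let_def)

lemma path_f_12:
  "wr3 (path H) (al, be, C1, C2) (k0', k1', k0, k1, k2') = (pwr2 H al (k0', k1', k0, k1, k2'), pwr2 H be (k0', k1', k0, k1, k2'), wr3 H C1 k0, wr3 H C2 k1)"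
  by (simp_all add: path_def Let_def)

lemma path_f_13:
  "ic (path H) (k, k', b1, b2, b3) (g, g', a1, a2, a3) = (pc1 H (pwl2 H k' (g, g', a1, a2, a3)) (pwr2 H (k, k', b1, b2, b3) g), pc1 H (pwr2 H (k, k', b1, b2, b3) g') (pwl2 H k (g, g', a1, a2, a3)),
                 ic H b1 a1, ic H b2 a2)"
  by (simp_all add: path_def Let_def)


lemma path_Ar: "(f, f', g0, g1, g2) \<in> Ar (path H) \<longleftrightarrow> f \<in> Ar H \<and> f' \<in> Ar H \<and> g0 \<in> Ar H \<and> g1 \<in> Ar H
              \<and> s1 H g0 = s1 H f \<and> t1 H g0 = s1 H f' \<and> s1 H g1 = t1 H f \<and> t1 H g1 = t1 H f'
              \<and> g2 \<in> Tw H \<and> s2 H g2 = c0 H g1 f \<and> t2 H g2 = c0 H f' g0"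
  by (simp_all add: path_def Let_def)

lemma path_Tw: "((f, f', g0, g1, g2), (e, e', h0, h1, h2), a1, a2, a3) \<in> Tw (path H) \<longleftrightarrow>
    (f, f', g0, g1, g2) \<in> Ar (path H) \<and> (e, e', h0, h1, h2) \<in> Ar (path H) \<and> e = f \<and> e' = f'
    \<and> a1 \<in> Tw H \<and> s2 H a1 = g0 \<and> t2 H a1 = h0
    \<and> a2 \<in> Tw H \<and> s2 H a2 = g1 \<and> t2 H a2 = h1
    \<and> a3 \<in> Th H \<and> s3 H a3 = c1 H (wl2 H f' a1) g2 \<and> t3 H a3 = c1 H h2 (wr2 H a2 f)"
  unfolding path_def Let_def by auto

lemma path_Th: "(((f, f', g0, g1, g2), (e, e', h0, h1, h2), a1, a2, a3), (g', h', b1, b2, b3), C1, C2) \<in> Th (path H) \<longleftrightarrow>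
    ((f, f', g0, g1, g2), (e, e', h0, h1, h2), a1, a2, a3) \<in> Tw (path H) \<and> (g', h', b1, b2, b3) \<in> Tw (path H)
    \<and> g' = (f, f', g0, g1, g2) \<and> h' = (e, e', h0, h1, h2)
    \<and> C1 \<in> Th H \<and> s3 H C1 = a1 \<and> t3 H C1 = b1
    \<and> C2 \<in> Th H \<and> s3 H C2 = a2 \<and> t3 H C2 = b2
    \<and> c2 H b3 (c13 H (wl3 H f' C1) (i3 H g2)) = c2 H (c13 H (i3 H h2) (wr3 H C2 f)) a3"
  unfolding path_def Let_def by (cases g'; cases h'; auto)

declare Q1_f_0[simp] Q1_f_1[simp] Q1_f_2[simp] Q1_f_3[simp] Q1_f_4[simp] Q1_f_5[simp] Q1_f_6[simp] Q1_f_7[simp] Q1_f_8[simp] Q1_f_9[simp] Q1_f_10[simp] Q1_f_11[simp] Q1_f_12[simp] Q1_f_13[simp] Q1_f_14[simp] Q1_f_15[simp] path_f_0[simp] path_f_1[simp] path_f_2[simp] path_f_3[simp] path_f_4[simp] path_f_5[simp] path_f_6[simp] path_f_7[simp] path_f_8[simp] path_f_9[simp] path_f_10[simp] path_f_11[simp] path_f_12[simp] path_f_13[simp]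

context gray_category begin

lemma c0_Ar: "\<lbrakk>f \<in> Ar G; g \<in> Ar G; t1 G f = s1 G g\<rbrakk> \<Longrightarrow> c0 G g f \<in> Ar G"
  and c0_s1: "\<lbrakk>f \<in> Ar G; g \<in> Ar G; t1 G f = s1 G g\<rbrakk> \<Longrightarrow> s1 G (c0 G g f) = s1 G f"
  and c0_t1: "\<lbrakk>f \<in> Ar G; g \<in> Ar G; t1 G f = s1 G g\<rbrakk> \<Longrightarrow> t1 G (c0 G g f) = t1 G g"
  using c0_typ by auto

lemma i2_Tw: "f \<in> Ar G \<Longrightarrow> i2 G f \<in> Tw G" and i2_s2: "f \<in> Ar G \<Longrightarrow> s2 G (i2 G f) = f"
  and i2_t2: "f \<in> Ar G \<Longrightarrow> t2 G (i2 G f) = f"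
  using i2_typ by auto
lemma i3_Th: "a \<in> Tw G \<Longrightarrow> i3 G a \<in> Th G" and i3_s3: "a \<in> Tw G \<Longrightarrow> s3 G (i3 G a) = a"
  and i3_t3: "a \<in> Tw G \<Longrightarrow> t3 G (i3 G a) = a"
  using i3_typ by auto

lemma s2_Ar: "a \<in> Tw G \<Longrightarrow> s2 G a \<in> Ar G" and t2_Ar: "a \<in> Tw G \<Longrightarrow> t2 G a \<in> Ar G"
  and s1_s2_t2: "a \<in> Tw G \<Longrightarrow> s1 G (t2 G a) = s1 G (s2 G a)"
  and t1_s2_t2: "a \<in> Tw G \<Longrightarrow> t1 G (t2 G a) = t1 G (s2 G a)"
  using tw_typ by auto
lemma s3_Tw: "C \<in> Th G \<Longrightarrow> s3 G C \<in> Tw G" and t3_Tw: "C \<in> Th G \<Longrightarrow> t3 G C \<in> Tw G"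
  and s2_s3_t3: "C \<in> Th G \<Longrightarrow> s2 G (t3 G C) = s2 G (s3 G C)"
  and t2_s3_t3: "C \<in> Th G \<Longrightarrow> t2 G (t3 G C) = t2 G (s3 G C)"
  using th_typ by auto

lemma c1_Tw: "\<lbrakk>a \<in> Tw G; b \<in> Tw G; t2 G a = s2 G b\<rbrakk> \<Longrightarrow> c1 G b a \<in> Tw G"
  and c1_s2: "\<lbrakk>a \<in> Tw G; b \<in> Tw G; t2 G a = s2 G b\<rbrakk> \<Longrightarrow> s2 G (c1 G b a) = s2 G a"
  and c1_t2: "\<lbrakk>a \<in> Tw G; b \<in> Tw G; t2 G a = s2 G b\<rbrakk> \<Longrightarrow> t2 G (c1 G b a) = t2 G b"
  using c1_typ by auto
lemma c2_Th: "\<lbrakk>C \<in> Th G; D \<in> Th G; t3 G C = s3 G D\<rbrakk> \<Longrightarrow> c2 G D C \<in> Th G"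
  and c2_s3: "\<lbrakk>C \<in> Th G; D \<in> Th G; t3 G C = s3 G D\<rbrakk> \<Longrightarrow> s3 G (c2 G D C) = s3 G C"
  and c2_t3: "\<lbrakk>C \<in> Th G; D \<in> Th G; t3 G C = s3 G D\<rbrakk> \<Longrightarrow> t3 G (c2 G D C) = t3 G D"
  using c2_typ by auto
lemma c13_Th: "\<lbrakk>C \<in> Th G; D \<in> Th G; t2 G (s3 G C) = s2 G (s3 G D)\<rbrakk> \<Longrightarrow> c13 G D C \<in> Th G"
  and c13_s3: "\<lbrakk>C \<in> Th G; D \<in> Th G; t2 G (s3 G C) = s2 G (s3 G D)\<rbrakk> \<Longrightarrow> s3 G (c13 G D C) = c1 G (s3 G D) (s3 G C)"
  and c13_t3: "\<lbrakk>C \<in> Th G; D \<in> Th G; t2 G (s3 G C) = s2 G (s3 G D)\<rbrakk> \<Longrightarrow> t3 G (c13 G D C) = c1 G (t3 G D) (t3 G C)"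
  using c13_typ by auto
lemma wl2_Tw: "\<lbrakk>g \<in> Ar G; a \<in> Tw G; t1 G (s2 G a) = s1 G g\<rbrakk> \<Longrightarrow> wl2 G g a \<in> Tw G"
  and wl2_s2: "\<lbrakk>g \<in> Ar G; a \<in> Tw G; t1 G (s2 G a) = s1 G g\<rbrakk> \<Longrightarrow> s2 G (wl2 G g a) = c0 G g (s2 G a)"
  and wl2_t2: "\<lbrakk>g \<in> Ar G; a \<in> Tw G; t1 G (s2 G a) = s1 G g\<rbrakk> \<Longrightarrow> t2 G (wl2 G g a) = c0 G g (t2 G a)"
  using wl2_typ by auto
lemma wr2_Tw: "\<lbrakk>f \<in> Ar G; a \<in> Tw G; s1 G (s2 G a) = t1 G f\<rbrakk> \<Longrightarrow> wr2 G a f \<in> Tw G"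
  and wr2_s2: "\<lbrakk>f \<in> Ar G; a \<in> Tw G; s1 G (s2 G a) = t1 G f\<rbrakk> \<Longrightarrow> s2 G (wr2 G a f) = c0 G (s2 G a) f"
  and wr2_t2: "\<lbrakk>f \<in> Ar G; a \<in> Tw G; s1 G (s2 G a) = t1 G f\<rbrakk> \<Longrightarrow> t2 G (wr2 G a f) = c0 G (t2 G a) f"
  using wr2_typ by auto
lemma wl3_Th: "\<lbrakk>g \<in> Ar G; C \<in> Th G; t1 G (s2 G (s3 G C)) = s1 G g\<rbrakk> \<Longrightarrow> wl3 G g C \<in> Th G"
  and wl3_s3: "\<lbrakk>g \<in> Ar G; C \<in> Th G; t1 G (s2 G (s3 G C)) = s1 G g\<rbrakk> \<Longrightarrow> s3 G (wl3 G g C) = wl2 G g (s3 G C)"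
  and wl3_t3: "\<lbrakk>g \<in> Ar G; C \<in> Th G; t1 G (s2 G (s3 G C)) = s1 G g\<rbrakk> \<Longrightarrow> t3 G (wl3 G g C) = wl2 G g (t3 G C)"
  using wl3_typ by auto
lemma wr3_Th: "\<lbrakk>f \<in> Ar G; C \<in> Th G; s1 G (s2 G (s3 G C)) = t1 G f\<rbrakk> \<Longrightarrow> wr3 G C f \<in> Th G"
  and wr3_s3: "\<lbrakk>f \<in> Ar G; C \<in> Th G; s1 G (s2 G (s3 G C)) = t1 G f\<rbrakk> \<Longrightarrow> s3 G (wr3 G C f) = wr2 G (s3 G C) f"
  and wr3_t3: "\<lbrakk>f \<in> Ar G; C \<in> Th G; s1 G (s2 G (s3 G C)) = t1 G f\<rbrakk> \<Longrightarrow> t3 G (wr3 G C f) = wr2 G (t3 G C) f"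
  using wr3_typ by auto
lemma ic_Th: "\<lbrakk>a \<in> Tw G; b \<in> Tw G; s1 G (s2 G b) = t1 G (s2 G a)\<rbrakk> \<Longrightarrow> ic G b a \<in> Th G"
  and ic_s3: "\<lbrakk>a \<in> Tw G; b \<in> Tw G; s1 G (s2 G b) = t1 G (s2 G a)\<rbrakk> \<Longrightarrow> s3 G (ic G b a) = c1 G (wl2 G (t2 G b) a) (wr2 G b (s2 G a))"
  and ic_t3: "\<lbrakk>a \<in> Tw G; b \<in> Tw G; s1 G (s2 G b) = t1 G (s2 G a)\<rbrakk> \<Longrightarrow> t3 G (ic G b a) = c1 G (wr2 G b (t2 G a)) (wl2 G (s2 G b) a)"
  using ic_typ by auto

lemmas typ_simps = c0_Ar c0_s1 c0_t1 i2_Tw i2_s2 i2_t2 i3_Th i3_s3 i3_t3 s2_Ar t2_Ar s1_s2_t2 t1_s2_t2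
  s3_Tw t3_Tw s2_s3_t3 t2_s3_t3 c1_Tw c1_s2 c1_t2 c2_Th c2_s3 c2_t3 c13_Th c13_s3 c13_t3
  wl2_Tw wl2_s2 wl2_t2 wr2_Tw wr2_s2 wr2_t2 wl3_Th wl3_s3 wl3_t3 wr3_Th wr3_s3 wr3_t3 ic_Th ic_s3 ic_t3


definition isinv :: "'c \<Rightarrow> 'c \<Rightarrow> bool" where
  "isinv X D \<longleftrightarrow> D \<in> Th G \<and> s3 G D = t3 G X \<and> t3 G D = s3 G X
      \<and> c2 G D X = i3 G (s3 G X) \<and> c2 G X D = i3 G (t3 G X)"

lemma isinv_unique: "\<lbrakk>X \<in> Th G; isinv X D; isinv X D'\<rbrakk> \<Longrightarrow> D = D'"
proof -
  assume X: "X \<in> Th G" and d: "isinv X D" and d': "isinv X D'"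
  note dd = d[unfolded isinv_def] and dd' = d'[unfolded isinv_def]
  have "c2 G D (i3 G (s3 G D)) = D" using c2_unit[of D] dd by blast
  then have 1: "D = c2 G D (i3 G (t3 G X))" using dd by simp
  have 2: "c2 G X D' = i3 G (t3 G X)" using dd' by blast
  have 3: "c2 G D (c2 G X D') = c2 G (c2 G D X) D'"
    by (rule c2_assoc) (use X dd dd' in auto)
  have 4: "c2 G D X = i3 G (s3 G X)" using dd by blast
  have "c2 G (i3 G (t3 G D')) D' = D'" using c2_unit[of D'] dd' by blast
  then have 5: "c2 G (i3 G (s3 G X)) D' = D'" using dd' by simp
  show ?thesis using 1 2 3 4 5 by simp
qed

lemma ic_inv_char: "\<lbrakk>a \<in> Tw G; b \<in> Tw G; s1 G (s2 G b) = t1 G (s2 G a)\<rbrakk> \<Longrightarrow>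
   isinv (ic G b a) (ic_inv G b a) \<and> (\<forall>D. isinv (ic G b a) D \<longrightarrow> D = ic_inv G b a)"
proof -
  assume h: "a \<in> Tw G" "b \<in> Tw G" "s1 G (s2 G b) = t1 G (s2 G a)"
  from ic_inv[OF h] obtain D where D: "isinv (ic G b a) D" unfolding isinv_def by (elim bexE) auto
  have X: "ic G b a \<in> Th G" using h by (rule ic_Th)
  have e: "ic_inv G b a = (THE D. isinv (ic G b a) D)" unfolding ic_inv_def isinv_def by (simp only: conj_assoc)
  have "(THE D. isinv (ic G b a) D) = D" using D isinv_unique[OF X] by (intro the_equality) auto
  with e have "ic_inv G b a = D" by simp
  then show ?thesis using D isinv_unique[OF X D] by metis
qed
end



lemma pfun_simps[simp]:
  "fOb (pfun F) = fAr F" "fAr (pfun F) = pfun_ar F" "fTw (pfun F) = pfun_tw F"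
  "fTh (pfun F) (al, be, C1, C2) = (pfun_tw F al, pfun_tw F be, fTh F C1, fTh F C2)"
  by (simp_all add: pfun_def)
lemma pfun_ar_simp[simp]: "pfun_ar F (f, f', g0, g1, g2) = (fAr F f, fAr F f', fAr F g0, fAr F g1, fTw F g2)"
  by (simp add: pfun_ar_def)
lemma pfun_tw_simp[simp]: "pfun_tw F (g, h, a1, a2, a3) = (pfun_ar F g, pfun_ar F h, fTw F a1, fTw F a2, fTh F a3)"
  by (simp add: pfun_tw_def)
lemma eQ_simps[simp]: "fOb (eQ G) = (\<lambda>x. x)" "fAr (eQ G) = qeps G" "fTw (eQ G) = fst" "fTh (eQ G) = fst"
  by (simp_all add: eQ_def)


lemma qc0_simps[simp]: "fst (qc0 v u) = fst u" "fst (snd (qc0 v u)) = fst (snd v)"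
  by (simp_all add: qc0_def)

lemma qc0_assoc[simp]: "qc0 c (qc0 b a) = qc0 (qc0 c b) a"
  by (simp add: qc0_def)

lemma qc0_Ar: "\<lbrakk>u \<in> Ar (Q1 G); v \<in> Ar (Q1 G); fst v = fst (snd u)\<rbrakk> \<Longrightarrow> qc0 v u \<in> Ar (Q1 G)"
proof -
  have *: "\<And>y. qchain G y z gs \<Longrightarrow> qchain G x y fs \<Longrightarrow> qchain G x z (gs @ fs)" for x z gs fs
    by (induction gs arbitrary: z) auto
  show "\<lbrakk>u \<in> Ar (Q1 G); v \<in> Ar (Q1 G); fst v = fst (snd u)\<rbrakk> \<Longrightarrow> qc0 v u \<in> Ar (Q1 G)"
    unfolding Q1_Ar qc0_def by (auto intro: *)
qed

context gray_category begin

lemma qeps_typ: "qchain G x y fs \<Longrightarrow> qeps G (x, y, fs) \<in> Ar G \<and> s1 G (qeps G (x, y, fs)) = x \<and> t1 G (qeps G (x, y, fs)) = y"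
proof (induction fs arbitrary: y)
  case Nil then show ?case using i1_typ by (auto simp add: qeps_def)
  next
  case (Cons f fs)
  then have h: "qeps G (x, s1 G f, fs) \<in> Ar G \<and> s1 G (qeps G (x, s1 G f, fs)) = x \<and> t1 G (qeps G (x, s1 G f, fs)) = s1 G f"
    by simp
  have e: "qeps G (x, y, f # fs) = c0 G f (qeps G (x, s1 G f, fs))" by (simp add: qeps_def)
  show ?case unfolding e using h Cons.prems c0_typ[of "qeps G (x, s1 G f, fs)" f] by auto
qed

lemma qeps_Ar: "u \<in> Ar (Q1 G) \<Longrightarrow> qeps G u \<in> Ar G"
  and qeps_s1: "u \<in> Ar (Q1 G) \<Longrightarrow> s1 G (qeps G u) = fst u"
  and qeps_t1: "u \<in> Ar (Q1 G) \<Longrightarrow> t1 G (qeps G u) = fst (snd u)"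
  using qeps_typ[of "fst u" "fst (snd u)" "snd (snd u)"] unfolding Q1_Ar by auto

lemma qeps_qc0: "\<lbrakk>u \<in> Ar (Q1 G); v \<in> Ar (Q1 G); fst v = fst (snd u)\<rbrakk> \<Longrightarrow> qeps G (qc0 v u) = c0 G (qeps G v) (qeps G u)"
proof -
  assume u: "u \<in> Ar (Q1 G)" and v: "v \<in> Ar (Q1 G)" and e: "fst v = fst (snd u)"
  obtain x y fs where U: "u = (x, y, fs)" by (cases u) auto
  obtain y' z gs where W: "v = (y', z, gs)" by (cases v) auto
  have qf: "qchain G x y fs" and qg: "qchain G y z gs" using u v e U W unfolding Q1_Ar by auto
  have "foldr (c0 G) gs (qeps G (x, y, fs)) = c0 G (qeps G (y, z, gs)) (qeps G (x, y, fs))"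
    using qg
  proof (induction gs arbitrary: z)
    case Nil
    then show ?case using c0_unit[of "qeps G (x, y, fs)"] qeps_typ[OF qf] by (simp add: qeps_def)
  next
    case (Cons g gs)
    then have IH: "foldr (c0 G) gs (qeps G (x, y, fs)) = c0 G (qeps G (y, s1 G g, gs)) (qeps G (x, y, fs))" by simp
    have t: "qeps G (y, s1 G g, gs) \<in> Ar G \<and> s1 G (qeps G (y, s1 G g, gs)) = y \<and> t1 G (qeps G (y, s1 G g, gs)) = s1 G g"
      using qeps_typ Cons.prems by simp
    have "foldr (c0 G) (g # gs) (qeps G (x, y, fs)) = c0 G g (c0 G (qeps G (y, s1 G g, gs)) (qeps G (x, y, fs)))"
      using IH by simp
    also have "\<dots> = c0 G (c0 G g (qeps G (y, s1 G g, gs))) (qeps G (x, y, fs))"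
      using c0_assoc t qeps_typ[OF qf] Cons.prems by simp
    also have "c0 G g (qeps G (y, s1 G g, gs)) = qeps G (y, z, g # gs)" by (simp add: qeps_def)
    finally show ?case .
  qed
  then show ?thesis using U W e by (simp add: qeps_def qc0_def)
qed

end

context gray_category begin

lemma ic_inv_Th: "\<lbrakk>a \<in> Tw G; b \<in> Tw G; s1 G (s2 G b) = t1 G (s2 G a)\<rbrakk> \<Longrightarrow> ic_inv G b a \<in> Th G"
  and ic_inv_s3: "\<lbrakk>a \<in> Tw G; b \<in> Tw G; s1 G (s2 G b) = t1 G (s2 G a)\<rbrakk> \<Longrightarrow> s3 G (ic_inv G b a) = t3 G (ic G b a)"
  and ic_inv_t3: "\<lbrakk>a \<in> Tw G; b \<in> Tw G; s1 G (s2 G b) = t1 G (s2 G a)\<rbrakk> \<Longrightarrow> t3 G (ic_inv G b a) = s3 G (ic G b a)"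
  using ic_inv_char unfolding isinv_def by blast+

lemma ic_inv_Q: assumes b: "(b, g, g') \<in> Tw (Q1 G)" and a: "(a, f, f') \<in> Tw (Q1 G)" and e: "fst g = fst (snd f)"
  shows "ic_inv (Q1 G) (b, g, g') (a, f, f') = (ic_inv G b a, t3 G (ic G b a), s3 G (ic G b a), qc0 g f, qc0 g' f')"
proof -
  note bb = b[unfolded Q1_Tw] and aa = a[unfolded Q1_Tw]
  have h: "a \<in> Tw G" "b \<in> Tw G" "s1 G (s2 G b) = t1 G (s2 G a)" using bb aa e by (simp_all add: qeps_s1 qeps_t1)
  note ch = ic_inv_char[OF h]
  define D0 where "D0 = ic_inv G b a"
  have D0: "isinv (ic G b a) D0" using ch D0_def by simp
  have u: "\<And>E. isinv (ic G b a) E \<Longrightarrow> E = D0" using ch D0_def by simp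
  have A: "s3 G (ic G b a) = c1 G (wl2 G (qeps G g') a) (wr2 G b (qeps G f))" using ic_s3[OF h] bb aa by simp
  have B: "t3 G (ic G b a) = c1 G (wr2 G b (qeps G f')) (wl2 G (qeps G g) a)" using ic_t3[OF h] bb aa by simp
  have X: "ic (Q1 G) (b, g, g') (a, f, f') = (ic G b a, s3 G (ic G b a), t3 G (ic G b a), qc0 g f, qc0 g' f')"
    using A B by simp
  have Xt: "ic G b a \<in> Th G" using h by (rule ic_Th)
  have gf: "qc0 g f \<in> Ar (Q1 G)" "qc0 g' f' \<in> Ar (Q1 G)" using aa bb e by (simp_all add: qc0_Ar)
  have tw1: "(t3 G (ic G b a), qc0 g f, qc0 g' f') \<in> Tw (Q1 G)" and tw2: "(s3 G (ic G b a), qc0 g f, qc0 g' f') \<in> Tw (Q1 G)"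
  proof -
    have 1: "s2 G (t3 G (ic G b a)) = c0 G (s2 G b) (s2 G a)" "t2 G (t3 G (ic G b a)) = c0 G (t2 G b) (t2 G a)"
      "s2 G (s3 G (ic G b a)) = c0 G (s2 G b) (s2 G a)" "t2 G (s3 G (ic G b a)) = c0 G (t2 G b) (t2 G a)"
      using h by (simp_all add: typ_simps)
    have 2: "qeps G (qc0 g f) = c0 G (qeps G g) (qeps G f)" "qeps G (qc0 g' f') = c0 G (qeps G g') (qeps G f')"
      using aa bb e by (simp_all add: qeps_qc0)
    show "(t3 G (ic G b a), qc0 g f, qc0 g' f') \<in> Tw (Q1 G)" "(s3 G (ic G b a), qc0 g f, qc0 g' f') \<in> Tw (Q1 G)"
      unfolding Q1_Tw using 1 2 gf aa bb Xt by (simp_all add: s3_Tw t3_Tw)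
  qed
  let ?P = "\<lambda>D. D \<in> Th (Q1 G) \<and> s3 (Q1 G) D = t3 (Q1 G) (ic (Q1 G) (b, g, g') (a, f, f'))
      \<and> t3 (Q1 G) D = s3 (Q1 G) (ic (Q1 G) (b, g, g') (a, f, f'))
      \<and> c2 (Q1 G) D (ic (Q1 G) (b, g, g') (a, f, f')) = i3 (Q1 G) (s3 (Q1 G) (ic (Q1 G) (b, g, g') (a, f, f')))
      \<and> c2 (Q1 G) (ic (Q1 G) (b, g, g') (a, f, f')) D = i3 (Q1 G) (t3 (Q1 G) (ic (Q1 G) (b, g, g') (a, f, f')))"
  have P: "?P (D0, t3 G (ic G b a), s3 G (ic G b a), qc0 g f, qc0 g' f')"
    unfolding X using D0 tw1 tw2 unfolding isinv_def Q1_Th by simp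
  have U: "D = (D0, t3 G (ic G b a), s3 G (ic G b a), qc0 g f, qc0 g' f')" if PD: "?P D" for D
  proof -
    obtain E x y v w where D: "D = (E, x, y, v, w)" by (cases D) auto
    have PD': "?P (E, x, y, v, w)" using PD unfolding D by assumption
    then have xyz: "x = t3 G (ic G b a) \<and> y = s3 G (ic G b a) \<and> v = qc0 g f \<and> w = qc0 g' f'"
      unfolding X by simp
    have "isinv (ic G b a) E" using PD' xyz unfolding X isinv_def Q1_Th by simp
    then have "E = D0" by (rule u)
    then show ?thesis using D xyz by simp
  qed
  have "ic_inv (Q1 G) (b, g, g') (a, f, f') = (THE D. ?P D)" unfolding ic_inv_def by (rule refl)
  also have "\<dots> = (D0, t3 G (ic G b a), s3 G (ic G b a), qc0 g f, qc0 g' f')"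
    by (rule the_equality) (use P U in auto)
  finally show ?thesis using D0_def by simp
qed

end

locale cs = G: gray_category G + KG: gray_category KK
  for G :: "('o,'a,'b,'c) gray_data" and KK :: "('p,'d,'e,'f) gray_data" +
  fixes K u
  assumes Ks: "strict_gray_functor KK (path G) K"
  and uf: "functor1 KK (path (Q1 G)) u"
  and eOb: "\<forall>x\<in>Ob KK. fOb (pfun (eQ G)) (fst u x) = fOb K x"
  and eAr: "\<forall>f\<in>Ar KK. fAr (pfun (eQ G)) (snd u f) = fAr K f"
begin

lemma K_Ar: "f \<in> Ar KK \<Longrightarrow> fAr K f \<in> Ar (path G)"
  and K_Tw: "a \<in> Tw KK \<Longrightarrow> fTw K a \<in> Tw (path G)"
  and K_Th: "C \<in> Th KK \<Longrightarrow> fTh K C \<in> Th (path G)"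
  and K_s2: "a \<in> Tw KK \<Longrightarrow> fst (fTw K a) = fAr K (s2 KK a)"
  and K_t2: "a \<in> Tw KK \<Longrightarrow> fst (snd (fTw K a)) = fAr K (t2 KK a)"
  and K_s3: "C \<in> Th KK \<Longrightarrow> fst (fTh K C) = fTw K (s3 KK C)"
  and K_t3: "C \<in> Th KK \<Longrightarrow> fst (snd (fTh K C)) = fTw K (t3 KK C)"
  and K_i2: "f \<in> Ar KK \<Longrightarrow> fTw K (i2 KK f) = i2 (path G) (fAr K f)"
  and K_i3: "a \<in> Tw KK \<Longrightarrow> fTh K (i3 KK a) = i3 (path G) (fTw K a)"
  and K_c1: "\<lbrakk>a \<in> Tw KK; b \<in> Tw KK; t2 KK a = s2 KK b\<rbrakk> \<Longrightarrow> fTw K (c1 KK b a) = pc1 G (fTw K b) (fTw K a)"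
  and K_c2: "\<lbrakk>C \<in> Th KK; D \<in> Th KK; t3 KK C = s3 KK D\<rbrakk> \<Longrightarrow> fTh K (c2 KK D C) = c2 (path G) (fTh K D) (fTh K C)"
  and K_c13: "\<lbrakk>C \<in> Th KK; D \<in> Th KK; t2 KK (s3 KK C) = s2 KK (s3 KK D)\<rbrakk> \<Longrightarrow> fTh K (c13 KK D C) = c13 (path G) (fTh K D) (fTh K C)"
  and K_wl2: "\<lbrakk>g \<in> Ar KK; a \<in> Tw KK; t1 KK (s2 KK a) = s1 KK g\<rbrakk> \<Longrightarrow> fTw K (wl2 KK g a) = pwl2 G (fAr K g) (fTw K a)"
  and K_wr2: "\<lbrakk>f \<in> Ar KK; a \<in> Tw KK; s1 KK (s2 KK a) = t1 KK f\<rbrakk> \<Longrightarrow> fTw K (wr2 KK a f) = pwr2 G (fTw K a) (fAr K f)"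
  and K_wl3: "\<lbrakk>g \<in> Ar KK; C \<in> Th KK; t1 KK (s2 KK (s3 KK C)) = s1 KK g\<rbrakk> \<Longrightarrow> fTh K (wl3 KK g C) = wl3 (path G) (fAr K g) (fTh K C)"
  and K_wr3: "\<lbrakk>f \<in> Ar KK; C \<in> Th KK; s1 KK (s2 KK (s3 KK C)) = t1 KK f\<rbrakk> \<Longrightarrow> fTh K (wr3 KK C f) = wr3 (path G) (fTh K C) (fAr K f)"
  and K_ic: "\<lbrakk>a \<in> Tw KK; b \<in> Tw KK; s1 KK (s2 KK b) = t1 KK (s2 KK a)\<rbrakk> \<Longrightarrow> fTh K (ic KK b a) = ic (path G) (fTw K b) (fTw K a)"
  using Ks unfolding strict_gray_functor_def by simp_all

lemma u_Ar: "f \<in> Ar KK \<Longrightarrow> snd u f \<in> Ar (path (Q1 G))"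
  and u_Ob: "x \<in> Ob KK \<Longrightarrow> fst u x \<in> Ar (Q1 G)"
  and u_s1: "f \<in> Ar KK \<Longrightarrow> fst (snd u f) = fst u (s1 KK f)"
  and u_t1: "f \<in> Ar KK \<Longrightarrow> fst (snd (snd u f)) = fst u (t1 KK f)"
  and u_i1: "x \<in> Ob KK \<Longrightarrow> snd u (i1 KK x) = i1 (path (Q1 G)) (fst u x)"
  and u_c0: "\<lbrakk>f \<in> Ar KK; g \<in> Ar KK; t1 KK f = s1 KK g\<rbrakk> \<Longrightarrow> snd u (c0 KK g f) = pc0 (Q1 G) (snd u g) (snd u f)"
  using uf unfolding functor1_def by simp_all

lemma eAr': "f \<in> Ar KK \<Longrightarrow> fAr K f = pfun_ar (eQ G) (snd u f)"
  using eAr by simp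

definition arok where "arok l l' m0 m1 \<gamma> \<longleftrightarrow>
  l \<in> Ar (Q1 G) \<and> l' \<in> Ar (Q1 G) \<and> m0 \<in> Ar (Q1 G) \<and> m1 \<in> Ar (Q1 G) \<and>
  fst m0 = fst l \<and> fst (snd m0) = fst l' \<and> fst m1 = fst (snd l) \<and> fst (snd m1) = fst (snd l') \<and>
  qc0 m1 l \<in> Ar (Q1 G) \<and> qc0 l' m0 \<in> Ar (Q1 G) \<and>
  \<gamma> \<in> Tw G \<and> qeps G (qc0 m1 l) = c0 G (qeps G m1) (qeps G l) \<and>
  qeps G (qc0 l' m0) = c0 G (qeps G l') (qeps G m0) \<and>
  s2 G \<gamma> = c0 G (qeps G m1) (qeps G l) \<and> t2 G \<gamma> = c0 G (qeps G l') (qeps G m0) \<and>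
  qeps G l \<in> Ar G \<and> qeps G l' \<in> Ar G \<and> qeps G m0 \<in> Ar G \<and> qeps G m1 \<in> Ar G \<and>
  s1 G (qeps G m0) = s1 G (qeps G l) \<and> t1 G (qeps G m0) = s1 G (qeps G l') \<and>
  s1 G (qeps G m1) = t1 G (qeps G l) \<and> t1 G (qeps G m1) = t1 G (qeps G l')"

lemma ar_data:
  assumes f: "f \<in> Ar KK"
  obtains l l' m0 m1 \<gamma> where
  "snd u f = (l, l', m0, m1, (\<gamma>, qc0 m1 l, qc0 l' m0))"
  "fAr K f = (qeps G l, qeps G l', qeps G m0, qeps G m1, \<gamma>)"
  "arok l l' m0 m1 \<gamma>"
proof -
  obtain l l' m0 m1 g2 where su: "snd u f = (l, l', m0, m1, g2)" by (cases "snd u f") auto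
  obtain \<gamma> U V where g2: "g2 = (\<gamma>, U, V)" by (cases g2) auto
  have A: "(l, l', m0, m1, (\<gamma>, U, V)) \<in> Ar (path (Q1 G))" using u_Ar[OF f] su g2 by simp
  note A1 = A[unfolded path_Ar]
  have U: "U = qc0 m1 l" and V: "V = qc0 l' m0" using A1 by simp_all
  have KA: "fAr K f = (qeps G l, qeps G l', qeps G m0, qeps G m1, \<gamma>)" using eAr'[OF f] su g2 by simp
  have B: "(qeps G l, qeps G l', qeps G m0, qeps G m1, \<gamma>) \<in> Ar (path G)" using K_Ar[OF f] KA by simp
  note B1 = B[unfolded path_Ar]
  have T: "(\<gamma>, U, V) \<in> Tw (Q1 G)" using A1 by blast
  note T1 = T[unfolded Q1_Tw]
  show thesis
    apply (rule that[of l l' m0 m1 \<gamma>])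
    using su g2 U V KA A1 B1 T1 unfolding arok_def by simp_all
qed

definition uTw where "uTw a = (case snd u (s2 KK a) of (l, l', m0, m1, g2) \<Rightarrow>
   case snd u (t2 KK a) of (e, e', n0, n1, h2) \<Rightarrow> case fTw K a of (_, _, \<alpha>1, \<alpha>2, \<Gamma>) \<Rightarrow>
   ((l, l', m0, m1, g2), (e, e', n0, n1, h2), (\<alpha>1, m0, n0), (\<alpha>2, m1, n1),
    (\<Gamma>, s3 G \<Gamma>, t3 G \<Gamma>, qc0 m1 l, qc0 l' n0)))"

definition twok where "twok l l' m0 m1 \<gamma> n0 n1 \<eta> \<alpha>1 \<alpha>2 \<Gamma> \<longleftrightarrow>
  \<alpha>1 \<in> Tw G \<and> s2 G \<alpha>1 = qeps G m0 \<and> t2 G \<alpha>1 = qeps G n0 \<and>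
  \<alpha>2 \<in> Tw G \<and> s2 G \<alpha>2 = qeps G m1 \<and> t2 G \<alpha>2 = qeps G n1 \<and>
  \<Gamma> \<in> Th G \<and> s3 G \<Gamma> = c1 G (wl2 G (qeps G l') \<alpha>1) \<gamma> \<and> t3 G \<Gamma> = c1 G \<eta> (wr2 G \<alpha>2 (qeps G l))"

lemma tw_data:
  assumes a: "a \<in> Tw KK"
  obtains l l' m0 m1 \<gamma> n0 n1 \<eta> \<alpha>1 \<alpha>2 \<Gamma> where
  "snd u (s2 KK a) = (l, l', m0, m1, (\<gamma>, qc0 m1 l, qc0 l' m0))"
  "snd u (t2 KK a) = (l, l', n0, n1, (\<eta>, qc0 n1 l, qc0 l' n0))"
  "fAr K (s2 KK a) = (qeps G l, qeps G l', qeps G m0, qeps G m1, \<gamma>)"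
  "fAr K (t2 KK a) = (qeps G l, qeps G l', qeps G n0, qeps G n1, \<eta>)"
  "fTw K a = ((qeps G l, qeps G l', qeps G m0, qeps G m1, \<gamma>), (qeps G l, qeps G l', qeps G n0, qeps G n1, \<eta>), \<alpha>1, \<alpha>2, \<Gamma>)"
  "arok l l' m0 m1 \<gamma>" "arok l l' n0 n1 \<eta>" "twok l l' m0 m1 \<gamma> n0 n1 \<eta> \<alpha>1 \<alpha>2 \<Gamma>"
  "uTw a = ((l, l', m0, m1, (\<gamma>, qc0 m1 l, qc0 l' m0)), (l, l', n0, n1, (\<eta>, qc0 n1 l, qc0 l' n0)),
     (\<alpha>1, m0, n0), (\<alpha>2, m1, n1), (\<Gamma>, s3 G \<Gamma>, t3 G \<Gamma>, qc0 m1 l, qc0 l' n0))"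
proof -
  have sa: "s2 KK a \<in> Ar KK" and ta: "t2 KK a \<in> Ar KK"
    and st1: "s1 KK (s2 KK a) = s1 KK (t2 KK a)" and tt1: "t1 KK (s2 KK a) = t1 KK (t2 KK a)"
    using KG.tw_typ[OF a] by auto
  obtain l l' m0 m1 \<gamma> where S: "snd u (s2 KK a) = (l, l', m0, m1, (\<gamma>, qc0 m1 l, qc0 l' m0))"
    "fAr K (s2 KK a) = (qeps G l, qeps G l', qeps G m0, qeps G m1, \<gamma>)" "arok l l' m0 m1 \<gamma>"
    using ar_data[OF sa] by blast
  obtain e e' n0 n1 \<eta> where T: "snd u (t2 KK a) = (e, e', n0, n1, (\<eta>, qc0 n1 e, qc0 e' n0))"
    "fAr K (t2 KK a) = (qeps G e, qeps G e', qeps G n0, qeps G n1, \<eta>)" "arok e e' n0 n1 \<eta>"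
    using ar_data[OF ta] by blast
  have "fst (snd u (s2 KK a)) = fst (snd u (t2 KK a))" using u_s1[OF sa] u_s1[OF ta] st1 by simp
  then have e: "e = l" using S T by simp
  have "fst (snd (snd u (s2 KK a))) = fst (snd (snd u (t2 KK a)))" using u_t1[OF sa] u_t1[OF ta] tt1 by simp
  then have e': "e' = l'" using S T by simp
  obtain x y \<alpha>1 \<alpha>2 \<Gamma> where Ka: "fTw K a = (x, y, \<alpha>1, \<alpha>2, \<Gamma>)" by (cases "fTw K a") auto
  have x: "x = fAr K (s2 KK a)" using K_s2[OF a] Ka by simp
  have y: "y = fAr K (t2 KK a)" using K_t2[OF a] Ka by simp
  have M: "fTw K a \<in> Tw (path G)" using K_Tw[OF a] .
  have M1: "((qeps G l, qeps G l', qeps G m0, qeps G m1, \<gamma>), (qeps G l, qeps G l', qeps G n0, qeps G n1, \<eta>), \<alpha>1, \<alpha>2, \<Gamma>) \<in> Tw (path G)"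
    using M Ka x y S T e e' by simp
  note M2 = M1[unfolded path_Tw]
  have tw: "twok l l' m0 m1 \<gamma> n0 n1 \<eta> \<alpha>1 \<alpha>2 \<Gamma>" unfolding twok_def using M2 by blast
  have U: "uTw a = ((l, l', m0, m1, (\<gamma>, qc0 m1 l, qc0 l' m0)), (l, l', n0, n1, (\<eta>, qc0 n1 l, qc0 l' n0)),
     (\<alpha>1, m0, n0), (\<alpha>2, m1, n1), (\<Gamma>, s3 G \<Gamma>, t3 G \<Gamma>, qc0 m1 l, qc0 l' n0))"
    unfolding uTw_def using S T e e' Ka by simp
  show thesis
    apply (rule that[of l l' m0 m1 \<gamma> n0 n1 \<eta> \<alpha>1 \<alpha>2 \<Gamma>])
    using S T e e' Ka x y tw U by simp_all
qed


lemma uTw_mem: assumes a: "a \<in> Tw KK" shows "uTw a \<in> Tw (path (Q1 G))"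
proof -
  obtain l l' m0 m1 \<gamma> n0 n1 \<eta> \<alpha>1 \<alpha>2 \<Gamma> where D:
  "snd u (s2 KK a) = (l, l', m0, m1, (\<gamma>, qc0 m1 l, qc0 l' m0))"
  "snd u (t2 KK a) = (l, l', n0, n1, (\<eta>, qc0 n1 l, qc0 l' n0))"
  "fAr K (s2 KK a) = (qeps G l, qeps G l', qeps G m0, qeps G m1, \<gamma>)"
  "fAr K (t2 KK a) = (qeps G l, qeps G l', qeps G n0, qeps G n1, \<eta>)"
  "fTw K a = ((qeps G l, qeps G l', qeps G m0, qeps G m1, \<gamma>), (qeps G l, qeps G l', qeps G n0, qeps G n1, \<eta>), \<alpha>1, \<alpha>2, \<Gamma>)"
  "arok l l' m0 m1 \<gamma>" "arok l l' n0 n1 \<eta>" "twok l l' m0 m1 \<gamma> n0 n1 \<eta> \<alpha>1 \<alpha>2 \<Gamma>"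
  "uTw a = ((l, l', m0, m1, (\<gamma>, qc0 m1 l, qc0 l' m0)), (l, l', n0, n1, (\<eta>, qc0 n1 l, qc0 l' n0)),
     (\<alpha>1, m0, n0), (\<alpha>2, m1, n1), (\<Gamma>, s3 G \<Gamma>, t3 G \<Gamma>, qc0 m1 l, qc0 l' n0))"
    by (rule tw_data[OF a])
  have sa: "s2 KK a \<in> Ar KK" and ta: "t2 KK a \<in> Ar KK" using KG.tw_typ[OF a] by auto
  have A1: "(l, l', m0, m1, (\<gamma>, qc0 m1 l, qc0 l' m0)) \<in> Ar (path (Q1 G))" using u_Ar[OF sa] D by simp
  have A2: "(l, l', n0, n1, (\<eta>, qc0 n1 l, qc0 l' n0)) \<in> Ar (path (Q1 G))" using u_Ar[OF ta] D by simp
  show ?thesis unfolding D(9) path_Tw Q1_Tw Q1_Th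
    using A1 A2 D(6-8) unfolding arok_def twok_def
    by (simp add: G.typ_simps)
qed

definition uTh where "uTh C = (case fTh K C of (_, _, C1, C2) \<Rightarrow>
   case uTw (s3 KK C) of (_, _, (_, m0, n0), (_, m1, n1), _) \<Rightarrow>
   (uTw (s3 KK C), uTw (t3 KK C), (C1, s3 G C1, t3 G C1, m0, n0), (C2, s3 G C2, t3 G C2, m1, n1)))"

definition thok where "thok l l' \<gamma> \<eta> \<alpha>1 \<alpha>2 \<Gamma> \<beta>1 \<beta>2 \<Delta> C1 C2 \<longleftrightarrow>
  C1 \<in> Th G \<and> s3 G C1 = \<alpha>1 \<and> t3 G C1 = \<beta>1 \<and> C2 \<in> Th G \<and> s3 G C2 = \<alpha>2 \<and> t3 G C2 = \<beta>2 \<and>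
  c2 G \<Delta> (c13 G (wl3 G (qeps G l') C1) (i3 G \<gamma>)) = c2 G (c13 G (i3 G \<eta>) (wr3 G C2 (qeps G l))) \<Gamma>"

lemma th_data:
  assumes C: "C \<in> Th KK"
  obtains l l' m0 m1 \<gamma> n0 n1 \<eta> \<alpha>1 \<alpha>2 \<Gamma> \<beta>1 \<beta>2 \<Delta> C1 C2 where
  "snd u (s2 KK (s3 KK C)) = (l, l', m0, m1, (\<gamma>, qc0 m1 l, qc0 l' m0))"
  "snd u (t2 KK (s3 KK C)) = (l, l', n0, n1, (\<eta>, qc0 n1 l, qc0 l' n0))"
  "fTw K (s3 KK C) = ((qeps G l, qeps G l', qeps G m0, qeps G m1, \<gamma>), (qeps G l, qeps G l', qeps G n0, qeps G n1, \<eta>), \<alpha>1, \<alpha>2, \<Gamma>)"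
  "fTw K (t3 KK C) = ((qeps G l, qeps G l', qeps G m0, qeps G m1, \<gamma>), (qeps G l, qeps G l', qeps G n0, qeps G n1, \<eta>), \<beta>1, \<beta>2, \<Delta>)"
  "arok l l' m0 m1 \<gamma>" "arok l l' n0 n1 \<eta>" "twok l l' m0 m1 \<gamma> n0 n1 \<eta> \<alpha>1 \<alpha>2 \<Gamma>"
  "twok l l' m0 m1 \<gamma> n0 n1 \<eta> \<beta>1 \<beta>2 \<Delta>"
  "uTw (s3 KK C) = ((l, l', m0, m1, (\<gamma>, qc0 m1 l, qc0 l' m0)), (l, l', n0, n1, (\<eta>, qc0 n1 l, qc0 l' n0)),
     (\<alpha>1, m0, n0), (\<alpha>2, m1, n1), (\<Gamma>, s3 G \<Gamma>, t3 G \<Gamma>, qc0 m1 l, qc0 l' n0))"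
  "uTw (t3 KK C) = ((l, l', m0, m1, (\<gamma>, qc0 m1 l, qc0 l' m0)), (l, l', n0, n1, (\<eta>, qc0 n1 l, qc0 l' n0)),
     (\<beta>1, m0, n0), (\<beta>2, m1, n1), (\<Delta>, s3 G \<Delta>, t3 G \<Delta>, qc0 m1 l, qc0 l' n0))"
  "fTh K C = (fTw K (s3 KK C), fTw K (t3 KK C), C1, C2)"
  "thok l l' \<gamma> \<eta> \<alpha>1 \<alpha>2 \<Gamma> \<beta>1 \<beta>2 \<Delta> C1 C2"
  "uTh C = (uTw (s3 KK C), uTw (t3 KK C), (C1, \<alpha>1, \<beta>1, m0, n0), (C2, \<alpha>2, \<beta>2, m1, n1))"
proof -
  have sC: "s3 KK C \<in> Tw KK" and tC: "t3 KK C \<in> Tw KK"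
    and e2: "s2 KK (t3 KK C) = s2 KK (s3 KK C)" and e3: "t2 KK (t3 KK C) = t2 KK (s3 KK C)"
    using KG.th_typ[OF C] by auto
  obtain l l' m0 m1 \<gamma> n0 n1 \<eta> \<alpha>1 \<alpha>2 \<Gamma> where D:
  "snd u (s2 KK (s3 KK C)) = (l, l', m0, m1, (\<gamma>, qc0 m1 l, qc0 l' m0))"
  "snd u (t2 KK (s3 KK C)) = (l, l', n0, n1, (\<eta>, qc0 n1 l, qc0 l' n0))"
  "fAr K (s2 KK (s3 KK C)) = (qeps G l, qeps G l', qeps G m0, qeps G m1, \<gamma>)"
  "fAr K (t2 KK (s3 KK C)) = (qeps G l, qeps G l', qeps G n0, qeps G n1, \<eta>)"
  "fTw K (s3 KK C) = ((qeps G l, qeps G l', qeps G m0, qeps G m1, \<gamma>), (qeps G l, qeps G l', qeps G n0, qeps G n1, \<eta>), \<alpha>1, \<alpha>2, \<Gamma>)"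
  "arok l l' m0 m1 \<gamma>" "arok l l' n0 n1 \<eta>" "twok l l' m0 m1 \<gamma> n0 n1 \<eta> \<alpha>1 \<alpha>2 \<Gamma>"
  "uTw (s3 KK C) = ((l, l', m0, m1, (\<gamma>, qc0 m1 l, qc0 l' m0)), (l, l', n0, n1, (\<eta>, qc0 n1 l, qc0 l' n0)),
     (\<alpha>1, m0, n0), (\<alpha>2, m1, n1), (\<Gamma>, s3 G \<Gamma>, t3 G \<Gamma>, qc0 m1 l, qc0 l' n0))"
    by (rule tw_data[OF sC])
  obtain k k' p0 p1 \<pi> q0 q1 \<rho> \<beta>1 \<beta>2 \<Delta> where E:
  "snd u (s2 KK (t3 KK C)) = (k, k', p0, p1, (\<pi>, qc0 p1 k, qc0 k' p0))"
  "snd u (t2 KK (t3 KK C)) = (k, k', q0, q1, (\<rho>, qc0 q1 k, qc0 k' q0))"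
  "fAr K (s2 KK (t3 KK C)) = (qeps G k, qeps G k', qeps G p0, qeps G p1, \<pi>)"
  "fAr K (t2 KK (t3 KK C)) = (qeps G k, qeps G k', qeps G q0, qeps G q1, \<rho>)"
  "fTw K (t3 KK C) = ((qeps G k, qeps G k', qeps G p0, qeps G p1, \<pi>), (qeps G k, qeps G k', qeps G q0, qeps G q1, \<rho>), \<beta>1, \<beta>2, \<Delta>)"
  "arok k k' p0 p1 \<pi>" "arok k k' q0 q1 \<rho>" "twok k k' p0 p1 \<pi> q0 q1 \<rho> \<beta>1 \<beta>2 \<Delta>"
  "uTw (t3 KK C) = ((k, k', p0, p1, (\<pi>, qc0 p1 k, qc0 k' p0)), (k, k', q0, q1, (\<rho>, qc0 q1 k, qc0 k' q0)),
     (\<beta>1, p0, q0), (\<beta>2, p1, q1), (\<Delta>, s3 G \<Delta>, t3 G \<Delta>, qc0 p1 k, qc0 k' q0))"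
    by (rule tw_data[OF tC])
  have eq1: "k = l \<and> k' = l' \<and> p0 = m0 \<and> p1 = m1 \<and> \<pi> = \<gamma>" using E(1) D(1) e2 by simp
  have eq2: "q0 = n0 \<and> q1 = n1 \<and> \<rho> = \<eta>" using E(2) D(2) e3 by simp
  obtain x y C1 C2 where KC: "fTh K C = (x, y, C1, C2)" by (cases "fTh K C") auto
  have x: "x = fTw K (s3 KK C)" using K_s3[OF C] KC by simp
  have y: "y = fTw K (t3 KK C)" using K_t3[OF C] KC by simp
  have M: "fTh K C \<in> Th (path G)" by (rule K_Th[OF C])
  have M1: "(((qeps G l, qeps G l', qeps G m0, qeps G m1, \<gamma>), (qeps G l, qeps G l', qeps G n0, qeps G n1, \<eta>), \<alpha>1, \<alpha>2, \<Gamma>),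
     ((qeps G l, qeps G l', qeps G m0, qeps G m1, \<gamma>), (qeps G l, qeps G l', qeps G n0, qeps G n1, \<eta>), \<beta>1, \<beta>2, \<Delta>), C1, C2)
     \<in> Th (path G)" using M KC x y D(5) E(5) eq1 eq2 by simp
  note M2 = M1[unfolded path_Th]
  have th: "thok l l' \<gamma> \<eta> \<alpha>1 \<alpha>2 \<Gamma> \<beta>1 \<beta>2 \<Delta> C1 C2" unfolding thok_def using M2 by blast
  have U: "uTh C = (uTw (s3 KK C), uTw (t3 KK C), (C1, \<alpha>1, \<beta>1, m0, n0), (C2, \<alpha>2, \<beta>2, m1, n1))"
    unfolding uTh_def using KC D(9) th unfolding thok_def by simp
  show thesis
    apply (rule that[of l l' m0 m1 \<gamma> n0 n1 \<eta> \<alpha>1 \<alpha>2 \<Gamma> \<beta>1 \<beta>2 \<Delta> C1 C2])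
    using D E eq1 eq2 KC x y th U by simp_all
qed

lemma uTh_mem: assumes C: "C \<in> Th KK" shows "uTh C \<in> Th (path (Q1 G))"
proof -
  obtain l l' m0 m1 \<gamma> n0 n1 \<eta> \<alpha>1 \<alpha>2 \<Gamma> \<beta>1 \<beta>2 \<Delta> C1 C2 where D:
  "snd u (s2 KK (s3 KK C)) = (l, l', m0, m1, (\<gamma>, qc0 m1 l, qc0 l' m0))"
  "snd u (t2 KK (s3 KK C)) = (l, l', n0, n1, (\<eta>, qc0 n1 l, qc0 l' n0))"
  "fTw K (s3 KK C) = ((qeps G l, qeps G l', qeps G m0, qeps G m1, \<gamma>), (qeps G l, qeps G l', qeps G n0, qeps G n1, \<eta>), \<alpha>1, \<alpha>2, \<Gamma>)"
  "fTw K (t3 KK C) = ((qeps G l, qeps G l', qeps G m0, qeps G m1, \<gamma>), (qeps G l, qeps G l', qeps G n0, qeps G n1, \<eta>), \<beta>1, \<beta>2, \<Delta>)"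
  "arok l l' m0 m1 \<gamma>" "arok l l' n0 n1 \<eta>" "twok l l' m0 m1 \<gamma> n0 n1 \<eta> \<alpha>1 \<alpha>2 \<Gamma>"
  "twok l l' m0 m1 \<gamma> n0 n1 \<eta> \<beta>1 \<beta>2 \<Delta>"
  "uTw (s3 KK C) = ((l, l', m0, m1, (\<gamma>, qc0 m1 l, qc0 l' m0)), (l, l', n0, n1, (\<eta>, qc0 n1 l, qc0 l' n0)),
     (\<alpha>1, m0, n0), (\<alpha>2, m1, n1), (\<Gamma>, s3 G \<Gamma>, t3 G \<Gamma>, qc0 m1 l, qc0 l' n0))"
  "uTw (t3 KK C) = ((l, l', m0, m1, (\<gamma>, qc0 m1 l, qc0 l' m0)), (l, l', n0, n1, (\<eta>, qc0 n1 l, qc0 l' n0)),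
     (\<beta>1, m0, n0), (\<beta>2, m1, n1), (\<Delta>, s3 G \<Delta>, t3 G \<Delta>, qc0 m1 l, qc0 l' n0))"
  "fTh K C = (fTw K (s3 KK C), fTw K (t3 KK C), C1, C2)"
  "thok l l' \<gamma> \<eta> \<alpha>1 \<alpha>2 \<Gamma> \<beta>1 \<beta>2 \<Delta> C1 C2"
  "uTh C = (uTw (s3 KK C), uTw (t3 KK C), (C1, \<alpha>1, \<beta>1, m0, n0), (C2, \<alpha>2, \<beta>2, m1, n1))"
    by (rule th_data[OF C])
  have sC: "s3 KK C \<in> Tw KK" and tC: "t3 KK C \<in> Tw KK" using KG.th_typ[OF C] by auto
  have M1: "uTw (s3 KK C) \<in> Tw (path (Q1 G))" by (rule uTw_mem[OF sC])
  have M2: "uTw (t3 KK C) \<in> Tw (path (Q1 G))" by (rule uTw_mem[OF tC])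
  show ?thesis unfolding D(13) D(9) D(10) path_Th
    using M1[unfolded D(9)] M2[unfolded D(10)] D(5-8) D(12)
    unfolding arok_def twok_def thok_def path_Tw Q1_Th Q1_Tw
    by (simp add: G.typ_simps)
qed

end

context cs begin
lemmas xs = G.typ_simps G.c0_assoc G.c1_assoc G.wl2_c1 G.wl2_c0 G.qeps_Ar G.qeps_s1 G.qeps_t1 G.qeps_qc0 qc0_Ar
  G.wr2_c1 G.wr2_c0 G.wlr2 G.ic_inv_Th G.ic_inv_s3 G.ic_inv_t3 G.ic_inv_Q Q1_Tw


lemma uTw_i2: assumes f: "f \<in> Ar KK" shows "uTw (i2 KK f) = i2 (path (Q1 G)) (snd u f)"
proof -
  have a: "i2 KK f \<in> Tw KK" and s: "s2 KK (i2 KK f) = f" and t: "t2 KK (i2 KK f) = f"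
    using KG.i2_typ[OF f] by auto
  obtain l l' m0 m1 \<gamma> n0 n1 \<eta> \<alpha>1 \<alpha>2 \<Gamma> where A:
  "snd u (s2 KK (i2 KK f)) = (l, l', m0, m1, (\<gamma>, qc0 m1 l, qc0 l' m0))"
  "snd u (t2 KK (i2 KK f)) = (l, l', n0, n1, (\<eta>, qc0 n1 l, qc0 l' n0))"
  "fAr K (s2 KK (i2 KK f)) = (qeps G l, qeps G l', qeps G m0, qeps G m1, \<gamma>)"
  "fAr K (t2 KK (i2 KK f)) = (qeps G l, qeps G l', qeps G n0, qeps G n1, \<eta>)"
  "fTw K (i2 KK f) = ((qeps G l, qeps G l', qeps G m0, qeps G m1, \<gamma>), (qeps G l, qeps G l', qeps G n0, qeps G n1, \<eta>), \<alpha>1, \<alpha>2, \<Gamma>)"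
  "arok l l' m0 m1 \<gamma>" "arok l l' n0 n1 \<eta>" "twok l l' m0 m1 \<gamma> n0 n1 \<eta> \<alpha>1 \<alpha>2 \<Gamma>"
  "uTw (i2 KK f) = ((l, l', m0, m1, (\<gamma>, qc0 m1 l, qc0 l' m0)), (l, l', n0, n1, (\<eta>, qc0 n1 l, qc0 l' n0)),
     (\<alpha>1, m0, n0), (\<alpha>2, m1, n1), (\<Gamma>, s3 G \<Gamma>, t3 G \<Gamma>, qc0 m1 l, qc0 l' n0))"
    by (rule tw_data[OF a])

  have e: "n0 = m0 \<and> n1 = m1 \<and> \<eta> = \<gamma>" using A(1) A(2) s t by simp
  have k: "\<alpha>1 = i2 G (qeps G m0) \<and> \<alpha>2 = i2 G (qeps G m1) \<and> \<Gamma> = i3 G \<gamma>"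
    using K_i2[OF f] A(5) A(3) s by simp
  show ?thesis unfolding A(9) using A(1) s e k A(6) unfolding arok_def
    by (simp add: G.typ_simps)
qed

lemma uTh_i3: assumes a: "a \<in> Tw KK" shows "uTh (i3 KK a) = i3 (path (Q1 G)) (uTw a)"
proof -
  have C: "i3 KK a \<in> Th KK" and s: "s3 KK (i3 KK a) = a" and t: "t3 KK (i3 KK a) = a"
    using KG.i3_typ[OF a] by auto
  obtain l l' m0 m1 \<gamma> n0 n1 \<eta> \<alpha>1 \<alpha>2 \<Gamma> \<beta>1 \<beta>2 \<Delta> C1 C2 where A:
  "snd u (s2 KK (s3 KK (i3 KK a))) = (l, l', m0, m1, (\<gamma>, qc0 m1 l, qc0 l' m0))"
  "snd u (t2 KK (s3 KK (i3 KK a))) = (l, l', n0, n1, (\<eta>, qc0 n1 l, qc0 l' n0))"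
  "fTw K (s3 KK (i3 KK a)) = ((qeps G l, qeps G l', qeps G m0, qeps G m1, \<gamma>), (qeps G l, qeps G l', qeps G n0, qeps G n1, \<eta>), \<alpha>1, \<alpha>2, \<Gamma>)"
  "fTw K (t3 KK (i3 KK a)) = ((qeps G l, qeps G l', qeps G m0, qeps G m1, \<gamma>), (qeps G l, qeps G l', qeps G n0, qeps G n1, \<eta>), \<beta>1, \<beta>2, \<Delta>)"
  "arok l l' m0 m1 \<gamma>" "arok l l' n0 n1 \<eta>" "twok l l' m0 m1 \<gamma> n0 n1 \<eta> \<alpha>1 \<alpha>2 \<Gamma>"
  "twok l l' m0 m1 \<gamma> n0 n1 \<eta> \<beta>1 \<beta>2 \<Delta>"
  "uTw (s3 KK (i3 KK a)) = ((l, l', m0, m1, (\<gamma>, qc0 m1 l, qc0 l' m0)), (l, l', n0, n1, (\<eta>, qc0 n1 l, qc0 l' n0)),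
     (\<alpha>1, m0, n0), (\<alpha>2, m1, n1), (\<Gamma>, s3 G \<Gamma>, t3 G \<Gamma>, qc0 m1 l, qc0 l' n0))"
  "uTw (t3 KK (i3 KK a)) = ((l, l', m0, m1, (\<gamma>, qc0 m1 l, qc0 l' m0)), (l, l', n0, n1, (\<eta>, qc0 n1 l, qc0 l' n0)),
     (\<beta>1, m0, n0), (\<beta>2, m1, n1), (\<Delta>, s3 G \<Delta>, t3 G \<Delta>, qc0 m1 l, qc0 l' n0))"
  "fTh K (i3 KK a) = (fTw K (s3 KK (i3 KK a)), fTw K (t3 KK (i3 KK a)), C1, C2)"
  "thok l l' \<gamma> \<eta> \<alpha>1 \<alpha>2 \<Gamma> \<beta>1 \<beta>2 \<Delta> C1 C2"
  "uTh (i3 KK a) = (uTw (s3 KK (i3 KK a)), uTw (t3 KK (i3 KK a)), (C1, \<alpha>1, \<beta>1, m0, n0), (C2, \<alpha>2, \<beta>2, m1, n1))"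
    by (rule th_data[OF C])

  have k: "C1 = i3 G \<alpha>1 \<and> C2 = i3 G \<alpha>2"
    using K_i3[OF a] A(3) A(11) s t by simp
  have e: "\<beta>1 = \<alpha>1 \<and> \<beta>2 = \<alpha>2 \<and> \<Delta> = \<Gamma>" using A(3) A(4) s t by simp
  show ?thesis unfolding A(13) using A(9) s t e k A(7) unfolding twok_def
    by (simp add: G.typ_simps)
qed

lemma uTw_c1: assumes a: "a \<in> Tw KK" and b: "b \<in> Tw KK" and ab: "t2 KK a = s2 KK b"
  shows "uTw (c1 KK b a) = pc1 (Q1 G) (uTw b) (uTw a)"
proof -
  have c: "c1 KK b a \<in> Tw KK" and s: "s2 KK (c1 KK b a) = s2 KK a" and t: "t2 KK (c1 KK b a) = t2 KK b"
    using KG.c1_typ[OF a b ab] by auto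
  obtain l l' m0 m1 \<gamma> n0 n1 \<eta> \<alpha>1 \<alpha>2 \<Gamma> where A:
  "snd u (s2 KK (a)) = (l, l', m0, m1, (\<gamma>, qc0 m1 l, qc0 l' m0))"
  "snd u (t2 KK (a)) = (l, l', n0, n1, (\<eta>, qc0 n1 l, qc0 l' n0))"
  "fAr K (s2 KK (a)) = (qeps G l, qeps G l', qeps G m0, qeps G m1, \<gamma>)"
  "fAr K (t2 KK (a)) = (qeps G l, qeps G l', qeps G n0, qeps G n1, \<eta>)"
  "fTw K (a) = ((qeps G l, qeps G l', qeps G m0, qeps G m1, \<gamma>), (qeps G l, qeps G l', qeps G n0, qeps G n1, \<eta>), \<alpha>1, \<alpha>2, \<Gamma>)"
  "arok l l' m0 m1 \<gamma>" "arok l l' n0 n1 \<eta>" "twok l l' m0 m1 \<gamma> n0 n1 \<eta> \<alpha>1 \<alpha>2 \<Gamma>"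
  "uTw (a) = ((l, l', m0, m1, (\<gamma>, qc0 m1 l, qc0 l' m0)), (l, l', n0, n1, (\<eta>, qc0 n1 l, qc0 l' n0)),
     (\<alpha>1, m0, n0), (\<alpha>2, m1, n1), (\<Gamma>, s3 G \<Gamma>, t3 G \<Gamma>, qc0 m1 l, qc0 l' n0))"
    by (rule tw_data[OF a])
  obtain lb l'b m0b m1b \<gamma>b n0b n1b \<eta>b \<alpha>1b \<alpha>2b \<Gamma>b where B:
  "snd u (s2 KK (b)) = (lb, l'b, m0b, m1b, (\<gamma>b, qc0 m1b lb, qc0 l'b m0b))"
  "snd u (t2 KK (b)) = (lb, l'b, n0b, n1b, (\<eta>b, qc0 n1b lb, qc0 l'b n0b))"
  "fAr K (s2 KK (b)) = (qeps G lb, qeps G l'b, qeps G m0b, qeps G m1b, \<gamma>b)"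
  "fAr K (t2 KK (b)) = (qeps G lb, qeps G l'b, qeps G n0b, qeps G n1b, \<eta>b)"
  "fTw K (b) = ((qeps G lb, qeps G l'b, qeps G m0b, qeps G m1b, \<gamma>b), (qeps G lb, qeps G l'b, qeps G n0b, qeps G n1b, \<eta>b), \<alpha>1b, \<alpha>2b, \<Gamma>b)"
  "arok lb l'b m0b m1b \<gamma>b" "arok lb l'b n0b n1b \<eta>b" "twok lb l'b m0b m1b \<gamma>b n0b n1b \<eta>b \<alpha>1b \<alpha>2b \<Gamma>b"
  "uTw (b) = ((lb, l'b, m0b, m1b, (\<gamma>b, qc0 m1b lb, qc0 l'b m0b)), (lb, l'b, n0b, n1b, (\<eta>b, qc0 n1b lb, qc0 l'b n0b)),
     (\<alpha>1b, m0b, n0b), (\<alpha>2b, m1b, n1b), (\<Gamma>b, s3 G \<Gamma>b, t3 G \<Gamma>b, qc0 m1b lb, qc0 l'b n0b))"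
    by (rule tw_data[OF b])
  obtain lc l'c m0c m1c \<gamma>c n0c n1c \<eta>c \<alpha>1c \<alpha>2c \<Gamma>c where Cc:
  "snd u (s2 KK (c1 KK b a)) = (lc, l'c, m0c, m1c, (\<gamma>c, qc0 m1c lc, qc0 l'c m0c))"
  "snd u (t2 KK (c1 KK b a)) = (lc, l'c, n0c, n1c, (\<eta>c, qc0 n1c lc, qc0 l'c n0c))"
  "fAr K (s2 KK (c1 KK b a)) = (qeps G lc, qeps G l'c, qeps G m0c, qeps G m1c, \<gamma>c)"
  "fAr K (t2 KK (c1 KK b a)) = (qeps G lc, qeps G l'c, qeps G n0c, qeps G n1c, \<eta>c)"
  "fTw K (c1 KK b a) = ((qeps G lc, qeps G l'c, qeps G m0c, qeps G m1c, \<gamma>c), (qeps G lc, qeps G l'c, qeps G n0c, qeps G n1c, \<eta>c), \<alpha>1c, \<alpha>2c, \<Gamma>c)"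
  "arok lc l'c m0c m1c \<gamma>c" "arok lc l'c n0c n1c \<eta>c" "twok lc l'c m0c m1c \<gamma>c n0c n1c \<eta>c \<alpha>1c \<alpha>2c \<Gamma>c"
  "uTw (c1 KK b a) = ((lc, l'c, m0c, m1c, (\<gamma>c, qc0 m1c lc, qc0 l'c m0c)), (lc, l'c, n0c, n1c, (\<eta>c, qc0 n1c lc, qc0 l'c n0c)),
     (\<alpha>1c, m0c, n0c), (\<alpha>2c, m1c, n1c), (\<Gamma>c, s3 G \<Gamma>c, t3 G \<Gamma>c, qc0 m1c lc, qc0 l'c n0c))"
    by (rule tw_data[OF c])

  have eb: "lb = l \<and> l'b = l' \<and> m0b = n0 \<and> m1b = n1 \<and> \<gamma>b = \<eta>" using A(2) B(1) ab by simp
  have ec: "lc = l \<and> l'c = l' \<and> m0c = m0 \<and> m1c = m1 \<and> \<gamma>c = \<gamma> \<and> n0c = n0b \<and> n1c = n1b \<and> \<eta>c = \<eta>b"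
    using Cc(1) Cc(2) A(1) B(2) s t by simp
  have k: "fTw K (c1 KK b a) = pc1 G (fTw K b) (fTw K a)" by (rule K_c1[OF a b ab])
  have k2: "\<alpha>1c = c1 G \<alpha>1b \<alpha>1 \<and> \<alpha>2c = c1 G \<alpha>2b \<alpha>2 \<and>
     \<Gamma>c = c2 G (c13 G \<Gamma>b (i3 G (wr2 G \<alpha>2 (qeps G l)))) (c13 G (i3 G (wl2 G (qeps G l') \<alpha>1b)) \<Gamma>)"
    using k Cc(5) B(5) A(5) eb ec by (simp add: pc1_def)
  show ?thesis unfolding Cc(9) B(9) A(9) using eb ec k2 A(6-8) B(6-8)
    unfolding arok_def twok_def
    by (simp add: pc1_def G.typ_simps G.c1_assoc)
qed




lemma uTw_wl2: assumes g: "g \<in> Ar KK" and a: "a \<in> Tw KK" and ag: "t1 KK (s2 KK a) = s1 KK g"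
  shows "uTw (wl2 KK g a) = pwl2 (Q1 G) (snd u g) (uTw a)"
proof -
  have c: "wl2 KK g a \<in> Tw KK" and s: "s2 KK (wl2 KK g a) = c0 KK g (s2 KK a)"
    and t: "t2 KK (wl2 KK g a) = c0 KK g (t2 KK a)"
    using KG.wl2_typ[OF g a ag] by auto
  have sa: "s2 KK a \<in> Ar KK" and ta: "t2 KK a \<in> Ar KK" and tt: "t1 KK (t2 KK a) = s1 KK g"
    using KG.tw_typ[OF a] ag by auto
  obtain k k' r0 r1 \<kappa> where R:
  "snd u (g) = (k, k', r0, r1, (\<kappa>, qc0 r1 k, qc0 k' r0))"
  "fAr K (g) = (qeps G k, qeps G k', qeps G r0, qeps G r1, \<kappa>)"
  "arok k k' r0 r1 \<kappa>"
    by (rule ar_data[OF g])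
  obtain l l' m0 m1 \<gamma> n0 n1 \<eta> \<alpha>1 \<alpha>2 \<Gamma> where A:
  "snd u (s2 KK (a)) = (l, l', m0, m1, (\<gamma>, qc0 m1 l, qc0 l' m0))"
  "snd u (t2 KK (a)) = (l, l', n0, n1, (\<eta>, qc0 n1 l, qc0 l' n0))"
  "fAr K (s2 KK (a)) = (qeps G l, qeps G l', qeps G m0, qeps G m1, \<gamma>)"
  "fAr K (t2 KK (a)) = (qeps G l, qeps G l', qeps G n0, qeps G n1, \<eta>)"
  "fTw K (a) = ((qeps G l, qeps G l', qeps G m0, qeps G m1, \<gamma>), (qeps G l, qeps G l', qeps G n0, qeps G n1, \<eta>), \<alpha>1, \<alpha>2, \<Gamma>)"
  "arok l l' m0 m1 \<gamma>" "arok l l' n0 n1 \<eta>" "twok l l' m0 m1 \<gamma> n0 n1 \<eta> \<alpha>1 \<alpha>2 \<Gamma>"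
  "uTw (a) = ((l, l', m0, m1, (\<gamma>, qc0 m1 l, qc0 l' m0)), (l, l', n0, n1, (\<eta>, qc0 n1 l, qc0 l' n0)),
     (\<alpha>1, m0, n0), (\<alpha>2, m1, n1), (\<Gamma>, s3 G \<Gamma>, t3 G \<Gamma>, qc0 m1 l, qc0 l' n0))"
    by (rule tw_data[OF a])
  obtain lc l'c m0c m1c \<gamma>c n0c n1c \<eta>c \<alpha>1c \<alpha>2c \<Gamma>c where Cc:
  "snd u (s2 KK (wl2 KK g a)) = (lc, l'c, m0c, m1c, (\<gamma>c, qc0 m1c lc, qc0 l'c m0c))"
  "snd u (t2 KK (wl2 KK g a)) = (lc, l'c, n0c, n1c, (\<eta>c, qc0 n1c lc, qc0 l'c n0c))"
  "fAr K (s2 KK (wl2 KK g a)) = (qeps G lc, qeps G l'c, qeps G m0c, qeps G m1c, \<gamma>c)"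
  "fAr K (t2 KK (wl2 KK g a)) = (qeps G lc, qeps G l'c, qeps G n0c, qeps G n1c, \<eta>c)"
  "fTw K (wl2 KK g a) = ((qeps G lc, qeps G l'c, qeps G m0c, qeps G m1c, \<gamma>c), (qeps G lc, qeps G l'c, qeps G n0c, qeps G n1c, \<eta>c), \<alpha>1c, \<alpha>2c, \<Gamma>c)"
  "arok lc l'c m0c m1c \<gamma>c" "arok lc l'c n0c n1c \<eta>c" "twok lc l'c m0c m1c \<gamma>c n0c n1c \<eta>c \<alpha>1c \<alpha>2c \<Gamma>c"
  "uTw (wl2 KK g a) = ((lc, l'c, m0c, m1c, (\<gamma>c, qc0 m1c lc, qc0 l'c m0c)), (lc, l'c, n0c, n1c, (\<eta>c, qc0 n1c lc, qc0 l'c n0c)),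
     (\<alpha>1c, m0c, n0c), (\<alpha>2c, m1c, n1c), (\<Gamma>c, s3 G \<Gamma>c, t3 G \<Gamma>c, qc0 m1c lc, qc0 l'c n0c))"
    by (rule tw_data[OF c])

  have kl: "k = l'" using u_s1[OF g] u_t1[OF sa] ag R(1) A(1) by simp
  have us: "snd u (s2 KK (wl2 KK g a)) = pc0 (Q1 G) (snd u g) (snd u (s2 KK a))"
    using u_c0[OF sa g ag] s by simp
  have ut: "snd u (t2 KK (wl2 KK g a)) = pc0 (Q1 G) (snd u g) (snd u (t2 KK a))"
    using u_c0[OF ta g tt] t by simp
  have ec: "lc = l \<and> l'c = k' \<and> m0c = qc0 r0 m0 \<and> m1c = qc0 r1 m1 \<and> \<gamma>c = c1 G (wr2 G \<kappa> (qeps G m0)) (wl2 G (qeps G r1) \<gamma>)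
     \<and> n0c = qc0 r0 n0 \<and> n1c = qc0 r1 n1 \<and> \<eta>c = c1 G (wr2 G \<kappa> (qeps G n0)) (wl2 G (qeps G r1) \<eta>)"
    using us ut Cc(1) Cc(2) R(1) A(1) A(2) by (simp add: pc0_def)
  have k: "fTw K (wl2 KK g a) = pwl2 G (fAr K g) (fTw K a)" by (rule K_wl2[OF g a ag])
  have k2: "\<alpha>1c = wl2 G (qeps G r0) \<alpha>1 \<and> \<alpha>2c = wl2 G (qeps G r1) \<alpha>2 \<and>
     \<Gamma>c = c2 G (c13 G (i3 G (wr2 G \<kappa> (qeps G n0))) (wl3 G (qeps G r1) \<Gamma>))
            (c13 G (ic G \<kappa> \<alpha>1) (i3 G (wl2 G (qeps G r1) \<gamma>)))"
    using k Cc(5) R(2) A(5) by (simp add: pwl2_def)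
  note F = A(6-8) R(3)[unfolded kl] 
  note FF = F[unfolded arok_def twok_def]
  have Y: "c13 G (ic G \<kappa> \<alpha>1) (i3 G (wl2 G (qeps G r1) \<gamma>)) \<in> Th G" using FF by (simp add: xs)
  have X: "c13 G (i3 G (wr2 G \<kappa> (qeps G n0))) (wl3 G (qeps G r1) \<Gamma>) \<in> Th G" using FF by (simp add: xs)
  have XY: "t3 G (c13 G (ic G \<kappa> \<alpha>1) (i3 G (wl2 G (qeps G r1) \<gamma>))) = s3 G (c13 G (i3 G (wr2 G \<kappa> (qeps G n0))) (wl3 G (qeps G r1) \<Gamma>))" using FF by (simp add: xs)
  show ?thesis unfolding Cc(9) R(1) A(9) using ec k2 kl A(6-8) R(3)
    unfolding arok_def twok_def
    by (simp add: pwl2_def pc0_def xs)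
qed





lemma uTw_wr2: assumes f: "f \<in> Ar KK" and a: "a \<in> Tw KK" and af: "s1 KK (s2 KK a) = t1 KK f"
  shows "uTw (wr2 KK a f) = pwr2 (Q1 G) (uTw a) (snd u f)"
proof -
  have c: "wr2 KK a f \<in> Tw KK" and s: "s2 KK (wr2 KK a f) = c0 KK (s2 KK a) f"
    and t: "t2 KK (wr2 KK a f) = c0 KK (t2 KK a) f"
    using KG.wr2_typ[OF f a af] by auto
  have sa: "s2 KK a \<in> Ar KK" and ta: "t2 KK a \<in> Ar KK" and tt: "s1 KK (t2 KK a) = t1 KK f"
    using KG.tw_typ[OF a] af by auto
  obtain k k' r0 r1 \<kappa> where R:
  "snd u (f) = (k, k', r0, r1, (\<kappa>, qc0 r1 k, qc0 k' r0))"
  "fAr K (f) = (qeps G k, qeps G k', qeps G r0, qeps G r1, \<kappa>)"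
  "arok k k' r0 r1 \<kappa>"
    by (rule ar_data[OF f])
  obtain l l' m0 m1 \<gamma> n0 n1 \<eta> \<alpha>1 \<alpha>2 \<Gamma> where A:
  "snd u (s2 KK (a)) = (l, l', m0, m1, (\<gamma>, qc0 m1 l, qc0 l' m0))"
  "snd u (t2 KK (a)) = (l, l', n0, n1, (\<eta>, qc0 n1 l, qc0 l' n0))"
  "fAr K (s2 KK (a)) = (qeps G l, qeps G l', qeps G m0, qeps G m1, \<gamma>)"
  "fAr K (t2 KK (a)) = (qeps G l, qeps G l', qeps G n0, qeps G n1, \<eta>)"
  "fTw K (a) = ((qeps G l, qeps G l', qeps G m0, qeps G m1, \<gamma>), (qeps G l, qeps G l', qeps G n0, qeps G n1, \<eta>), \<alpha>1, \<alpha>2, \<Gamma>)"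
  "arok l l' m0 m1 \<gamma>" "arok l l' n0 n1 \<eta>" "twok l l' m0 m1 \<gamma> n0 n1 \<eta> \<alpha>1 \<alpha>2 \<Gamma>"
  "uTw (a) = ((l, l', m0, m1, (\<gamma>, qc0 m1 l, qc0 l' m0)), (l, l', n0, n1, (\<eta>, qc0 n1 l, qc0 l' n0)),
     (\<alpha>1, m0, n0), (\<alpha>2, m1, n1), (\<Gamma>, s3 G \<Gamma>, t3 G \<Gamma>, qc0 m1 l, qc0 l' n0))"
    by (rule tw_data[OF a])
  obtain lc l'c m0c m1c \<gamma>c n0c n1c \<eta>c \<alpha>1c \<alpha>2c \<Gamma>c where Cc:
  "snd u (s2 KK (wr2 KK a f)) = (lc, l'c, m0c, m1c, (\<gamma>c, qc0 m1c lc, qc0 l'c m0c))"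
  "snd u (t2 KK (wr2 KK a f)) = (lc, l'c, n0c, n1c, (\<eta>c, qc0 n1c lc, qc0 l'c n0c))"
  "fAr K (s2 KK (wr2 KK a f)) = (qeps G lc, qeps G l'c, qeps G m0c, qeps G m1c, \<gamma>c)"
  "fAr K (t2 KK (wr2 KK a f)) = (qeps G lc, qeps G l'c, qeps G n0c, qeps G n1c, \<eta>c)"
  "fTw K (wr2 KK a f) = ((qeps G lc, qeps G l'c, qeps G m0c, qeps G m1c, \<gamma>c), (qeps G lc, qeps G l'c, qeps G n0c, qeps G n1c, \<eta>c), \<alpha>1c, \<alpha>2c, \<Gamma>c)"
  "arok lc l'c m0c m1c \<gamma>c" "arok lc l'c n0c n1c \<eta>c" "twok lc l'c m0c m1c \<gamma>c n0c n1c \<eta>c \<alpha>1c \<alpha>2c \<Gamma>c"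
  "uTw (wr2 KK a f) = ((lc, l'c, m0c, m1c, (\<gamma>c, qc0 m1c lc, qc0 l'c m0c)), (lc, l'c, n0c, n1c, (\<eta>c, qc0 n1c lc, qc0 l'c n0c)),
     (\<alpha>1c, m0c, n0c), (\<alpha>2c, m1c, n1c), (\<Gamma>c, s3 G \<Gamma>c, t3 G \<Gamma>c, qc0 m1c lc, qc0 l'c n0c))"
    by (rule tw_data[OF c])

  have kl: "k' = l" using u_t1[OF f] u_s1[OF sa] af R(1) A(1) by simp
  have us: "snd u (s2 KK (wr2 KK a f)) = pc0 (Q1 G) (snd u (s2 KK a)) (snd u f)"
    using u_c0[OF f sa af[symmetric]] s by simp
  have ut: "snd u (t2 KK (wr2 KK a f)) = pc0 (Q1 G) (snd u (t2 KK a)) (snd u f)"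
    using u_c0[OF f ta tt[symmetric]] t by simp
  have ec: "lc = k \<and> l'c = l' \<and> m0c = qc0 m0 r0 \<and> m1c = qc0 m1 r1 \<and> \<gamma>c = c1 G (wr2 G \<gamma> (qeps G r0)) (wl2 G (qeps G m1) \<kappa>)
     \<and> n0c = qc0 n0 r0 \<and> n1c = qc0 n1 r1 \<and> \<eta>c = c1 G (wr2 G \<eta> (qeps G r0)) (wl2 G (qeps G n1) \<kappa>)"
    using us ut Cc(1) Cc(2) R(1) A(1) A(2) kl by (simp add: pc0_def)
  have k: "fTw K (wr2 KK a f) = pwr2 G (fTw K a) (fAr K f)" by (rule K_wr2[OF f a af])
  have k2: "\<alpha>1c = wr2 G \<alpha>1 (qeps G r0) \<and> \<alpha>2c = wr2 G \<alpha>2 (qeps G r1) \<and>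
     \<Gamma>c = c2 G (c13 G (i3 G (wr2 G \<eta> (qeps G r0))) (ic_inv G \<alpha>2 \<kappa>))
            (c13 G (wr3 G \<Gamma> (qeps G r0)) (i3 G (wl2 G (qeps G m1) \<kappa>)))"
    using k Cc(5) R(2) A(5) by (simp add: pwr2_def)
  note F = A(6-8) R(3)[unfolded kl] 
  note FF = F[unfolded arok_def twok_def]
  show ?thesis unfolding Cc(9) R(1) A(9) kl using ec k2 kl FF
    by (simp add: pwr2_def pc0_def xs)
qed

end

context cs begin


lemma uTh_c2: assumes C: "C \<in> Th KK" and D: "D \<in> Th KK" and CD: "t3 KK C = s3 KK D"
  shows "uTh (c2 KK D C) = c2 (path (Q1 G)) (uTh D) (uTh C)"
proof -
  have E: "c2 KK D C \<in> Th KK" and s: "s3 KK (c2 KK D C) = s3 KK C" and t: "t3 KK (c2 KK D C) = t3 KK D"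
    using KG.c2_typ[OF C D CD] by auto
  obtain l l' m0 m1 \<gamma> n0 n1 \<eta> \<alpha>1 \<alpha>2 \<Gamma> \<beta>1 \<beta>2 \<Delta> C1 C2 where A:
  "snd u (s2 KK (s3 KK (C))) = (l, l', m0, m1, (\<gamma>, qc0 m1 l, qc0 l' m0))"
  "snd u (t2 KK (s3 KK (C))) = (l, l', n0, n1, (\<eta>, qc0 n1 l, qc0 l' n0))"
  "fTw K (s3 KK (C)) = ((qeps G l, qeps G l', qeps G m0, qeps G m1, \<gamma>), (qeps G l, qeps G l', qeps G n0, qeps G n1, \<eta>), \<alpha>1, \<alpha>2, \<Gamma>)"
  "fTw K (t3 KK (C)) = ((qeps G l, qeps G l', qeps G m0, qeps G m1, \<gamma>), (qeps G l, qeps G l', qeps G n0, qeps G n1, \<eta>), \<beta>1, \<beta>2, \<Delta>)"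
  "arok l l' m0 m1 \<gamma>" "arok l l' n0 n1 \<eta>" "twok l l' m0 m1 \<gamma> n0 n1 \<eta> \<alpha>1 \<alpha>2 \<Gamma>"
  "twok l l' m0 m1 \<gamma> n0 n1 \<eta> \<beta>1 \<beta>2 \<Delta>"
  "uTw (s3 KK (C)) = ((l, l', m0, m1, (\<gamma>, qc0 m1 l, qc0 l' m0)), (l, l', n0, n1, (\<eta>, qc0 n1 l, qc0 l' n0)),
     (\<alpha>1, m0, n0), (\<alpha>2, m1, n1), (\<Gamma>, s3 G \<Gamma>, t3 G \<Gamma>, qc0 m1 l, qc0 l' n0))"
  "uTw (t3 KK (C)) = ((l, l', m0, m1, (\<gamma>, qc0 m1 l, qc0 l' m0)), (l, l', n0, n1, (\<eta>, qc0 n1 l, qc0 l' n0)),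
     (\<beta>1, m0, n0), (\<beta>2, m1, n1), (\<Delta>, s3 G \<Delta>, t3 G \<Delta>, qc0 m1 l, qc0 l' n0))"
  "fTh K (C) = (fTw K (s3 KK (C)), fTw K (t3 KK (C)), C1, C2)"
  "thok l l' \<gamma> \<eta> \<alpha>1 \<alpha>2 \<Gamma> \<beta>1 \<beta>2 \<Delta> C1 C2"
  "uTh (C) = (uTw (s3 KK (C)), uTw (t3 KK (C)), (C1, \<alpha>1, \<beta>1, m0, n0), (C2, \<alpha>2, \<beta>2, m1, n1))"
    by (rule th_data[OF C])
  obtain ld l'd m0d m1d \<gamma>d n0d n1d \<eta>d \<alpha>1d \<alpha>2d \<Gamma>d \<beta>1d \<beta>2d \<Delta>d C1d C2d where B:
  "snd u (s2 KK (s3 KK (D))) = (ld, l'd, m0d, m1d, (\<gamma>d, qc0 m1d ld, qc0 l'd m0d))"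
  "snd u (t2 KK (s3 KK (D))) = (ld, l'd, n0d, n1d, (\<eta>d, qc0 n1d ld, qc0 l'd n0d))"
  "fTw K (s3 KK (D)) = ((qeps G ld, qeps G l'd, qeps G m0d, qeps G m1d, \<gamma>d), (qeps G ld, qeps G l'd, qeps G n0d, qeps G n1d, \<eta>d), \<alpha>1d, \<alpha>2d, \<Gamma>d)"
  "fTw K (t3 KK (D)) = ((qeps G ld, qeps G l'd, qeps G m0d, qeps G m1d, \<gamma>d), (qeps G ld, qeps G l'd, qeps G n0d, qeps G n1d, \<eta>d), \<beta>1d, \<beta>2d, \<Delta>d)"
  "arok ld l'd m0d m1d \<gamma>d" "arok ld l'd n0d n1d \<eta>d" "twok ld l'd m0d m1d \<gamma>d n0d n1d \<eta>d \<alpha>1d \<alpha>2d \<Gamma>d"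
  "twok ld l'd m0d m1d \<gamma>d n0d n1d \<eta>d \<beta>1d \<beta>2d \<Delta>d"
  "uTw (s3 KK (D)) = ((ld, l'd, m0d, m1d, (\<gamma>d, qc0 m1d ld, qc0 l'd m0d)), (ld, l'd, n0d, n1d, (\<eta>d, qc0 n1d ld, qc0 l'd n0d)),
     (\<alpha>1d, m0d, n0d), (\<alpha>2d, m1d, n1d), (\<Gamma>d, s3 G \<Gamma>d, t3 G \<Gamma>d, qc0 m1d ld, qc0 l'd n0d))"
  "uTw (t3 KK (D)) = ((ld, l'd, m0d, m1d, (\<gamma>d, qc0 m1d ld, qc0 l'd m0d)), (ld, l'd, n0d, n1d, (\<eta>d, qc0 n1d ld, qc0 l'd n0d)),
     (\<beta>1d, m0d, n0d), (\<beta>2d, m1d, n1d), (\<Delta>d, s3 G \<Delta>d, t3 G \<Delta>d, qc0 m1d ld, qc0 l'd n0d))"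
  "fTh K (D) = (fTw K (s3 KK (D)), fTw K (t3 KK (D)), C1d, C2d)"
  "thok ld l'd \<gamma>d \<eta>d \<alpha>1d \<alpha>2d \<Gamma>d \<beta>1d \<beta>2d \<Delta>d C1d C2d"
  "uTh (D) = (uTw (s3 KK (D)), uTw (t3 KK (D)), (C1d, \<alpha>1d, \<beta>1d, m0d, n0d), (C2d, \<alpha>2d, \<beta>2d, m1d, n1d))"
    by (rule th_data[OF D])
  obtain le l'e m0e m1e \<gamma>e n0e n1e \<eta>e \<alpha>1e \<alpha>2e \<Gamma>e \<beta>1e \<beta>2e \<Delta>e C1e C2e where Ee:
  "snd u (s2 KK (s3 KK (c2 KK D C))) = (le, l'e, m0e, m1e, (\<gamma>e, qc0 m1e le, qc0 l'e m0e))"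
  "snd u (t2 KK (s3 KK (c2 KK D C))) = (le, l'e, n0e, n1e, (\<eta>e, qc0 n1e le, qc0 l'e n0e))"
  "fTw K (s3 KK (c2 KK D C)) = ((qeps G le, qeps G l'e, qeps G m0e, qeps G m1e, \<gamma>e), (qeps G le, qeps G l'e, qeps G n0e, qeps G n1e, \<eta>e), \<alpha>1e, \<alpha>2e, \<Gamma>e)"
  "fTw K (t3 KK (c2 KK D C)) = ((qeps G le, qeps G l'e, qeps G m0e, qeps G m1e, \<gamma>e), (qeps G le, qeps G l'e, qeps G n0e, qeps G n1e, \<eta>e), \<beta>1e, \<beta>2e, \<Delta>e)"
  "arok le l'e m0e m1e \<gamma>e" "arok le l'e n0e n1e \<eta>e" "twok le l'e m0e m1e \<gamma>e n0e n1e \<eta>e \<alpha>1e \<alpha>2e \<Gamma>e"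
  "twok le l'e m0e m1e \<gamma>e n0e n1e \<eta>e \<beta>1e \<beta>2e \<Delta>e"
  "uTw (s3 KK (c2 KK D C)) = ((le, l'e, m0e, m1e, (\<gamma>e, qc0 m1e le, qc0 l'e m0e)), (le, l'e, n0e, n1e, (\<eta>e, qc0 n1e le, qc0 l'e n0e)),
     (\<alpha>1e, m0e, n0e), (\<alpha>2e, m1e, n1e), (\<Gamma>e, s3 G \<Gamma>e, t3 G \<Gamma>e, qc0 m1e le, qc0 l'e n0e))"
  "uTw (t3 KK (c2 KK D C)) = ((le, l'e, m0e, m1e, (\<gamma>e, qc0 m1e le, qc0 l'e m0e)), (le, l'e, n0e, n1e, (\<eta>e, qc0 n1e le, qc0 l'e n0e)),
     (\<beta>1e, m0e, n0e), (\<beta>2e, m1e, n1e), (\<Delta>e, s3 G \<Delta>e, t3 G \<Delta>e, qc0 m1e le, qc0 l'e n0e))"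
  "fTh K (c2 KK D C) = (fTw K (s3 KK (c2 KK D C)), fTw K (t3 KK (c2 KK D C)), C1e, C2e)"
  "thok le l'e \<gamma>e \<eta>e \<alpha>1e \<alpha>2e \<Gamma>e \<beta>1e \<beta>2e \<Delta>e C1e C2e"
  "uTh (c2 KK D C) = (uTw (s3 KK (c2 KK D C)), uTw (t3 KK (c2 KK D C)), (C1e, \<alpha>1e, \<beta>1e, m0e, n0e), (C2e, \<alpha>2e, \<beta>2e, m1e, n1e))"
    by (rule th_data[OF E])

  have k: "fTh K (c2 KK D C) = c2 (path G) (fTh K D) (fTh K C)" by (rule K_c2[OF C D CD])
  have eqs: "\<alpha>1d = \<beta>1 \<and> \<alpha>2d = \<beta>2 \<and> \<Gamma>d = \<Delta> \<and> ld = l \<and> l'd = l' \<and> m0d = m0 \<and> m1d = m1 \<and> \<gamma>d = \<gamma> \<and> n0d = n0 \<and> n1d = n1 \<and> \<eta>d = \<eta>"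
    using A(4) B(3) A(10) B(9) CD by simp
  have eqe: "\<alpha>1e = \<alpha>1 \<and> \<alpha>2e = \<alpha>2 \<and> \<beta>1e = \<beta>1d \<and> \<beta>2e = \<beta>2d \<and> le = l \<and> l'e = l' \<and> m0e = m0 \<and> m1e = m1 \<and> n0e = n0 \<and> n1e = n1"
    using Ee(9) Ee(10) A(9) B(10) eqs s t by simp
  have eqC: "C1e = c2 G C1d C1 \<and> C2e = c2 G C2d C2" using k Ee(11) B(11) A(11) by simp
  show ?thesis unfolding Ee(13) A(13) B(13) s t using eqs eqe eqC by simp
qed

lemma uTh_c13: assumes C: "C \<in> Th KK" and D: "D \<in> Th KK" and CD: "t2 KK (s3 KK C) = s2 KK (s3 KK D)"
  shows "uTh (c13 KK D C) = c13 (path (Q1 G)) (uTh D) (uTh C)"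
proof -
  have E: "c13 KK D C \<in> Th KK" and s: "s3 KK (c13 KK D C) = c1 KK (s3 KK D) (s3 KK C)"
    and t: "t3 KK (c13 KK D C) = c1 KK (t3 KK D) (t3 KK C)"
    using KG.c13_typ[OF C D CD] by auto
  have sC: "s3 KK C \<in> Tw KK" and sD: "s3 KK D \<in> Tw KK" and tC: "t3 KK C \<in> Tw KK" and tD: "t3 KK D \<in> Tw KK"
    and CD': "t2 KK (t3 KK C) = s2 KK (t3 KK D)"
    using KG.th_typ[OF C] KG.th_typ[OF D] CD by auto
  obtain l l' m0 m1 \<gamma> n0 n1 \<eta> \<alpha>1 \<alpha>2 \<Gamma> \<beta>1 \<beta>2 \<Delta> C1 C2 where A:
  "snd u (s2 KK (s3 KK (C))) = (l, l', m0, m1, (\<gamma>, qc0 m1 l, qc0 l' m0))"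
  "snd u (t2 KK (s3 KK (C))) = (l, l', n0, n1, (\<eta>, qc0 n1 l, qc0 l' n0))"
  "fTw K (s3 KK (C)) = ((qeps G l, qeps G l', qeps G m0, qeps G m1, \<gamma>), (qeps G l, qeps G l', qeps G n0, qeps G n1, \<eta>), \<alpha>1, \<alpha>2, \<Gamma>)"
  "fTw K (t3 KK (C)) = ((qeps G l, qeps G l', qeps G m0, qeps G m1, \<gamma>), (qeps G l, qeps G l', qeps G n0, qeps G n1, \<eta>), \<beta>1, \<beta>2, \<Delta>)"
  "arok l l' m0 m1 \<gamma>" "arok l l' n0 n1 \<eta>" "twok l l' m0 m1 \<gamma> n0 n1 \<eta> \<alpha>1 \<alpha>2 \<Gamma>"
  "twok l l' m0 m1 \<gamma> n0 n1 \<eta> \<beta>1 \<beta>2 \<Delta>"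
  "uTw (s3 KK (C)) = ((l, l', m0, m1, (\<gamma>, qc0 m1 l, qc0 l' m0)), (l, l', n0, n1, (\<eta>, qc0 n1 l, qc0 l' n0)),
     (\<alpha>1, m0, n0), (\<alpha>2, m1, n1), (\<Gamma>, s3 G \<Gamma>, t3 G \<Gamma>, qc0 m1 l, qc0 l' n0))"
  "uTw (t3 KK (C)) = ((l, l', m0, m1, (\<gamma>, qc0 m1 l, qc0 l' m0)), (l, l', n0, n1, (\<eta>, qc0 n1 l, qc0 l' n0)),
     (\<beta>1, m0, n0), (\<beta>2, m1, n1), (\<Delta>, s3 G \<Delta>, t3 G \<Delta>, qc0 m1 l, qc0 l' n0))"
  "fTh K (C) = (fTw K (s3 KK (C)), fTw K (t3 KK (C)), C1, C2)"
  "thok l l' \<gamma> \<eta> \<alpha>1 \<alpha>2 \<Gamma> \<beta>1 \<beta>2 \<Delta> C1 C2"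
  "uTh (C) = (uTw (s3 KK (C)), uTw (t3 KK (C)), (C1, \<alpha>1, \<beta>1, m0, n0), (C2, \<alpha>2, \<beta>2, m1, n1))"
    by (rule th_data[OF C])
  obtain ld l'd m0d m1d \<gamma>d n0d n1d \<eta>d \<alpha>1d \<alpha>2d \<Gamma>d \<beta>1d \<beta>2d \<Delta>d C1d C2d where B:
  "snd u (s2 KK (s3 KK (D))) = (ld, l'd, m0d, m1d, (\<gamma>d, qc0 m1d ld, qc0 l'd m0d))"
  "snd u (t2 KK (s3 KK (D))) = (ld, l'd, n0d, n1d, (\<eta>d, qc0 n1d ld, qc0 l'd n0d))"
  "fTw K (s3 KK (D)) = ((qeps G ld, qeps G l'd, qeps G m0d, qeps G m1d, \<gamma>d), (qeps G ld, qeps G l'd, qeps G n0d, qeps G n1d, \<eta>d), \<alpha>1d, \<alpha>2d, \<Gamma>d)"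
  "fTw K (t3 KK (D)) = ((qeps G ld, qeps G l'd, qeps G m0d, qeps G m1d, \<gamma>d), (qeps G ld, qeps G l'd, qeps G n0d, qeps G n1d, \<eta>d), \<beta>1d, \<beta>2d, \<Delta>d)"
  "arok ld l'd m0d m1d \<gamma>d" "arok ld l'd n0d n1d \<eta>d" "twok ld l'd m0d m1d \<gamma>d n0d n1d \<eta>d \<alpha>1d \<alpha>2d \<Gamma>d"
  "twok ld l'd m0d m1d \<gamma>d n0d n1d \<eta>d \<beta>1d \<beta>2d \<Delta>d"
  "uTw (s3 KK (D)) = ((ld, l'd, m0d, m1d, (\<gamma>d, qc0 m1d ld, qc0 l'd m0d)), (ld, l'd, n0d, n1d, (\<eta>d, qc0 n1d ld, qc0 l'd n0d)),
     (\<alpha>1d, m0d, n0d), (\<alpha>2d, m1d, n1d), (\<Gamma>d, s3 G \<Gamma>d, t3 G \<Gamma>d, qc0 m1d ld, qc0 l'd n0d))"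
  "uTw (t3 KK (D)) = ((ld, l'd, m0d, m1d, (\<gamma>d, qc0 m1d ld, qc0 l'd m0d)), (ld, l'd, n0d, n1d, (\<eta>d, qc0 n1d ld, qc0 l'd n0d)),
     (\<beta>1d, m0d, n0d), (\<beta>2d, m1d, n1d), (\<Delta>d, s3 G \<Delta>d, t3 G \<Delta>d, qc0 m1d ld, qc0 l'd n0d))"
  "fTh K (D) = (fTw K (s3 KK (D)), fTw K (t3 KK (D)), C1d, C2d)"
  "thok ld l'd \<gamma>d \<eta>d \<alpha>1d \<alpha>2d \<Gamma>d \<beta>1d \<beta>2d \<Delta>d C1d C2d"
  "uTh (D) = (uTw (s3 KK (D)), uTw (t3 KK (D)), (C1d, \<alpha>1d, \<beta>1d, m0d, n0d), (C2d, \<alpha>2d, \<beta>2d, m1d, n1d))"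
    by (rule th_data[OF D])
  obtain le l'e m0e m1e \<gamma>e n0e n1e \<eta>e \<alpha>1e \<alpha>2e \<Gamma>e \<beta>1e \<beta>2e \<Delta>e C1e C2e where Ee:
  "snd u (s2 KK (s3 KK (c13 KK D C))) = (le, l'e, m0e, m1e, (\<gamma>e, qc0 m1e le, qc0 l'e m0e))"
  "snd u (t2 KK (s3 KK (c13 KK D C))) = (le, l'e, n0e, n1e, (\<eta>e, qc0 n1e le, qc0 l'e n0e))"
  "fTw K (s3 KK (c13 KK D C)) = ((qeps G le, qeps G l'e, qeps G m0e, qeps G m1e, \<gamma>e), (qeps G le, qeps G l'e, qeps G n0e, qeps G n1e, \<eta>e), \<alpha>1e, \<alpha>2e, \<Gamma>e)"
  "fTw K (t3 KK (c13 KK D C)) = ((qeps G le, qeps G l'e, qeps G m0e, qeps G m1e, \<gamma>e), (qeps G le, qeps G l'e, qeps G n0e, qeps G n1e, \<eta>e), \<beta>1e, \<beta>2e, \<Delta>e)"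
  "arok le l'e m0e m1e \<gamma>e" "arok le l'e n0e n1e \<eta>e" "twok le l'e m0e m1e \<gamma>e n0e n1e \<eta>e \<alpha>1e \<alpha>2e \<Gamma>e"
  "twok le l'e m0e m1e \<gamma>e n0e n1e \<eta>e \<beta>1e \<beta>2e \<Delta>e"
  "uTw (s3 KK (c13 KK D C)) = ((le, l'e, m0e, m1e, (\<gamma>e, qc0 m1e le, qc0 l'e m0e)), (le, l'e, n0e, n1e, (\<eta>e, qc0 n1e le, qc0 l'e n0e)),
     (\<alpha>1e, m0e, n0e), (\<alpha>2e, m1e, n1e), (\<Gamma>e, s3 G \<Gamma>e, t3 G \<Gamma>e, qc0 m1e le, qc0 l'e n0e))"
  "uTw (t3 KK (c13 KK D C)) = ((le, l'e, m0e, m1e, (\<gamma>e, qc0 m1e le, qc0 l'e m0e)), (le, l'e, n0e, n1e, (\<eta>e, qc0 n1e le, qc0 l'e n0e)),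
     (\<beta>1e, m0e, n0e), (\<beta>2e, m1e, n1e), (\<Delta>e, s3 G \<Delta>e, t3 G \<Delta>e, qc0 m1e le, qc0 l'e n0e))"
  "fTh K (c13 KK D C) = (fTw K (s3 KK (c13 KK D C)), fTw K (t3 KK (c13 KK D C)), C1e, C2e)"
  "thok le l'e \<gamma>e \<eta>e \<alpha>1e \<alpha>2e \<Gamma>e \<beta>1e \<beta>2e \<Delta>e C1e C2e"
  "uTh (c13 KK D C) = (uTw (s3 KK (c13 KK D C)), uTw (t3 KK (c13 KK D C)), (C1e, \<alpha>1e, \<beta>1e, m0e, n0e), (C2e, \<alpha>2e, \<beta>2e, m1e, n1e))"
    by (rule th_data[OF E])

  have k: "fTh K (c13 KK D C) = c13 (path G) (fTh K D) (fTh K C)" by (rule K_c13[OF C D CD])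
  have us: "uTw (s3 KK (c13 KK D C)) = pc1 (Q1 G) (uTw (s3 KK D)) (uTw (s3 KK C))"
    using uTw_c1[OF sC sD CD] s by simp
  have ut: "uTw (t3 KK (c13 KK D C)) = pc1 (Q1 G) (uTw (t3 KK D)) (uTw (t3 KK C))"
    using uTw_c1[OF tC tD CD'] t by simp
  have eqe: "\<alpha>1e = c1 G \<alpha>1d \<alpha>1 \<and> \<alpha>2e = c1 G \<alpha>2d \<alpha>2 \<and> \<beta>1e = c1 G \<beta>1d \<beta>1 \<and> \<beta>2e = c1 G \<beta>2d \<beta>2
     \<and> m0e = m0 \<and> m1e = m1 \<and> n0e = n0d \<and> n1e = n1d"
    using us ut Ee(9) Ee(10) A(9) A(10) B(9) B(10) by (simp add: pc1_def)
  have eqC: "C1e = c13 G C1d C1 \<and> C2e = c13 G C2d C2" using k Ee(11) B(11) A(11) by simp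
  show ?thesis unfolding Ee(13) A(13) B(13) using eqe eqC us ut by simp
qed



lemma uTh_wl3: assumes g: "g \<in> Ar KK" and C: "C \<in> Th KK" and gC: "t1 KK (s2 KK (s3 KK C)) = s1 KK g"
  shows "uTh (wl3 KK g C) = wl3 (path (Q1 G)) (snd u g) (uTh C)"
proof -
  have E: "wl3 KK g C \<in> Th KK" and s: "s3 KK (wl3 KK g C) = wl2 KK g (s3 KK C)"
    and t: "t3 KK (wl3 KK g C) = wl2 KK g (t3 KK C)"
    using KG.wl3_typ[OF g C gC] by auto
  have sC: "s3 KK C \<in> Tw KK" and tC: "t3 KK C \<in> Tw KK" and gC': "t1 KK (s2 KK (t3 KK C)) = s1 KK g"
    using KG.th_typ[OF C] gC by auto
  obtain k k' r0 r1 \<kappa> where R: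
  "snd u (g) = (k, k', r0, r1, (\<kappa>, qc0 r1 k, qc0 k' r0))"
  "fAr K (g) = (qeps G k, qeps G k', qeps G r0, qeps G r1, \<kappa>)"
  "arok k k' r0 r1 \<kappa>"
    by (rule ar_data[OF g])
  obtain l l' m0 m1 \<gamma> n0 n1 \<eta> \<alpha>1 \<alpha>2 \<Gamma> \<beta>1 \<beta>2 \<Delta> C1 C2 where A:
  "snd u (s2 KK (s3 KK (C))) = (l, l', m0, m1, (\<gamma>, qc0 m1 l, qc0 l' m0))"
  "snd u (t2 KK (s3 KK (C))) = (l, l', n0, n1, (\<eta>, qc0 n1 l, qc0 l' n0))"
  "fTw K (s3 KK (C)) = ((qeps G l, qeps G l', qeps G m0, qeps G m1, \<gamma>), (qeps G l, qeps G l', qeps G n0, qeps G n1, \<eta>), \<alpha>1, \<alpha>2, \<Gamma>)"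
  "fTw K (t3 KK (C)) = ((qeps G l, qeps G l', qeps G m0, qeps G m1, \<gamma>), (qeps G l, qeps G l', qeps G n0, qeps G n1, \<eta>), \<beta>1, \<beta>2, \<Delta>)"
  "arok l l' m0 m1 \<gamma>" "arok l l' n0 n1 \<eta>" "twok l l' m0 m1 \<gamma> n0 n1 \<eta> \<alpha>1 \<alpha>2 \<Gamma>"
  "twok l l' m0 m1 \<gamma> n0 n1 \<eta> \<beta>1 \<beta>2 \<Delta>"
  "uTw (s3 KK (C)) = ((l, l', m0, m1, (\<gamma>, qc0 m1 l, qc0 l' m0)), (l, l', n0, n1, (\<eta>, qc0 n1 l, qc0 l' n0)),
     (\<alpha>1, m0, n0), (\<alpha>2, m1, n1), (\<Gamma>, s3 G \<Gamma>, t3 G \<Gamma>, qc0 m1 l, qc0 l' n0))"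
  "uTw (t3 KK (C)) = ((l, l', m0, m1, (\<gamma>, qc0 m1 l, qc0 l' m0)), (l, l', n0, n1, (\<eta>, qc0 n1 l, qc0 l' n0)),
     (\<beta>1, m0, n0), (\<beta>2, m1, n1), (\<Delta>, s3 G \<Delta>, t3 G \<Delta>, qc0 m1 l, qc0 l' n0))"
  "fTh K (C) = (fTw K (s3 KK (C)), fTw K (t3 KK (C)), C1, C2)"
  "thok l l' \<gamma> \<eta> \<alpha>1 \<alpha>2 \<Gamma> \<beta>1 \<beta>2 \<Delta> C1 C2"
  "uTh (C) = (uTw (s3 KK (C)), uTw (t3 KK (C)), (C1, \<alpha>1, \<beta>1, m0, n0), (C2, \<alpha>2, \<beta>2, m1, n1))"
    by (rule th_data[OF C])
  obtain le l'e m0e m1e \<gamma>e n0e n1e \<eta>e \<alpha>1e \<alpha>2e \<Gamma>e \<beta>1e \<beta>2e \<Delta>e C1e C2e where Ee: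
  "snd u (s2 KK (s3 KK (wl3 KK g C))) = (le, l'e, m0e, m1e, (\<gamma>e, qc0 m1e le, qc0 l'e m0e))"
  "snd u (t2 KK (s3 KK (wl3 KK g C))) = (le, l'e, n0e, n1e, (\<eta>e, qc0 n1e le, qc0 l'e n0e))"
  "fTw K (s3 KK (wl3 KK g C)) = ((qeps G le, qeps G l'e, qeps G m0e, qeps G m1e, \<gamma>e), (qeps G le, qeps G l'e, qeps G n0e, qeps G n1e, \<eta>e), \<alpha>1e, \<alpha>2e, \<Gamma>e)"
  "fTw K (t3 KK (wl3 KK g C)) = ((qeps G le, qeps G l'e, qeps G m0e, qeps G m1e, \<gamma>e), (qeps G le, qeps G l'e, qeps G n0e, qeps G n1e, \<eta>e), \<beta>1e, \<beta>2e, \<Delta>e)"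
  "arok le l'e m0e m1e \<gamma>e" "arok le l'e n0e n1e \<eta>e" "twok le l'e m0e m1e \<gamma>e n0e n1e \<eta>e \<alpha>1e \<alpha>2e \<Gamma>e"
  "twok le l'e m0e m1e \<gamma>e n0e n1e \<eta>e \<beta>1e \<beta>2e \<Delta>e"
  "uTw (s3 KK (wl3 KK g C)) = ((le, l'e, m0e, m1e, (\<gamma>e, qc0 m1e le, qc0 l'e m0e)), (le, l'e, n0e, n1e, (\<eta>e, qc0 n1e le, qc0 l'e n0e)),
     (\<alpha>1e, m0e, n0e), (\<alpha>2e, m1e, n1e), (\<Gamma>e, s3 G \<Gamma>e, t3 G \<Gamma>e, qc0 m1e le, qc0 l'e n0e))"
  "uTw (t3 KK (wl3 KK g C)) = ((le, l'e, m0e, m1e, (\<gamma>e, qc0 m1e le, qc0 l'e m0e)), (le, l'e, n0e, n1e, (\<eta>e, qc0 n1e le, qc0 l'e n0e)),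
     (\<beta>1e, m0e, n0e), (\<beta>2e, m1e, n1e), (\<Delta>e, s3 G \<Delta>e, t3 G \<Delta>e, qc0 m1e le, qc0 l'e n0e))"
  "fTh K (wl3 KK g C) = (fTw K (s3 KK (wl3 KK g C)), fTw K (t3 KK (wl3 KK g C)), C1e, C2e)"
  "thok le l'e \<gamma>e \<eta>e \<alpha>1e \<alpha>2e \<Gamma>e \<beta>1e \<beta>2e \<Delta>e C1e C2e"
  "uTh (wl3 KK g C) = (uTw (s3 KK (wl3 KK g C)), uTw (t3 KK (wl3 KK g C)), (C1e, \<alpha>1e, \<beta>1e, m0e, n0e), (C2e, \<alpha>2e, \<beta>2e, m1e, n1e))"
    by (rule th_data[OF E])

  have k: "fTh K (wl3 KK g C) = wl3 (path G) (fAr K g) (fTh K C)" by (rule K_wl3[OF g C gC])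
  have us: "uTw (s3 KK (wl3 KK g C)) = pwl2 (Q1 G) (snd u g) (uTw (s3 KK C))"
    using uTw_wl2[OF g sC gC] s by simp
  have ut: "uTw (t3 KK (wl3 KK g C)) = pwl2 (Q1 G) (snd u g) (uTw (t3 KK C))"
    using uTw_wl2[OF g tC gC'] t by simp
  have eqe: "\<alpha>1e = wl2 G (qeps G r0) \<alpha>1 \<and> \<alpha>2e = wl2 G (qeps G r1) \<alpha>2 \<and> \<beta>1e = wl2 G (qeps G r0) \<beta>1 \<and> \<beta>2e = wl2 G (qeps G r1) \<beta>2
     \<and> m0e = qc0 r0 m0 \<and> m1e = qc0 r1 m1 \<and> n0e = qc0 r0 n0 \<and> n1e = qc0 r1 n1"
    using us ut Ee(9) Ee(10) A(9) A(10) R(1) by (simp add: pwl2_def pc0_def)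
  have eqC: "C1e = wl3 G (qeps G r0) C1 \<and> C2e = wl3 G (qeps G r1) C2" using k Ee(11) R(2) A(11) by simp
  show ?thesis unfolding Ee(13) A(13) us ut R(1) using eqe eqC by simp
qed

lemma uTh_wr3: assumes f: "f \<in> Ar KK" and C: "C \<in> Th KK" and fC: "s1 KK (s2 KK (s3 KK C)) = t1 KK f"
  shows "uTh (wr3 KK C f) = wr3 (path (Q1 G)) (uTh C) (snd u f)"
proof -
  have E: "wr3 KK C f \<in> Th KK" and s: "s3 KK (wr3 KK C f) = wr2 KK (s3 KK C) f"
    and t: "t3 KK (wr3 KK C f) = wr2 KK (t3 KK C) f"
    using KG.wr3_typ[OF f C fC] by auto
  have sC: "s3 KK C \<in> Tw KK" and tC: "t3 KK C \<in> Tw KK" and fC': "s1 KK (s2 KK (t3 KK C)) = t1 KK f"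
    using KG.th_typ[OF C] fC by auto
  obtain k k' r0 r1 \<kappa> where R:
  "snd u (f) = (k, k', r0, r1, (\<kappa>, qc0 r1 k, qc0 k' r0))"
  "fAr K (f) = (qeps G k, qeps G k', qeps G r0, qeps G r1, \<kappa>)"
  "arok k k' r0 r1 \<kappa>"
    by (rule ar_data[OF f])
  obtain l l' m0 m1 \<gamma> n0 n1 \<eta> \<alpha>1 \<alpha>2 \<Gamma> \<beta>1 \<beta>2 \<Delta> C1 C2 where A:
  "snd u (s2 KK (s3 KK (C))) = (l, l', m0, m1, (\<gamma>, qc0 m1 l, qc0 l' m0))"
  "snd u (t2 KK (s3 KK (C))) = (l, l', n0, n1, (\<eta>, qc0 n1 l, qc0 l' n0))"
  "fTw K (s3 KK (C)) = ((qeps G l, qeps G l', qeps G m0, qeps G m1, \<gamma>), (qeps G l, qeps G l', qeps G n0, qeps G n1, \<eta>), \<alpha>1, \<alpha>2, \<Gamma>)"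
  "fTw K (t3 KK (C)) = ((qeps G l, qeps G l', qeps G m0, qeps G m1, \<gamma>), (qeps G l, qeps G l', qeps G n0, qeps G n1, \<eta>), \<beta>1, \<beta>2, \<Delta>)"
  "arok l l' m0 m1 \<gamma>" "arok l l' n0 n1 \<eta>" "twok l l' m0 m1 \<gamma> n0 n1 \<eta> \<alpha>1 \<alpha>2 \<Gamma>"
  "twok l l' m0 m1 \<gamma> n0 n1 \<eta> \<beta>1 \<beta>2 \<Delta>"
  "uTw (s3 KK (C)) = ((l, l', m0, m1, (\<gamma>, qc0 m1 l, qc0 l' m0)), (l, l', n0, n1, (\<eta>, qc0 n1 l, qc0 l' n0)),
     (\<alpha>1, m0, n0), (\<alpha>2, m1, n1), (\<Gamma>, s3 G \<Gamma>, t3 G \<Gamma>, qc0 m1 l, qc0 l' n0))"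
  "uTw (t3 KK (C)) = ((l, l', m0, m1, (\<gamma>, qc0 m1 l, qc0 l' m0)), (l, l', n0, n1, (\<eta>, qc0 n1 l, qc0 l' n0)),
     (\<beta>1, m0, n0), (\<beta>2, m1, n1), (\<Delta>, s3 G \<Delta>, t3 G \<Delta>, qc0 m1 l, qc0 l' n0))"
  "fTh K (C) = (fTw K (s3 KK (C)), fTw K (t3 KK (C)), C1, C2)"
  "thok l l' \<gamma> \<eta> \<alpha>1 \<alpha>2 \<Gamma> \<beta>1 \<beta>2 \<Delta> C1 C2"
  "uTh (C) = (uTw (s3 KK (C)), uTw (t3 KK (C)), (C1, \<alpha>1, \<beta>1, m0, n0), (C2, \<alpha>2, \<beta>2, m1, n1))"
    by (rule th_data[OF C])
  obtain le l'e m0e m1e \<gamma>e n0e n1e \<eta>e \<alpha>1e \<alpha>2e \<Gamma>e \<beta>1e \<beta>2e \<Delta>e C1e C2e where Ee: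
  "snd u (s2 KK (s3 KK (wr3 KK C f))) = (le, l'e, m0e, m1e, (\<gamma>e, qc0 m1e le, qc0 l'e m0e))"
  "snd u (t2 KK (s3 KK (wr3 KK C f))) = (le, l'e, n0e, n1e, (\<eta>e, qc0 n1e le, qc0 l'e n0e))"
  "fTw K (s3 KK (wr3 KK C f)) = ((qeps G le, qeps G l'e, qeps G m0e, qeps G m1e, \<gamma>e), (qeps G le, qeps G l'e, qeps G n0e, qeps G n1e, \<eta>e), \<alpha>1e, \<alpha>2e, \<Gamma>e)"
  "fTw K (t3 KK (wr3 KK C f)) = ((qeps G le, qeps G l'e, qeps G m0e, qeps G m1e, \<gamma>e), (qeps G le, qeps G l'e, qeps G n0e, qeps G n1e, \<eta>e), \<beta>1e, \<beta>2e, \<Delta>e)"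
  "arok le l'e m0e m1e \<gamma>e" "arok le l'e n0e n1e \<eta>e" "twok le l'e m0e m1e \<gamma>e n0e n1e \<eta>e \<alpha>1e \<alpha>2e \<Gamma>e"
  "twok le l'e m0e m1e \<gamma>e n0e n1e \<eta>e \<beta>1e \<beta>2e \<Delta>e"
  "uTw (s3 KK (wr3 KK C f)) = ((le, l'e, m0e, m1e, (\<gamma>e, qc0 m1e le, qc0 l'e m0e)), (le, l'e, n0e, n1e, (\<eta>e, qc0 n1e le, qc0 l'e n0e)),
     (\<alpha>1e, m0e, n0e), (\<alpha>2e, m1e, n1e), (\<Gamma>e, s3 G \<Gamma>e, t3 G \<Gamma>e, qc0 m1e le, qc0 l'e n0e))"
  "uTw (t3 KK (wr3 KK C f)) = ((le, l'e, m0e, m1e, (\<gamma>e, qc0 m1e le, qc0 l'e m0e)), (le, l'e, n0e, n1e, (\<eta>e, qc0 n1e le, qc0 l'e n0e)),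
     (\<beta>1e, m0e, n0e), (\<beta>2e, m1e, n1e), (\<Delta>e, s3 G \<Delta>e, t3 G \<Delta>e, qc0 m1e le, qc0 l'e n0e))"
  "fTh K (wr3 KK C f) = (fTw K (s3 KK (wr3 KK C f)), fTw K (t3 KK (wr3 KK C f)), C1e, C2e)"
  "thok le l'e \<gamma>e \<eta>e \<alpha>1e \<alpha>2e \<Gamma>e \<beta>1e \<beta>2e \<Delta>e C1e C2e"
  "uTh (wr3 KK C f) = (uTw (s3 KK (wr3 KK C f)), uTw (t3 KK (wr3 KK C f)), (C1e, \<alpha>1e, \<beta>1e, m0e, n0e), (C2e, \<alpha>2e, \<beta>2e, m1e, n1e))"
    by (rule th_data[OF E])

  have k: "fTh K (wr3 KK C f) = wr3 (path G) (fTh K C) (fAr K f)" by (rule K_wr3[OF f C fC])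
  have us: "uTw (s3 KK (wr3 KK C f)) = pwr2 (Q1 G) (uTw (s3 KK C)) (snd u f)"
    using uTw_wr2[OF f sC fC] s by simp
  have ut: "uTw (t3 KK (wr3 KK C f)) = pwr2 (Q1 G) (uTw (t3 KK C)) (snd u f)"
    using uTw_wr2[OF f tC fC'] t by simp
  have eqe: "\<alpha>1e = wr2 G \<alpha>1 (qeps G r0) \<and> \<alpha>2e = wr2 G \<alpha>2 (qeps G r1) \<and> \<beta>1e = wr2 G \<beta>1 (qeps G r0) \<and> \<beta>2e = wr2 G \<beta>2 (qeps G r1)
     \<and> m0e = qc0 m0 r0 \<and> m1e = qc0 m1 r1 \<and> n0e = qc0 n0 r0 \<and> n1e = qc0 n1 r1"
    using us ut Ee(9) Ee(10) A(9) A(10) R(1) by (simp add: pwr2_def pc0_def)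
  have eqC: "C1e = wr3 G C1 (qeps G r0) \<and> C2e = wr3 G C2 (qeps G r1)" using k Ee(11) R(2) A(11) by simp
  show ?thesis unfolding Ee(13) A(13) us ut R(1) using eqe eqC by simp
qed

lemma uTh_ic: assumes a: "a \<in> Tw KK" and b: "b \<in> Tw KK" and ab: "s1 KK (s2 KK b) = t1 KK (s2 KK a)"
  shows "uTh (ic KK b a) = ic (path (Q1 G)) (uTw b) (uTw a)"
proof -
  have E: "ic KK b a \<in> Th KK" and s: "s3 KK (ic KK b a) = c1 KK (wl2 KK (t2 KK b) a) (wr2 KK b (s2 KK a))"
    and t: "t3 KK (ic KK b a) = c1 KK (wr2 KK b (t2 KK a)) (wl2 KK (s2 KK b) a)"
    using KG.ic_typ[OF a b ab] by auto
  have sa: "s2 KK a \<in> Ar KK" and ta: "t2 KK a \<in> Ar KK" and sb: "s2 KK b \<in> Ar KK" and tb: "t2 KK b \<in> Ar KK"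
    and e1: "t1 KK (s2 KK a) = s1 KK (t2 KK b)" and e2: "s1 KK (s2 KK b) = t1 KK (t2 KK a)"
    and e3: "t1 KK (s2 KK a) = s1 KK (s2 KK b)"
    using KG.tw_typ[OF a] KG.tw_typ[OF b] ab by auto
  have w1: "wl2 KK (t2 KK b) a \<in> Tw KK" "s2 KK (wl2 KK (t2 KK b) a) = c0 KK (t2 KK b) (s2 KK a)"
    using KG.wl2_typ[OF tb a e1] by auto
  have w2: "wr2 KK b (s2 KK a) \<in> Tw KK" "t2 KK (wr2 KK b (s2 KK a)) = c0 KK (t2 KK b) (s2 KK a)"
    using KG.wr2_typ[OF sa b ab] by auto
  have w3: "wl2 KK (s2 KK b) a \<in> Tw KK" "t2 KK (wl2 KK (s2 KK b) a) = c0 KK (s2 KK b) (t2 KK a)"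
    using KG.wl2_typ[OF sb a e3] by auto
  have w4: "wr2 KK b (t2 KK a) \<in> Tw KK" "s2 KK (wr2 KK b (t2 KK a)) = c0 KK (s2 KK b) (t2 KK a)"
    using KG.wr2_typ[OF ta b e2] by auto
  obtain l l' m0 m1 \<gamma> n0 n1 \<eta> \<alpha>1 \<alpha>2 \<Gamma> where A:
  "snd u (s2 KK (a)) = (l, l', m0, m1, (\<gamma>, qc0 m1 l, qc0 l' m0))"
  "snd u (t2 KK (a)) = (l, l', n0, n1, (\<eta>, qc0 n1 l, qc0 l' n0))"
  "fAr K (s2 KK (a)) = (qeps G l, qeps G l', qeps G m0, qeps G m1, \<gamma>)"
  "fAr K (t2 KK (a)) = (qeps G l, qeps G l', qeps G n0, qeps G n1, \<eta>)"
  "fTw K (a) = ((qeps G l, qeps G l', qeps G m0, qeps G m1, \<gamma>), (qeps G l, qeps G l', qeps G n0, qeps G n1, \<eta>), \<alpha>1, \<alpha>2, \<Gamma>)"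
  "arok l l' m0 m1 \<gamma>" "arok l l' n0 n1 \<eta>" "twok l l' m0 m1 \<gamma> n0 n1 \<eta> \<alpha>1 \<alpha>2 \<Gamma>"
  "uTw (a) = ((l, l', m0, m1, (\<gamma>, qc0 m1 l, qc0 l' m0)), (l, l', n0, n1, (\<eta>, qc0 n1 l, qc0 l' n0)),
     (\<alpha>1, m0, n0), (\<alpha>2, m1, n1), (\<Gamma>, s3 G \<Gamma>, t3 G \<Gamma>, qc0 m1 l, qc0 l' n0))"
    by (rule tw_data[OF a])
  obtain lb l'b m0b m1b \<gamma>b n0b n1b \<eta>b \<alpha>1b \<alpha>2b \<Gamma>b where B:
  "snd u (s2 KK (b)) = (lb, l'b, m0b, m1b, (\<gamma>b, qc0 m1b lb, qc0 l'b m0b))"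
  "snd u (t2 KK (b)) = (lb, l'b, n0b, n1b, (\<eta>b, qc0 n1b lb, qc0 l'b n0b))"
  "fAr K (s2 KK (b)) = (qeps G lb, qeps G l'b, qeps G m0b, qeps G m1b, \<gamma>b)"
  "fAr K (t2 KK (b)) = (qeps G lb, qeps G l'b, qeps G n0b, qeps G n1b, \<eta>b)"
  "fTw K (b) = ((qeps G lb, qeps G l'b, qeps G m0b, qeps G m1b, \<gamma>b), (qeps G lb, qeps G l'b, qeps G n0b, qeps G n1b, \<eta>b), \<alpha>1b, \<alpha>2b, \<Gamma>b)"
  "arok lb l'b m0b m1b \<gamma>b" "arok lb l'b n0b n1b \<eta>b" "twok lb l'b m0b m1b \<gamma>b n0b n1b \<eta>b \<alpha>1b \<alpha>2b \<Gamma>b"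
  "uTw (b) = ((lb, l'b, m0b, m1b, (\<gamma>b, qc0 m1b lb, qc0 l'b m0b)), (lb, l'b, n0b, n1b, (\<eta>b, qc0 n1b lb, qc0 l'b n0b)),
     (\<alpha>1b, m0b, n0b), (\<alpha>2b, m1b, n1b), (\<Gamma>b, s3 G \<Gamma>b, t3 G \<Gamma>b, qc0 m1b lb, qc0 l'b n0b))"
    by (rule tw_data[OF b])
  obtain le l'e m0e m1e \<gamma>e n0e n1e \<eta>e \<alpha>1e \<alpha>2e \<Gamma>e \<beta>1e \<beta>2e \<Delta>e C1e C2e where Ee:
  "snd u (s2 KK (s3 KK (ic KK b a))) = (le, l'e, m0e, m1e, (\<gamma>e, qc0 m1e le, qc0 l'e m0e))"
  "snd u (t2 KK (s3 KK (ic KK b a))) = (le, l'e, n0e, n1e, (\<eta>e, qc0 n1e le, qc0 l'e n0e))"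
  "fTw K (s3 KK (ic KK b a)) = ((qeps G le, qeps G l'e, qeps G m0e, qeps G m1e, \<gamma>e), (qeps G le, qeps G l'e, qeps G n0e, qeps G n1e, \<eta>e), \<alpha>1e, \<alpha>2e, \<Gamma>e)"
  "fTw K (t3 KK (ic KK b a)) = ((qeps G le, qeps G l'e, qeps G m0e, qeps G m1e, \<gamma>e), (qeps G le, qeps G l'e, qeps G n0e, qeps G n1e, \<eta>e), \<beta>1e, \<beta>2e, \<Delta>e)"
  "arok le l'e m0e m1e \<gamma>e" "arok le l'e n0e n1e \<eta>e" "twok le l'e m0e m1e \<gamma>e n0e n1e \<eta>e \<alpha>1e \<alpha>2e \<Gamma>e"
  "twok le l'e m0e m1e \<gamma>e n0e n1e \<eta>e \<beta>1e \<beta>2e \<Delta>e"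
  "uTw (s3 KK (ic KK b a)) = ((le, l'e, m0e, m1e, (\<gamma>e, qc0 m1e le, qc0 l'e m0e)), (le, l'e, n0e, n1e, (\<eta>e, qc0 n1e le, qc0 l'e n0e)),
     (\<alpha>1e, m0e, n0e), (\<alpha>2e, m1e, n1e), (\<Gamma>e, s3 G \<Gamma>e, t3 G \<Gamma>e, qc0 m1e le, qc0 l'e n0e))"
  "uTw (t3 KK (ic KK b a)) = ((le, l'e, m0e, m1e, (\<gamma>e, qc0 m1e le, qc0 l'e m0e)), (le, l'e, n0e, n1e, (\<eta>e, qc0 n1e le, qc0 l'e n0e)),
     (\<beta>1e, m0e, n0e), (\<beta>2e, m1e, n1e), (\<Delta>e, s3 G \<Delta>e, t3 G \<Delta>e, qc0 m1e le, qc0 l'e n0e))"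
  "fTh K (ic KK b a) = (fTw K (s3 KK (ic KK b a)), fTw K (t3 KK (ic KK b a)), C1e, C2e)"
  "thok le l'e \<gamma>e \<eta>e \<alpha>1e \<alpha>2e \<Gamma>e \<beta>1e \<beta>2e \<Delta>e C1e C2e"
  "uTh (ic KK b a) = (uTw (s3 KK (ic KK b a)), uTw (t3 KK (ic KK b a)), (C1e, \<alpha>1e, \<beta>1e, m0e, n0e), (C2e, \<alpha>2e, \<beta>2e, m1e, n1e))"
    by (rule th_data[OF E])

  have k: "fTh K (ic KK b a) = ic (path G) (fTw K b) (fTw K a)" by (rule K_ic[OF a b ab])
  have us: "uTw (s3 KK (ic KK b a)) = pc1 (Q1 G) (pwl2 (Q1 G) (snd u (t2 KK b)) (uTw a)) (pwr2 (Q1 G) (uTw b) (snd u (s2 KK a)))"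
    using uTw_c1[OF w2(1) w1(1)] w1(2) w2(2) s uTw_wl2[OF tb a e1] uTw_wr2[OF sa b ab] by simp
  have ut: "uTw (t3 KK (ic KK b a)) = pc1 (Q1 G) (pwr2 (Q1 G) (uTw b) (snd u (t2 KK a))) (pwl2 (Q1 G) (snd u (s2 KK b)) (uTw a))"
    using uTw_c1[OF w3(1) w4(1)] w3(2) w4(2) t uTw_wl2[OF sb a e3] uTw_wr2[OF ta b e2] by simp
  have eqe: "\<alpha>1e = c1 G (wl2 G (qeps G n0b) \<alpha>1) (wr2 G \<alpha>1b (qeps G m0))
     \<and> \<beta>1e = c1 G (wr2 G \<alpha>1b (qeps G n0)) (wl2 G (qeps G m0b) \<alpha>1)
     \<and> \<alpha>2e = c1 G (wl2 G (qeps G n1b) \<alpha>2) (wr2 G \<alpha>2b (qeps G m1))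
     \<and> \<beta>2e = c1 G (wr2 G \<alpha>2b (qeps G n1)) (wl2 G (qeps G m1b) \<alpha>2)
     \<and> m0e = qc0 m0b m0 \<and> n0e = qc0 n0b n0 \<and> m1e = qc0 m1b m1 \<and> n1e = qc0 n1b n1"
    using us ut Ee(9) Ee(10) A(9) A(1) A(2) B(9) B(1) B(2) by (simp add: pc1_def pwl2_def pwr2_def pc0_def)
  have eqC: "C1e = ic G \<alpha>1b \<alpha>1 \<and> C2e = ic G \<alpha>2b \<alpha>2" using k Ee(11) A(5) B(5) by simp
  show ?thesis unfolding Ee(13) us ut A(9) B(9) A(1) A(2) B(1) B(2) using eqe eqC by simp
qed

end

context cs begin

definition uh where "uh = \<lparr>fOb = fst u, fAr = snd u, fTw = uTw, fTh = uTh\<rparr>"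

lemma uTw_fst: assumes a: "a \<in> Tw KK" shows "fst (uTw a) = snd u (s2 KK a)" "fst (snd (uTw a)) = snd u (t2 KK a)"
proof -
  obtain l l' m0 m1 \<gamma> n0 n1 \<eta> \<alpha>1 \<alpha>2 \<Gamma> where A:
  "snd u (s2 KK (a)) = (l, l', m0, m1, (\<gamma>, qc0 m1 l, qc0 l' m0))"
  "snd u (t2 KK (a)) = (l, l', n0, n1, (\<eta>, qc0 n1 l, qc0 l' n0))"
  "fAr K (s2 KK (a)) = (qeps G l, qeps G l', qeps G m0, qeps G m1, \<gamma>)"
  "fAr K (t2 KK (a)) = (qeps G l, qeps G l', qeps G n0, qeps G n1, \<eta>)"
  "fTw K (a) = ((qeps G l, qeps G l', qeps G m0, qeps G m1, \<gamma>), (qeps G l, qeps G l', qeps G n0, qeps G n1, \<eta>), \<alpha>1, \<alpha>2, \<Gamma>)"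
  "arok l l' m0 m1 \<gamma>" "arok l l' n0 n1 \<eta>" "twok l l' m0 m1 \<gamma> n0 n1 \<eta> \<alpha>1 \<alpha>2 \<Gamma>"
  "uTw (a) = ((l, l', m0, m1, (\<gamma>, qc0 m1 l, qc0 l' m0)), (l, l', n0, n1, (\<eta>, qc0 n1 l, qc0 l' n0)),
     (\<alpha>1, m0, n0), (\<alpha>2, m1, n1), (\<Gamma>, s3 G \<Gamma>, t3 G \<Gamma>, qc0 m1 l, qc0 l' n0))"
    by (rule tw_data[OF a])

  show "fst (uTw a) = snd u (s2 KK a)" "fst (snd (uTw a)) = snd u (t2 KK a)" using A(1) A(2) A(9) by simp_all
qed

lemma uTh_fst: assumes C: "C \<in> Th KK" shows "fst (uTh C) = uTw (s3 KK C)" "fst (snd (uTh C)) = uTw (t3 KK C)"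
proof -
  obtain l l' m0 m1 \<gamma> n0 n1 \<eta> \<alpha>1 \<alpha>2 \<Gamma> \<beta>1 \<beta>2 \<Delta> C1 C2 where A:
  "snd u (s2 KK (s3 KK (C))) = (l, l', m0, m1, (\<gamma>, qc0 m1 l, qc0 l' m0))"
  "snd u (t2 KK (s3 KK (C))) = (l, l', n0, n1, (\<eta>, qc0 n1 l, qc0 l' n0))"
  "fTw K (s3 KK (C)) = ((qeps G l, qeps G l', qeps G m0, qeps G m1, \<gamma>), (qeps G l, qeps G l', qeps G n0, qeps G n1, \<eta>), \<alpha>1, \<alpha>2, \<Gamma>)"
  "fTw K (t3 KK (C)) = ((qeps G l, qeps G l', qeps G m0, qeps G m1, \<gamma>), (qeps G l, qeps G l', qeps G n0, qeps G n1, \<eta>), \<beta>1, \<beta>2, \<Delta>)"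
  "arok l l' m0 m1 \<gamma>" "arok l l' n0 n1 \<eta>" "twok l l' m0 m1 \<gamma> n0 n1 \<eta> \<alpha>1 \<alpha>2 \<Gamma>"
  "twok l l' m0 m1 \<gamma> n0 n1 \<eta> \<beta>1 \<beta>2 \<Delta>"
  "uTw (s3 KK (C)) = ((l, l', m0, m1, (\<gamma>, qc0 m1 l, qc0 l' m0)), (l, l', n0, n1, (\<eta>, qc0 n1 l, qc0 l' n0)),
     (\<alpha>1, m0, n0), (\<alpha>2, m1, n1), (\<Gamma>, s3 G \<Gamma>, t3 G \<Gamma>, qc0 m1 l, qc0 l' n0))"
  "uTw (t3 KK (C)) = ((l, l', m0, m1, (\<gamma>, qc0 m1 l, qc0 l' m0)), (l, l', n0, n1, (\<eta>, qc0 n1 l, qc0 l' n0)),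
     (\<beta>1, m0, n0), (\<beta>2, m1, n1), (\<Delta>, s3 G \<Delta>, t3 G \<Delta>, qc0 m1 l, qc0 l' n0))"
  "fTh K (C) = (fTw K (s3 KK (C)), fTw K (t3 KK (C)), C1, C2)"
  "thok l l' \<gamma> \<eta> \<alpha>1 \<alpha>2 \<Gamma> \<beta>1 \<beta>2 \<Delta> C1 C2"
  "uTh (C) = (uTw (s3 KK (C)), uTw (t3 KK (C)), (C1, \<alpha>1, \<beta>1, m0, n0), (C2, \<alpha>2, \<beta>2, m1, n1))"
    by (rule th_data[OF C])

  show "fst (uTh C) = uTw (s3 KK C)" "fst (snd (uTh C)) = uTw (t3 KK C)" using A(13) by simp_all
qed

lemma uh_strict: "strict_gray_functor KK (path (Q1 G)) uh"
  unfolding strict_gray_functor_def uh_def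
  apply (simp only: gray_fun.simps)
  apply (intro conjI ballI impI)
  by (simp_all add: u_Ob u_Ar uTw_mem uTh_mem u_s1 u_t1 uTw_fst uTh_fst u_i1 uTw_i2 uTh_i3 u_c0
      uTw_c1 uTh_c2 uTh_c13 uTw_wl2 uTw_wr2 uTh_wl3 uTh_wr3 uTh_ic)

lemma uh_under: "fun1_eq_on KK (under1 uh) u"
  unfolding fun1_eq_on_def under1_def uh_def by simp

lemma pfun_uTw: assumes a: "a \<in> Tw KK" shows "pfun_tw (eQ G) (uTw a) = fTw K a"
proof -
  obtain l l' m0 m1 \<gamma> n0 n1 \<eta> \<alpha>1 \<alpha>2 \<Gamma> where A:
  "snd u (s2 KK (a)) = (l, l', m0, m1, (\<gamma>, qc0 m1 l, qc0 l' m0))"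
  "snd u (t2 KK (a)) = (l, l', n0, n1, (\<eta>, qc0 n1 l, qc0 l' n0))"
  "fAr K (s2 KK (a)) = (qeps G l, qeps G l', qeps G m0, qeps G m1, \<gamma>)"
  "fAr K (t2 KK (a)) = (qeps G l, qeps G l', qeps G n0, qeps G n1, \<eta>)"
  "fTw K (a) = ((qeps G l, qeps G l', qeps G m0, qeps G m1, \<gamma>), (qeps G l, qeps G l', qeps G n0, qeps G n1, \<eta>), \<alpha>1, \<alpha>2, \<Gamma>)"
  "arok l l' m0 m1 \<gamma>" "arok l l' n0 n1 \<eta>" "twok l l' m0 m1 \<gamma> n0 n1 \<eta> \<alpha>1 \<alpha>2 \<Gamma>"
  "uTw (a) = ((l, l', m0, m1, (\<gamma>, qc0 m1 l, qc0 l' m0)), (l, l', n0, n1, (\<eta>, qc0 n1 l, qc0 l' n0)),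
     (\<alpha>1, m0, n0), (\<alpha>2, m1, n1), (\<Gamma>, s3 G \<Gamma>, t3 G \<Gamma>, qc0 m1 l, qc0 l' n0))"
    by (rule tw_data[OF a])

  show ?thesis unfolding A(9) A(5) by simp
qed

lemma pfun_uTh: assumes C: "C \<in> Th KK" shows "fTh (pfun (eQ G)) (uTh C) = fTh K C"
proof -
  have sC: "s3 KK C \<in> Tw KK" and tC: "t3 KK C \<in> Tw KK" using KG.th_typ[OF C] by auto
  obtain l l' m0 m1 \<gamma> n0 n1 \<eta> \<alpha>1 \<alpha>2 \<Gamma> \<beta>1 \<beta>2 \<Delta> C1 C2 where A:
  "snd u (s2 KK (s3 KK (C))) = (l, l', m0, m1, (\<gamma>, qc0 m1 l, qc0 l' m0))"
  "snd u (t2 KK (s3 KK (C))) = (l, l', n0, n1, (\<eta>, qc0 n1 l, qc0 l' n0))"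
  "fTw K (s3 KK (C)) = ((qeps G l, qeps G l', qeps G m0, qeps G m1, \<gamma>), (qeps G l, qeps G l', qeps G n0, qeps G n1, \<eta>), \<alpha>1, \<alpha>2, \<Gamma>)"
  "fTw K (t3 KK (C)) = ((qeps G l, qeps G l', qeps G m0, qeps G m1, \<gamma>), (qeps G l, qeps G l', qeps G n0, qeps G n1, \<eta>), \<beta>1, \<beta>2, \<Delta>)"
  "arok l l' m0 m1 \<gamma>" "arok l l' n0 n1 \<eta>" "twok l l' m0 m1 \<gamma> n0 n1 \<eta> \<alpha>1 \<alpha>2 \<Gamma>"
  "twok l l' m0 m1 \<gamma> n0 n1 \<eta> \<beta>1 \<beta>2 \<Delta>"
  "uTw (s3 KK (C)) = ((l, l', m0, m1, (\<gamma>, qc0 m1 l, qc0 l' m0)), (l, l', n0, n1, (\<eta>, qc0 n1 l, qc0 l' n0)),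
     (\<alpha>1, m0, n0), (\<alpha>2, m1, n1), (\<Gamma>, s3 G \<Gamma>, t3 G \<Gamma>, qc0 m1 l, qc0 l' n0))"
  "uTw (t3 KK (C)) = ((l, l', m0, m1, (\<gamma>, qc0 m1 l, qc0 l' m0)), (l, l', n0, n1, (\<eta>, qc0 n1 l, qc0 l' n0)),
     (\<beta>1, m0, n0), (\<beta>2, m1, n1), (\<Delta>, s3 G \<Delta>, t3 G \<Delta>, qc0 m1 l, qc0 l' n0))"
  "fTh K (C) = (fTw K (s3 KK (C)), fTw K (t3 KK (C)), C1, C2)"
  "thok l l' \<gamma> \<eta> \<alpha>1 \<alpha>2 \<Gamma> \<beta>1 \<beta>2 \<Delta> C1 C2"
  "uTh (C) = (uTw (s3 KK (C)), uTw (t3 KK (C)), (C1, \<alpha>1, \<beta>1, m0, n0), (C2, \<alpha>2, \<beta>2, m1, n1))"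
    by (rule th_data[OF C])

  show ?thesis unfolding A(13) A(11) using pfun_uTw[OF sC] pfun_uTw[OF tC] by simp
qed

lemma uh_comp: "gfun_eq_on KK (gcomp (pfun (eQ G)) uh) K"
  unfolding gfun_eq_on_def gcomp_def uh_def using eOb eAr pfun_uTw pfun_uTh by simp

lemma uh_unique: assumes S: "strict_gray_functor KK (path (Q1 G)) v" and U: "fun1_eq_on KK (under1 v) u"
  and E: "gfun_eq_on KK (gcomp (pfun (eQ G)) v) K"
  shows "gfun_eq_on KK v uh"
proof -
  have vOb: "\<And>x. x \<in> Ob KK \<Longrightarrow> fOb v x = fst u x" using U unfolding fun1_eq_on_def under1_def by simp
  have vAr: "\<And>f. f \<in> Ar KK \<Longrightarrow> fAr v f = snd u f" using U unfolding fun1_eq_on_def under1_def by simp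
  have vTw: "\<And>a. a \<in> Tw KK \<Longrightarrow> fTw v a \<in> Tw (path (Q1 G))" using S unfolding strict_gray_functor_def by simp
  have vTh: "\<And>C. C \<in> Th KK \<Longrightarrow> fTh v C \<in> Th (path (Q1 G))" using S unfolding strict_gray_functor_def by simp
  have vs2: "\<And>a. a \<in> Tw KK \<Longrightarrow> fst (fTw v a) = fAr v (s2 KK a)" using S unfolding strict_gray_functor_def by simp
  have vt2: "\<And>a. a \<in> Tw KK \<Longrightarrow> fst (snd (fTw v a)) = fAr v (t2 KK a)" using S unfolding strict_gray_functor_def by simp
  have vs3: "\<And>C. C \<in> Th KK \<Longrightarrow> fst (fTh v C) = fTw v (s3 KK C)" using S unfolding strict_gray_functor_def by simp
  have vt3: "\<And>C. C \<in> Th KK \<Longrightarrow> fst (snd (fTh v C)) = fTw v (t3 KK C)" using S unfolding strict_gray_functor_def by simp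
  have eTw: "\<And>a. a \<in> Tw KK \<Longrightarrow> pfun_tw (eQ G) (fTw v a) = fTw K a" using E unfolding gfun_eq_on_def gcomp_def by simp
  have eTh: "\<And>C. C \<in> Th KK \<Longrightarrow> fTh (pfun (eQ G)) (fTh v C) = fTh K C" using E unfolding gfun_eq_on_def gcomp_def by simp
  have TW: "fTw v a = uTw a" if a: "a \<in> Tw KK" for a
  proof -
  obtain l l' m0 m1 \<gamma> n0 n1 \<eta> \<alpha>1 \<alpha>2 \<Gamma> where A:
  "snd u (s2 KK (a)) = (l, l', m0, m1, (\<gamma>, qc0 m1 l, qc0 l' m0))"
  "snd u (t2 KK (a)) = (l, l', n0, n1, (\<eta>, qc0 n1 l, qc0 l' n0))"
  "fAr K (s2 KK (a)) = (qeps G l, qeps G l', qeps G m0, qeps G m1, \<gamma>)"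
  "fAr K (t2 KK (a)) = (qeps G l, qeps G l', qeps G n0, qeps G n1, \<eta>)"
  "fTw K (a) = ((qeps G l, qeps G l', qeps G m0, qeps G m1, \<gamma>), (qeps G l, qeps G l', qeps G n0, qeps G n1, \<eta>), \<alpha>1, \<alpha>2, \<Gamma>)"
  "arok l l' m0 m1 \<gamma>" "arok l l' n0 n1 \<eta>" "twok l l' m0 m1 \<gamma> n0 n1 \<eta> \<alpha>1 \<alpha>2 \<Gamma>"
  "uTw (a) = ((l, l', m0, m1, (\<gamma>, qc0 m1 l, qc0 l' m0)), (l, l', n0, n1, (\<eta>, qc0 n1 l, qc0 l' n0)),
     (\<alpha>1, m0, n0), (\<alpha>2, m1, n1), (\<Gamma>, s3 G \<Gamma>, t3 G \<Gamma>, qc0 m1 l, qc0 l' n0))"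
    by (rule tw_data[OF a])

    obtain g h a1 a2 a3 where X: "fTw v a = (g, h, a1, a2, a3)" by (cases "fTw v a") auto
    have g: "g = snd u (s2 KK a)" using vs2[OF a] vAr X KG.tw_typ[OF a] by simp
    have h: "h = snd u (t2 KK a)" using vt2[OF a] vAr X KG.tw_typ[OF a] by simp
    obtain x1 y1 z1 where a1: "a1 = (x1, y1, z1)" by (cases a1) auto
    obtain x2 y2 z2 where a2: "a2 = (x2, y2, z2)" by (cases a2) auto
    obtain G3 p q v3 w3 where a3: "a3 = (G3, p, q, v3, w3)" by (cases a3) auto
    have M: "fTw v a \<in> Tw (path (Q1 G))" by (rule vTw[OF a])
    have M1: "((l, l', m0, m1, (\<gamma>, qc0 m1 l, qc0 l' m0)), (l, l', n0, n1, (\<eta>, qc0 n1 l, qc0 l' n0)),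
       (x1, y1, z1), (x2, y2, z2), (G3, p, q, v3, w3)) \<in> Tw (path (Q1 G))"
      using M X g h a1 a2 a3 A(1) A(2) by simp
    note M2 = M1[unfolded path_Tw Q1_Th]
    have ee: "pfun_tw (eQ G) (fTw v a) = fTw K a" by (rule eTw[OF a])
    have fs: "x1 = \<alpha>1 \<and> x2 = \<alpha>2 \<and> G3 = \<Gamma>" using ee X a1 a2 a3 A(5) by simp
    show ?thesis unfolding X A(9) g h a1 a2 a3 A(1) A(2) using M2 fs by auto
  qed
  have TH: "fTh v C = uTh C" if C: "C \<in> Th KK" for C
  proof -
    have sC: "s3 KK C \<in> Tw KK" and tC: "t3 KK C \<in> Tw KK" using KG.th_typ[OF C] by auto
  obtain l l' m0 m1 \<gamma> n0 n1 \<eta> \<alpha>1 \<alpha>2 \<Gamma> \<beta>1 \<beta>2 \<Delta> C1 C2 where A: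
  "snd u (s2 KK (s3 KK (C))) = (l, l', m0, m1, (\<gamma>, qc0 m1 l, qc0 l' m0))"
  "snd u (t2 KK (s3 KK (C))) = (l, l', n0, n1, (\<eta>, qc0 n1 l, qc0 l' n0))"
  "fTw K (s3 KK (C)) = ((qeps G l, qeps G l', qeps G m0, qeps G m1, \<gamma>), (qeps G l, qeps G l', qeps G n0, qeps G n1, \<eta>), \<alpha>1, \<alpha>2, \<Gamma>)"
  "fTw K (t3 KK (C)) = ((qeps G l, qeps G l', qeps G m0, qeps G m1, \<gamma>), (qeps G l, qeps G l', qeps G n0, qeps G n1, \<eta>), \<beta>1, \<beta>2, \<Delta>)"
  "arok l l' m0 m1 \<gamma>" "arok l l' n0 n1 \<eta>" "twok l l' m0 m1 \<gamma> n0 n1 \<eta> \<alpha>1 \<alpha>2 \<Gamma>"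
  "twok l l' m0 m1 \<gamma> n0 n1 \<eta> \<beta>1 \<beta>2 \<Delta>"
  "uTw (s3 KK (C)) = ((l, l', m0, m1, (\<gamma>, qc0 m1 l, qc0 l' m0)), (l, l', n0, n1, (\<eta>, qc0 n1 l, qc0 l' n0)),
     (\<alpha>1, m0, n0), (\<alpha>2, m1, n1), (\<Gamma>, s3 G \<Gamma>, t3 G \<Gamma>, qc0 m1 l, qc0 l' n0))"
  "uTw (t3 KK (C)) = ((l, l', m0, m1, (\<gamma>, qc0 m1 l, qc0 l' m0)), (l, l', n0, n1, (\<eta>, qc0 n1 l, qc0 l' n0)),
     (\<beta>1, m0, n0), (\<beta>2, m1, n1), (\<Delta>, s3 G \<Delta>, t3 G \<Delta>, qc0 m1 l, qc0 l' n0))"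
  "fTh K (C) = (fTw K (s3 KK (C)), fTw K (t3 KK (C)), C1, C2)"
  "thok l l' \<gamma> \<eta> \<alpha>1 \<alpha>2 \<Gamma> \<beta>1 \<beta>2 \<Delta> C1 C2"
  "uTh (C) = (uTw (s3 KK (C)), uTw (t3 KK (C)), (C1, \<alpha>1, \<beta>1, m0, n0), (C2, \<alpha>2, \<beta>2, m1, n1))"
    by (rule th_data[OF C])

    obtain al be X1 X2 where Y: "fTh v C = (al, be, X1, X2)" by (cases "fTh v C") auto
    have al: "al = uTw (s3 KK C)" using vs3[OF C] TW[OF sC] Y by simp
    have be: "be = uTw (t3 KK C)" using vt3[OF C] TW[OF tC] Y by simp
    obtain x1 y1 z1 v1 w1 where X1: "X1 = (x1, y1, z1, v1, w1)" by (cases X1) auto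
    obtain x2 y2 z2 v2 w2 where X2: "X2 = (x2, y2, z2, v2, w2)" by (cases X2) auto
    have M: "fTh v C \<in> Th (path (Q1 G))" by (rule vTh[OF C])
    have M1: "(((l, l', m0, m1, (\<gamma>, qc0 m1 l, qc0 l' m0)), (l, l', n0, n1, (\<eta>, qc0 n1 l, qc0 l' n0)),
     (\<alpha>1, m0, n0), (\<alpha>2, m1, n1), (\<Gamma>, s3 G \<Gamma>, t3 G \<Gamma>, qc0 m1 l, qc0 l' n0)),
     ((l, l', m0, m1, (\<gamma>, qc0 m1 l, qc0 l' m0)), (l, l', n0, n1, (\<eta>, qc0 n1 l, qc0 l' n0)),
     (\<beta>1, m0, n0), (\<beta>2, m1, n1), (\<Delta>, s3 G \<Delta>, t3 G \<Delta>, qc0 m1 l, qc0 l' n0)),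
     (x1, y1, z1, v1, w1), (x2, y2, z2, v2, w2)) \<in> Th (path (Q1 G))"
      using M Y al be X1 X2 A(9) A(10) by simp
    note M2 = M1[unfolded path_Th Q1_Th]
    have ee: "fTh (pfun (eQ G)) (fTh v C) = fTh K C" by (rule eTh[OF C])
    have fs: "x1 = C1 \<and> x2 = C2" using ee Y X1 X2 A(11) by simp
    show ?thesis unfolding Y A(13) al be X1 X2 using M2 fs by auto
  qed
  show ?thesis unfolding gfun_eq_on_def uh_def using vOb vAr TW TH by simp
qed

end

theorem mainTheorem13:
  fixes G :: "('o,'a,'b,'c) gray_data"
    and KK :: "('p,'d,'e,'f) gray_data"
  assumes "gray_category G"
    and "gray_category KK"
  shows "cartesian1_wrt KK (path (Q1 G)) (path G) (pfun (eQ G))"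
  unfolding cartesian1_wrt_def
proof (intro allI impI)
  fix K u
  assume Ks: "strict_gray_functor KK (path G) K" and uf: "functor1 KK (path (Q1 G)) u"
    and e: "(\<forall>x\<in>Ob KK. fOb (pfun (eQ G)) (fst u x) = fOb K x) \<and> (\<forall>f\<in>Ar KK. fAr (pfun (eQ G)) (snd u f) = fAr K f)"
  interpret cs G KK K u
    by (intro cs.intro cs_axioms.intro) (use assms Ks uf e in auto)
  show "\<exists>uh. strict_gray_functor KK (path (Q1 G)) uh \<and> fun1_eq_on KK (under1 uh) u \<and>
          gfun_eq_on KK (gcomp (pfun (eQ G)) uh) K \<and>
          (\<forall>uh'. strict_gray_functor KK (path (Q1 G)) uh' \<and> fun1_eq_on KK (under1 uh') u \<and>
                 gfun_eq_on KK (gcomp (pfun (eQ G)) uh') K \<longrightarrow> gfun_eq_on KK uh' uh)"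
    using uh_strict uh_under uh_comp uh_unique by blast
qed

end
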